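(* The double quotient $P_{(2,2)}(F)\setminus \mathbf{GSp}_6(F)/\iota\left(\mathbf{GL}_2\times_{\det,\nu}\mathbf{GSp}_4\right)(F)$ consists of four elements represented by $I_6, \tau_1, \tau_2$, and $\tau_{\rm op}$, with corresponding flag and stabilizer as follows: \begin{enumerate} \item $P_{(2,2)}(F)\cdot I_6$ corresponds to the flag $0 \subset \langle f_1,f_2 \rangle$ and has stabilizer $\iota(P_{(1,0)}\times_{\det,\nu} P_{(1,2)})(F)$. \item $P_{(2,2)}(F)\cdot \tau_1$ corresponds to the flag $0 \subset \langle f_2,f_3 \rangle$ and has stabilizer $\iota\left(\mathbf{GL}_2\times_{\det,\nu} P_{(2,0)}\right)(F)$. \item $P_{(2,2)}(F)\cdot \tau_2$ corresponds to the flag $0 \subset \langle f_1+f_3,f_2 \rangle$ and has stabilizer \[\left \{ \left(\begin{smallmatrix}a & b \\ & d\end{smallmatrix}\right) \times \left(\begin{smallmatrix} \alpha & &&\\&a&&\\&&d & \\&&&\delta \end{smallmatrix}\right)\,:\, ad = \alpha \delta \right \} \cdot \left(\{ I_2\} \times U_{\mathbf{GSp}_4}(F)\right).\] \item $P_{(2,2)}(F) \cdot \tau_{\rm op}$ corresponds to $0 \subset \langle e_2+f_1, e_1+f_2 \rangle$ and has stabilizer $\mathbf{J}(F)$. \end{enumerate}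
   Context: $F$ is a number field. $\mathbf{GSp}_{2n}$ is the group of $(g,m_g)$ with ${}^tg J_{2n} g = m_g J_{2n}$, $J_{2n}=\left(\begin{smallmatrix} & I_n' \\ -I_n' & \end{smallmatrix}\right)$ with $I_n'$ the antidiagonal matrix of ones; $\nu(g)=m_g$ is the similitude character ($\mathbf{GSp}_2=\mathbf{GL}_2$, $\nu=\det$). $W_{2n}$ is the standard representation of $\mathbf{GSp}_{2n}$ with basis $\{e_1,\dots,e_n,f_n,\dots,f_1\}$; for $0\le m\le n$, $P_{(m,2(n-m))}$ is the maximal parabolic of $\mathbf{GSp}_{2n}$ stabilizing the isotropic subspace $\langle e_1,\dots,e_m\rangle$ (Levi $\mathbf{GL}_m\times\mathbf{GSp}_{2(n-m)}$); in particular $P_{(1,0)}$ is the upper triangular Borel of $\mathbf{GL}_2$, $P_{(1,2)}$ is the Klingen parabolic and $P_{(2,0)}$ the Siegel parabolic of $\mathbf{GSp}_4$. $P_{(2,2)}$ is the parabolic of $\mathbf{GSp}_6$ with Levi $\mathbf{GL}_2\times\mathbf{GL}_2$; the flag variety $P_{(2,2)}\backslash\mathbf{GSp}_6$ parametrizes isotropic planes in $W_6$, $P_{(2,2)}$ being the stabilizer of $\langle f_2,f_1\rangle$. $U_{\mathbf{GSp}_4}$ is the unipotent radical of the upper triangular Borel of $\mathbf{GSp}_4$. The fiber product $\mathbf{GL}_2\times_{\det,\nu}\mathbf{GSp}_4=\{(h_1,h_2): \det(h_1)=\nu(h_2)\}$ embeds into $\mathbf{GSp}_6$ via the decomposition $W_6=\langle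 e_1,f_1\rangle\oplus\langle e_2,e_3,f_3,f_2\rangle$: $\iota\left(\left(\begin{smallmatrix}a&b\\c&d\end{smallmatrix}\right), g\right)=\left(\begin{smallmatrix} a& &b\\ &g& \\c& &d \end{smallmatrix}\right)$. $\mathbf{J}=\{(h_1,h_2)\in\mathbf{GL}_2\times\mathbf{GL}_2:\det h_1=\det h_2\}$, embedded in $\mathbf{GL}_2\times_{\det,\nu}\mathbf{GSp}_4$ by $(h_1,h_2)\mapsto (h_1, j(h_1,h_2))$ with $j(h_1,h_2)=\left(\begin{smallmatrix} d& &c\\ &h_2& \\ b& &a \end{smallmatrix}\right)$ for $h_1=\left(\begin{smallmatrix}a&b\\c&d\end{smallmatrix}\right)$. Finally $\tau_{1} = \left(\begin{smallmatrix}0&0&1&&&\\0&1&0&&&\\1&0&0&&&\\ &&&0&0&1\\&&&0&1&0\\&&&1&0&0 \end{smallmatrix}\right)$, $\tau_{2} = \left(\begin{smallmatrix}1&0&0&&&\\0&1&0&&&\\-1&0&1&&&\\ &&&1&0&0\\&&&0&1&0\\&&&1&0&1 \end{smallmatrix}\right)$, $\tau_{\rm op} = \left(\begin{smallmatrix}1&0&&&&\\0&1&&&&\\&&1&0&&\\ &&0&1&&\\1&0&&&1&0\\0&1&&&0&1 \end{smallmatrix}\right)$. *)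

theory Defs
  imports "Jordan_Normal_Form.Matrix" "Jordan_Normal_Form.Determinant"
begin

definition number_field :: "'a::field_char_0 itself \<Rightarrow> bool" where
  "number_field _ \<longleftrightarrow>
     (\<exists>B::'a set. finite B \<and> (\<forall>x::'a. \<exists>c::'a \<Rightarrow> rat. x = (\<Sum>b\<in>B. of_rat (c b) * b)))"

definition Jmat :: "nat \<Rightarrow> 'a::comm_ring_1 mat" where
  "Jmat n = mat (2*n) (2*n) (\<lambda>(i,j). if j = 2*n - 1 - i then (if i < n then 1 else - 1) else 0)"

definition GSp :: "nat \<Rightarrow> 'a::field mat set" where
  "GSp n = {g \<in> carrier_mat (2*n) (2*n).
              \<exists>m. m \<noteq> 0 \<and> transpose_mat g * Jmat n * g = m \<cdot>\<^sub>m Jmat n}"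

definition sim :: "nat \<Rightarrow> 'a::field mat \<Rightarrow> 'a" where
  "sim n g = (THE m. transpose_mat g * Jmat n * g = m \<cdot>\<^sub>m Jmat n)"

definition GL2 :: "'a::field mat set" where
  "GL2 = {g \<in> carrier_mat 2 2. det g \<noteq> 0}"

(* maximal parabolic P_{(m,2(n-m))} of GSp_{2n}: stabilizer of <e_1,...,e_m> (column vectors) *)
definition parabolic :: "nat \<Rightarrow> nat \<Rightarrow> 'a::field mat set" where
  "parabolic n m = {g \<in> GSp n. \<forall>v \<in> carrier_vec (2*n).
       (\<forall>i. m \<le> i \<and> i < 2*n \<longrightarrow> v $ i = 0) \<longrightarrow>
       (\<forall>i. m \<le> i \<and> i < 2*n \<longrightarrow> (g *\<^sub>v v) $ i = 0)}"

definition fiber_prod :: "'a::field mat set \<Rightarrow> 'a mat set \<Rightarrow> ('a mat \<times> 'a mat) set" where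
  "fiber_prod A B = {(h1, h2). h1 \<in> A \<and> h2 \<in> B \<and> det h1 = sim 2 h2}"

(* iota : GL_2 x GSp_4 -> GSp_6, W_6 = <e1,f1> + <e2,e3,f3,f2>; basis order e1,e2,e3,f3,f2,f1 *)
definition iota :: "'a::field mat \<Rightarrow> 'a mat \<Rightarrow> 'a mat" where
  "iota h g = mat 6 6 (\<lambda>(i,j).
     if (i = 0 \<or> i = 5) \<and> (j = 0 \<or> j = 5) then h $$ (i div 5, j div 5)
     else if 1 \<le> i \<and> i \<le> 4 \<and> 1 \<le> j \<and> j \<le> 4 then g $$ (i - 1, j - 1)
     else 0)"

definition Hgrp :: "'a::field mat set" where
  "Hgrp = (\<lambda>(h1, h2). iota h1 h2) ` fiber_prod GL2 (GSp 2)"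

definition P22 :: "'a::field mat set" where
  "P22 = parabolic 3 2"

definition right_coset :: "'a::field mat \<Rightarrow> 'a mat set" where
  "right_coset g = {p * g | p. p \<in> P22}"

definition double_coset :: "'a::field mat \<Rightarrow> 'a mat set" where
  "double_coset g = {p * g * h | p h. p \<in> P22 \<and> h \<in> Hgrp}"

definition double_quotient :: "'a::field mat set set" where
  "double_quotient = double_coset ` GSp 3"

definition stab :: "'a::field mat \<Rightarrow> 'a mat set" where
  "stab g = {h \<in> Hgrp. right_coset (g * h) = right_coset g}"

(* row-vector (right) action on W_6 *)
definition row_act :: "'a::field vec \<Rightarrow> 'a mat \<Rightarrow> 'a vec" where
  "row_act w g = transpose_mat g *\<^sub>v w"

definition span2 :: "'a::field vec \<Rightarrow> 'a vec \<Rightarrow> 'a vec set" where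
  "span2 u w = {c \<cdot>\<^sub>v u + d \<cdot>\<^sub>v w | c d. True}"

definition e :: "nat \<Rightarrow> 'a::field vec" where "e k = unit_vec 6 (k - 1)"
definition f :: "nat \<Rightarrow> 'a::field vec" where "f k = unit_vec 6 (6 - k)"

definition plane_of :: "'a::field mat \<Rightarrow> 'a vec set" where
  "plane_of g = (\<lambda>w. row_act w g) ` span2 (f 1) (f 2)"

definition tau1 :: "'a::field mat" where
  "tau1 = mat_of_rows_list 6
     [[0,0,1,0,0,0],[0,1,0,0,0,0],[1,0,0,0,0,0],
      [0,0,0,0,0,1],[0,0,0,0,1,0],[0,0,0,1,0,0]]"

definition tau2 :: "'a::field mat" where
  "tau2 = mat_of_rows_list 6
     [[1,0,0,0,0,0],[0,1,0,0,0,0],[-1,0,1,0,0,0],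
      [0,0,0,1,0,0],[0,0,0,0,1,0],[0,0,0,1,0,1]]"

definition tau_op :: "'a::field mat" where
  "tau_op = mat_of_rows_list 6
     [[1,0,0,0,0,0],[0,1,0,0,0,0],[0,0,1,0,0,0],
      [0,0,0,1,0,0],[1,0,0,0,1,0],[0,1,0,0,0,1]]"

definition U_GSp4 :: "'a::field mat set" where
  "U_GSp4 = {u \<in> GSp 2. \<forall>i<4. \<forall>j<4. (j < i \<longrightarrow> u $$ (i,j) = 0) \<and> (i = j \<longrightarrow> u $$ (i,j) = 1)}"

definition mat2 :: "'a::field \<Rightarrow> 'a \<Rightarrow> 'a \<Rightarrow> 'a \<Rightarrow> 'a mat" where
  "mat2 a b c d = mat_of_rows_list 2 [[a,b],[c,d]]"

definition diag4 :: "'a::field \<Rightarrow> 'a \<Rightarrow> 'a \<Rightarrow> 'a \<Rightarrow> 'a mat" where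
  "diag4 a b c d = mat_of_rows_list 4 [[a,0,0,0],[0,b,0,0],[0,0,c,0],[0,0,0,d]]"

definition stab3_set :: "('a::field mat \<times> 'a mat) set" where
  "stab3_set = {(mat2 a b 0 d * 1\<^sub>m 2, diag4 \<alpha> a d \<delta> * u) | a b d \<alpha> \<delta> u.
      a \<noteq> 0 \<and> d \<noteq> 0 \<and> \<alpha> \<noteq> 0 \<and> \<delta> \<noteq> 0 \<and> a * d = \<alpha> * \<delta> \<and> u \<in> U_GSp4}"

definition jmap :: "'a::field mat \<Rightarrow> 'a mat \<Rightarrow> 'a mat" where
  "jmap h1 h2 = mat 4 4 (\<lambda>(i,j).
     if i = 0 \<and> j = 0 then h1 $$ (1,1) else if i = 0 \<and> j = 3 then h1 $$ (1,0)
     else if i = 3 \<and> j = 0 then h1 $$ (0,1) else if i = 3 \<and> j = 3 then h1 $$ (0,0)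
     else if (i = 1 \<or> i = 2) \<and> (j = 1 \<or> j = 2) then h2 $$ (i - 1, j - 1)
     else 0)"

definition Jgrp :: "('a::field mat \<times> 'a mat) set" where
  "Jgrp = {(h1, h2). h1 \<in> GL2 \<and> h2 \<in> GL2 \<and> det h1 = det h2}"

end

theory Submission
  imports Defs
begin


lemma sum6: "(\<Sum>k<(6::nat). g k) = g 0 + g 1 + g 2 + g 3 + g 4 + (g 5 :: 'a::comm_monoid_add)"
  by (simp add: numeral_eq_Suc add.assoc)

lemma sum4: "(\<Sum>k<(4::nat). g k) = g 0 + g 1 + g 2 + (g 3 :: 'a::comm_monoid_add)"
  by (simp add: numeral_eq_Suc add.assoc)

lemma less6: "(i::nat) < 6 \<Longrightarrow> i = 0 \<or> i = 1 \<or> i = 2 \<or> i = 3 \<or> i = 4 \<or> i = 5" by auto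
lemma less4: "(i::nat) < 4 \<Longrightarrow> i = 0 \<or> i = 1 \<or> i = 2 \<or> i = 3" by auto
lemma less2: "(i::nat) < 2 \<Longrightarrow> i = 0 \<or> i = 1" by auto

lemma mult_entry: "A \<in> carrier_mat n k \<Longrightarrow> B \<in> carrier_mat k m \<Longrightarrow> i < n \<Longrightarrow> j < m \<Longrightarrow>
   (A * B) $$ (i,j) = (\<Sum>l<k. A $$ (i,l) * B $$ (l,j))"
  by (auto simp: index_mult_mat scalar_prod_def lessThan_atLeast0 intro!: sum.cong)

lemma mult6: "A \<in> carrier_mat 6 6 \<Longrightarrow> B \<in> carrier_mat 6 6 \<Longrightarrow> i < 6 \<Longrightarrow> j < 6 \<Longrightarrow>
   (A * B) $$ (i,j) = A$$(i,0)*B$$(0,j) + A$$(i,1)*B$$(1,j) + A$$(i,2)*B$$(2,j) + A$$(i,3)*B$$(3,j) + A$$(i,4)*B$$(4,j) + A$$(i,5)*B$$(5,j)"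
  by (subst mult_entry[of A 6 6 B 6], simp_all add: sum6)


declare index_mult_mat(1)[simp del]

lemma Jmat_carrier[simp]: "Jmat n \<in> carrier_mat (2*n) (2*n)"
  by (simp add: Jmat_def)

lemma assoc6[simp]: "A \<in> carrier_mat 6 6 \<Longrightarrow> B \<in> carrier_mat 6 6 \<Longrightarrow> C \<in> carrier_mat 6 6 \<Longrightarrow>
  A * B * C = A * (B * C)" by (rule assoc_mult_mat)
lemma smult6r[simp]: "A \<in> carrier_mat 6 6 \<Longrightarrow> B \<in> carrier_mat 6 6 \<Longrightarrow>
  A * ((k::'a::comm_ring_1) \<cdot>\<^sub>m B) = k \<cdot>\<^sub>m (A * B)" by (rule mult_smult_distrib)
lemma smult6l[simp]: "A \<in> carrier_mat 6 6 \<Longrightarrow> B \<in> carrier_mat 6 6 \<Longrightarrow>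
  ((k::'a::comm_ring_1) \<cdot>\<^sub>m A) * B = k \<cdot>\<^sub>m (A * B)" by (rule mult_smult_assoc_mat)

lemma mult6c[simp]: "A \<in> carrier_mat 6 6 \<Longrightarrow> B \<in> carrier_mat 6 6 \<Longrightarrow> A * B \<in> carrier_mat 6 6"
  by (rule mult_carrier_mat)

lemma smult_smult_mat[simp]: "(a::'a::comm_ring_1) \<cdot>\<^sub>m (b \<cdot>\<^sub>m A) = (a*b) \<cdot>\<^sub>m A"
  by (rule eq_matI) (auto simp: mult.assoc)
lemma one_smult_mat[simp]: "(1::'a::comm_ring_1) \<cdot>\<^sub>m A = A"
  by (rule eq_matI) auto

lemma Jmat_dims[simp]: "dim_row (Jmat n) = 2*n" "dim_col (Jmat n) = 2*n"
  by (simp_all add: Jmat_def)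

lemma J3_carrier[simp]: "(Jmat 3 :: 'a::comm_ring_1 mat) \<in> carrier_mat 6 6"
  using Jmat_carrier[of 3] by simp

lemma J3_entry: "i < 6 \<Longrightarrow> j < 6 \<Longrightarrow> (Jmat 3 :: 'a::comm_ring_1 mat) $$ (i,j) =
   (if j = 5 - i then (if i < 3 then 1 else -1) else 0)"
  by (simp add: Jmat_def)

lemma J3_sq: "(Jmat 3 :: 'a::comm_ring_1 mat) * Jmat 3 = (-1) \<cdot>\<^sub>m 1\<^sub>m 6"
proof (rule eq_matI)
  fix i j assume "i < dim_row ((-1::'a) \<cdot>\<^sub>m 1\<^sub>m 6)" "j < dim_col ((-1::'a) \<cdot>\<^sub>m 1\<^sub>m 6)"
  hence ij: "i < 6" "j < 6" by auto
  show "(Jmat 3 * Jmat 3) $$ (i, j) = ((-1::'a) \<cdot>\<^sub>m 1\<^sub>m 6) $$ (i, j)"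
    using less6[OF ij(1)] less6[OF ij(2)]
    by (elim disjE; simp add: mult6 J3_entry)
qed auto

definition om6 :: "(nat \<Rightarrow> 'a::comm_ring_1) \<Rightarrow> (nat \<Rightarrow> 'a) \<Rightarrow> 'a" where
  "om6 x y = x 0 * y 5 + x 1 * y 4 + x 2 * y 3 - x 3 * y 2 - x 4 * y 1 - x 5 * y 0"

definition J6 :: "nat \<Rightarrow> nat \<Rightarrow> 'a::comm_ring_1" where
  "J6 i j = (if j = 5 - i then (if i < 3 then 1 else -1) else 0)"

definition cl :: "'a mat \<Rightarrow> nat \<Rightarrow> nat \<Rightarrow> 'a" where "cl g i = (\<lambda>k. g $$ (k,i))"
definition rw :: "'a mat \<Rightarrow> nat \<Rightarrow> nat \<Rightarrow> 'a" where "rw g i = (\<lambda>k. g $$ (i,k))"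

lemma colJ: "g \<in> carrier_mat 6 6 \<Longrightarrow> i < 6 \<Longrightarrow> j < 6 \<Longrightarrow>
  (transpose_mat g * Jmat 3 * g) $$ (i,j) = om6 (cl g i) (cl g j)"
  by (simp add: mult6 J3_entry om6_def cl_def algebra_simps)

lemma rowJ: "g \<in> carrier_mat 6 6 \<Longrightarrow> i < 6 \<Longrightarrow> j < 6 \<Longrightarrow>
  (g * Jmat 3 * transpose_mat g) $$ (i,j) = om6 (rw g i) (rw g j)"
  by (simp add: mult6 J3_entry om6_def rw_def algebra_simps)

lemma TR:
  fixes g :: "'a::field mat"
  assumes g: "g \<in> carrier_mat 6 6" and rel: "transpose_mat g * Jmat 3 * g = m \<cdot>\<^sub>m Jmat 3" and m: "m \<noteq> 0"
  shows "g * Jmat 3 * transpose_mat g = m \<cdot>\<^sub>m Jmat 3"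
proof -
  define J :: "'a mat" where "J = Jmat 3"
  have J: "J \<in> carrier_mat 6 6" by (simp add: J_def)
  have gt: "transpose_mat g \<in> carrier_mat 6 6" using g by simp
  define B where "B = (-1/m) \<cdot>\<^sub>m (J * (g * J))"
  have B: "B \<in> carrier_mat 6 6" using g J by (simp add: B_def)
  have rel': "transpose_mat g * (J * g) = m \<cdot>\<^sub>m J" using rel assoc_mult_mat[OF gt J g] by (simp add: J_def)
  have "transpose_mat g * B = (-1/m) \<cdot>\<^sub>m (transpose_mat g * (J * (g * J)))"
    unfolding B_def using g J mult_smult_distrib[OF gt, of "J*(g*J)" 6] by simp
  also have "transpose_mat g * (J * (g * J)) = (transpose_mat g * (J * g)) * J"
    using g J by simp
  also have "\<dots> = m \<cdot>\<^sub>m (J * J)" using rel' J by (simp add: mult_smult_assoc_mat)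
  also have "J * J = (-1) \<cdot>\<^sub>m 1\<^sub>m 6" by (simp add: J_def J3_sq)
  finally have "transpose_mat g * B = 1\<^sub>m 6" using m
    by (auto intro!: eq_matI)
  hence BG: "B * transpose_mat g = 1\<^sub>m 6" using mat_mult_left_right_inverse[OF gt B] by simp
  have "B * transpose_mat g = (-1/m) \<cdot>\<^sub>m (J * (g * J) * transpose_mat g)"
    unfolding B_def using g J by (simp add: mult_smult_assoc_mat)
  hence e0: "(-1/m) \<cdot>\<^sub>m (J * (g * (J * transpose_mat g))) = 1\<^sub>m 6" using BG g J by simp
  have "J * (g * (J * transpose_mat g)) = (-m) \<cdot>\<^sub>m ((-1/m) \<cdot>\<^sub>m (J * (g * (J * transpose_mat g))))"
    using m by (intro eq_matI) auto
  note e1 = this[unfolded e0]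
  have "J * (J * (g * (J * transpose_mat g))) = (J * J) * (g * (J * transpose_mat g))"
    using g J by simp
  also have "\<dots> = (-1) \<cdot>\<^sub>m (g * (J * transpose_mat g))"
    using g J by (simp add: J_def J3_sq mult_smult_assoc_mat)
  finally have e2: "(-1) \<cdot>\<^sub>m (g * (J * transpose_mat g)) = J * ((-m) \<cdot>\<^sub>m 1\<^sub>m 6)" using e1 by simp
  have "J * ((-m) \<cdot>\<^sub>m 1\<^sub>m 6) = (-m) \<cdot>\<^sub>m J" using J by (simp add: mult_smult_distrib)
  with e2 have "(-1) \<cdot>\<^sub>m (g * (J * transpose_mat g)) = (-m) \<cdot>\<^sub>m J" by simp
  hence "(-1) \<cdot>\<^sub>m ((-1) \<cdot>\<^sub>m (g * (J * transpose_mat g))) = (-1) \<cdot>\<^sub>m ((-m) \<cdot>\<^sub>m J)" by simp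
  hence "g * (J * transpose_mat g) = m \<cdot>\<^sub>m J" using g J
    by simp
  thus ?thesis using g J by (simp add: J_def)
qed


lemma tr6c[simp]: "A \<in> carrier_mat 6 6 \<Longrightarrow> transpose_mat A \<in> carrier_mat 6 6" by simp

lemma GSp3_iff: "g \<in> GSp 3 \<longleftrightarrow> g \<in> carrier_mat 6 6 \<and> (\<exists>m. m \<noteq> 0 \<and> transpose_mat g * Jmat 3 * g = m \<cdot>\<^sub>m Jmat 3)"
  by (simp add: GSp_def)

lemma colrel_iff: assumes g: "g \<in> carrier_mat 6 6"
  shows "(transpose_mat g * Jmat 3 * g = m \<cdot>\<^sub>m Jmat 3) \<longleftrightarrow> (\<forall>i<6. \<forall>j<6. om6 (cl g i) (cl g j) = m * J6 i j)"
proof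
  assume H: "transpose_mat g * Jmat 3 * g = m \<cdot>\<^sub>m Jmat 3"
  show "\<forall>i<6. \<forall>j<6. om6 (cl g i) (cl g j) = m * J6 i j"
  proof (intro allI impI)
    fix i j :: nat assume ij: "i < 6" "j < 6"
    have "(transpose_mat g * Jmat 3 * g) $$ (i,j) = (m \<cdot>\<^sub>m Jmat 3) $$ (i,j)" using H by simp
    thus "om6 (cl g i) (cl g j) = m * J6 i j"
      using colJ[OF g ij] ij by (simp add: J3_entry J6_def del: assoc6)
  qed
next
  assume H: "\<forall>i<6. \<forall>j<6. om6 (cl g i) (cl g j) = m * J6 i j"
  show "transpose_mat g * Jmat 3 * g = m \<cdot>\<^sub>m Jmat 3"
  proof (rule eq_matI)
    fix i j assume "i < dim_row (m \<cdot>\<^sub>m (Jmat 3 :: 'a mat))" "j < dim_col (m \<cdot>\<^sub>m (Jmat 3 :: 'a mat))"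
    hence ij: "i < 6" "j < 6" by auto
    show "(transpose_mat g * Jmat 3 * g) $$ (i,j) = (m \<cdot>\<^sub>m Jmat 3) $$ (i,j)"
      using colJ[OF g ij] ij H by (simp add: J3_entry J6_def del: assoc6)
  qed (use g in auto)
qed

lemma rowrel_iff: assumes g: "g \<in> carrier_mat 6 6"
  shows "(g * Jmat 3 * transpose_mat g = m \<cdot>\<^sub>m Jmat 3) \<longleftrightarrow> (\<forall>i<6. \<forall>j<6. om6 (rw g i) (rw g j) = m * J6 i j)"
proof
  assume H: "g * Jmat 3 * transpose_mat g = m \<cdot>\<^sub>m Jmat 3"
  show "\<forall>i<6. \<forall>j<6. om6 (rw g i) (rw g j) = m * J6 i j"
  proof (intro allI impI)
    fix i j :: nat assume ij: "i < 6" "j < 6"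
    have "(g * Jmat 3 * transpose_mat g) $$ (i,j) = (m \<cdot>\<^sub>m Jmat 3) $$ (i,j)" using H by simp
    thus "om6 (rw g i) (rw g j) = m * J6 i j"
      using rowJ[OF g ij] ij by (simp add: J3_entry J6_def del: assoc6)
  qed
next
  assume H: "\<forall>i<6. \<forall>j<6. om6 (rw g i) (rw g j) = m * J6 i j"
  show "g * Jmat 3 * transpose_mat g = m \<cdot>\<^sub>m Jmat 3"
  proof (rule eq_matI)
    fix i j assume "i < dim_row (m \<cdot>\<^sub>m (Jmat 3 :: 'a mat))" "j < dim_col (m \<cdot>\<^sub>m (Jmat 3 :: 'a mat))"
    hence ij: "i < 6" "j < 6" by auto
    show "(g * Jmat 3 * transpose_mat g) $$ (i,j) = (m \<cdot>\<^sub>m Jmat 3) $$ (i,j)"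
      using rowJ[OF g ij] ij H by (simp add: J3_entry J6_def del: assoc6)
  qed (use g in auto)
qed

lemma TR_conv:
  fixes g :: "'a::field mat"
  assumes g: "g \<in> carrier_mat 6 6" and rel: "g * Jmat 3 * transpose_mat g = m \<cdot>\<^sub>m Jmat 3" and m: "m \<noteq> 0"
  shows "transpose_mat g * Jmat 3 * g = m \<cdot>\<^sub>m Jmat 3"
  using TR[of "transpose_mat g" m] g rel m by simp

lemma rel_mult:
  fixes g h :: "'a::field mat"
  assumes g: "g \<in> carrier_mat 6 6" and h: "h \<in> carrier_mat 6 6"
    and rg: "transpose_mat g * Jmat 3 * g = m \<cdot>\<^sub>m Jmat 3"
    and rh: "transpose_mat h * Jmat 3 * h = n \<cdot>\<^sub>m Jmat 3"
  shows "transpose_mat (g * h) * Jmat 3 * (g * h) = (m * n) \<cdot>\<^sub>m Jmat 3"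
proof -
  have rg': "transpose_mat g * (Jmat 3 * g) = m \<cdot>\<^sub>m Jmat 3" using rg g by simp
  have "transpose_mat (g * h) * Jmat 3 * (g * h) = transpose_mat h * ((transpose_mat g * (Jmat 3 * g)) * h)"
    using g h by (simp add: transpose_mult[OF g h])
  also have "\<dots> = m \<cdot>\<^sub>m (transpose_mat h * (Jmat 3 * h))" using g h by (simp add: rg')
  also have "\<dots> = (m * n) \<cdot>\<^sub>m Jmat 3" using rh h by simp
  finally show ?thesis .
qed

definition ginv :: "'a::field mat \<Rightarrow> 'a \<Rightarrow> 'a mat" where
  "ginv g m = (-1/m) \<cdot>\<^sub>m (Jmat 3 * (transpose_mat g * Jmat 3))"

lemma ginv_carrier[simp]: "g \<in> carrier_mat 6 6 \<Longrightarrow> ginv g m \<in> carrier_mat 6 6"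
  by (simp add: ginv_def)

lemma ginv_left:
  fixes g :: "'a::field mat"
  assumes g: "g \<in> carrier_mat 6 6" and rg: "transpose_mat g * Jmat 3 * g = m \<cdot>\<^sub>m Jmat 3" and m: "m \<noteq> 0"
  shows "ginv g m * g = 1\<^sub>m 6"
proof -
  have rg': "transpose_mat g * (Jmat 3 * g) = m \<cdot>\<^sub>m Jmat 3" using rg g by simp
  have "ginv g m * g = (-1/m) \<cdot>\<^sub>m (Jmat 3 * (transpose_mat g * (Jmat 3 * g)))"
    using g by (simp add: ginv_def)
  also have "\<dots> = (-1/m * m) \<cdot>\<^sub>m (Jmat 3 * Jmat 3)" by (simp add: rg')
  also have "\<dots> = 1\<^sub>m 6" using m by (simp add: J3_sq)
  finally show ?thesis .
qed

lemma ginv_right: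
  fixes g :: "'a::field mat"
  assumes g: "g \<in> carrier_mat 6 6" and rg: "transpose_mat g * Jmat 3 * g = m \<cdot>\<^sub>m Jmat 3" and m: "m \<noteq> 0"
  shows "g * ginv g m = 1\<^sub>m 6"
proof -
  have rr: "g * (Jmat 3 * transpose_mat g) = m \<cdot>\<^sub>m Jmat 3" using TR[OF g rg m] g by simp
  have "g * ginv g m = (-1/m) \<cdot>\<^sub>m ((g * (Jmat 3 * transpose_mat g)) * Jmat 3)"
    using g by (simp add: ginv_def)
  also have "\<dots> = (-1/m * m) \<cdot>\<^sub>m (Jmat 3 * Jmat 3)" by (simp add: rr)
  also have "\<dots> = 1\<^sub>m 6" using m by (simp add: J3_sq)
  finally show ?thesis .
qed

lemma ginv_rel:
  fixes g :: "'a::field mat"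
  assumes g: "g \<in> carrier_mat 6 6" and rg: "transpose_mat g * Jmat 3 * g = m \<cdot>\<^sub>m Jmat 3" and m: "m \<noteq> 0"
  shows "transpose_mat (ginv g m) * Jmat 3 * ginv g m = (1/m) \<cdot>\<^sub>m Jmat 3"
proof -
  define X where "X = ginv g m"
  have X: "X \<in> carrier_mat 6 6" using g by (simp add: X_def)
  have gX: "g * X = 1\<^sub>m 6" using ginv_right[OF g rg m] by (simp add: X_def)
  have "transpose_mat (g * X) * Jmat 3 * (g * X) = (m * 1) \<cdot>\<^sub>m (transpose_mat X * Jmat 3 * X)"
  proof -
    have rg': "transpose_mat g * (Jmat 3 * g) = m \<cdot>\<^sub>m Jmat 3" using rg g by simp
    have "transpose_mat (g * X) * Jmat 3 * (g * X) = transpose_mat X * ((transpose_mat g * (Jmat 3 * g)) * X)"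
      using g X by (simp add: transpose_mult[OF g X])
    also have "\<dots> = m \<cdot>\<^sub>m (transpose_mat X * (Jmat 3 * X))" using g X by (simp add: rg')
    finally show ?thesis using X by simp
  qed
  hence "Jmat 3 = m \<cdot>\<^sub>m (transpose_mat X * Jmat 3 * X)" using gX by simp
  hence "(1/m) \<cdot>\<^sub>m Jmat 3 = (1/m) \<cdot>\<^sub>m (m \<cdot>\<^sub>m (transpose_mat X * Jmat 3 * X))" by simp
  also have "\<dots> = transpose_mat X * Jmat 3 * X" using m by simp
  finally show ?thesis by (simp add: X_def)
qed

lemma GSp3_rel: "g \<in> GSp 3 \<Longrightarrow> g \<in> carrier_mat 6 6 \<and> sim 3 g \<noteq> 0 \<and> transpose_mat g * Jmat 3 * g = sim 3 g \<cdot>\<^sub>m Jmat 3"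
proof -
  assume "g \<in> GSp 3"
  then obtain m where g: "g \<in> carrier_mat 6 6" and m: "m \<noteq> 0" and r: "transpose_mat g * Jmat 3 * g = m \<cdot>\<^sub>m Jmat 3"
    by (auto simp: GSp3_iff)
  have u: "\<And>m'. transpose_mat g * Jmat 3 * g = m' \<cdot>\<^sub>m Jmat 3 \<Longrightarrow> m' = m"
  proof -
    fix m' assume "transpose_mat g * Jmat 3 * g = m' \<cdot>\<^sub>m Jmat 3"
    hence "(m' \<cdot>\<^sub>m Jmat 3) $$ (0,5) = ((m \<cdot>\<^sub>m Jmat 3) :: 'a mat) $$ (0,5)" using r by simp
    thus "m' = m" by (simp add: J3_entry)
  qed
  have "sim 3 g = m" unfolding sim_def using r u by (rule the_equality)
  thus ?thesis using g m r by simp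
qed



lemma det2: "A \<in> carrier_mat 2 2 \<Longrightarrow> det A = A$$(0,0)*A$$(1,1) - A$$(0,1)*A$$(1,0)"
proof -
  assume A: "A \<in> carrier_mat 2 2"
  have d1: "\<And>B::'a mat. B \<in> carrier_mat 1 1 \<Longrightarrow> det B = B$$(0,0)"
  proof -
    fix B :: "'a mat" assume B: "B \<in> carrier_mat 1 1"
    show "det B = B$$(0,0)"
      using laplace_expansion_column[OF B, of 0] B by (simp add: cofactor_def det_def')
  qed
  show ?thesis
    using laplace_expansion_column[OF A, of 0] A
    by (simp add: cofactor_def numeral_eq_Suc d1 mat_delete_carrier mat_delete_def)
qed

declare One_nat_def[simp del]
lemma s01[simp]: "Suc 0 = 1" by simp

lemma mult4: "A \<in> carrier_mat 4 4 \<Longrightarrow> B \<in> carrier_mat 4 4 \<Longrightarrow> i < 4 \<Longrightarrow> j < 4 \<Longrightarrow>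
   (A * B) $$ (i,j) = A$$(i,0)*B$$(0,j) + A$$(i,1)*B$$(1,j) + A$$(i,2)*B$$(2,j) + A$$(i,3)*B$$(3,j)"
  by (subst mult_entry[of A 4 4 B 4], simp_all add: sum4)

lemma mult4c[simp]: "A \<in> carrier_mat 4 4 \<Longrightarrow> B \<in> carrier_mat 4 4 \<Longrightarrow> A * B \<in> carrier_mat 4 4"
  by (rule mult_carrier_mat)
lemma assoc4[simp]: "A \<in> carrier_mat 4 4 \<Longrightarrow> B \<in> carrier_mat 4 4 \<Longrightarrow> C \<in> carrier_mat 4 4 \<Longrightarrow>
  A * B * C = A * (B * C)" by (rule assoc_mult_mat)

lemma J2_carrier[simp]: "(Jmat 2 :: 'a::comm_ring_1 mat) \<in> carrier_mat 4 4"
  using Jmat_carrier[of 2] by simp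

lemma J2_entry: "i < 4 \<Longrightarrow> j < 4 \<Longrightarrow> (Jmat 2 :: 'a::comm_ring_1 mat) $$ (i,j) =
   (if j = 3 - i then (if i < 2 then 1 else -1) else 0)"
  by (simp add: Jmat_def)

definition om4 :: "(nat \<Rightarrow> 'a::comm_ring_1) \<Rightarrow> (nat \<Rightarrow> 'a) \<Rightarrow> 'a" where
  "om4 x y = x 0 * y 3 + x 1 * y 2 - x 2 * y 1 - x 3 * y 0"

definition J4 :: "nat \<Rightarrow> nat \<Rightarrow> 'a::comm_ring_1" where
  "J4 i j = (if j = 3 - i then (if i < 2 then 1 else -1) else 0)"

definition om2 :: "(nat \<Rightarrow> 'a::comm_ring_1) \<Rightarrow> (nat \<Rightarrow> 'a) \<Rightarrow> 'a" where
  "om2 x y = x 0 * y 1 - x 1 * y 0"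

lemma colJ4: "g \<in> carrier_mat 4 4 \<Longrightarrow> i < 4 \<Longrightarrow> j < 4 \<Longrightarrow>
  (transpose_mat g * Jmat 2 * g) $$ (i,j) = om4 (cl g i) (cl g j)"
  by (simp add: mult4 J2_entry om4_def cl_def algebra_simps)

lemma colrel4_iff: assumes g: "g \<in> carrier_mat 4 4"
  shows "(transpose_mat g * Jmat 2 * g = m \<cdot>\<^sub>m Jmat 2) \<longleftrightarrow> (\<forall>i<4. \<forall>j<4. om4 (cl g i) (cl g j) = m * J4 i j)"
proof
  assume H: "transpose_mat g * Jmat 2 * g = m \<cdot>\<^sub>m Jmat 2"
  show "\<forall>i<4. \<forall>j<4. om4 (cl g i) (cl g j) = m * J4 i j"
  proof (intro allI impI)
    fix i j :: nat assume ij: "i < 4" "j < 4"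
    have "(transpose_mat g * Jmat 2 * g) $$ (i,j) = (m \<cdot>\<^sub>m Jmat 2) $$ (i,j)" using H by simp
    thus "om4 (cl g i) (cl g j) = m * J4 i j"
      using colJ4[OF g ij] ij by (simp add: J2_entry J4_def del: assoc4)
  qed
next
  assume H: "\<forall>i<4. \<forall>j<4. om4 (cl g i) (cl g j) = m * J4 i j"
  show "transpose_mat g * Jmat 2 * g = m \<cdot>\<^sub>m Jmat 2"
  proof (rule eq_matI)
    fix i j assume "i < dim_row (m \<cdot>\<^sub>m (Jmat 2 :: 'a mat))" "j < dim_col (m \<cdot>\<^sub>m (Jmat 2 :: 'a mat))"
    hence ij: "i < 4" "j < 4" by auto
    show "(transpose_mat g * Jmat 2 * g) $$ (i,j) = (m \<cdot>\<^sub>m Jmat 2) $$ (i,j)"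
      using colJ4[OF g ij] ij H by (simp add: J2_entry J4_def del: assoc4)
  qed (use g in auto)
qed

lemma sim2_eq: assumes r: "transpose_mat (g::'a::field mat) * Jmat 2 * g = m \<cdot>\<^sub>m Jmat 2"
  shows "sim 2 g = m"
proof -
  have u: "\<And>m'. transpose_mat g * Jmat 2 * g = m' \<cdot>\<^sub>m Jmat 2 \<Longrightarrow> m' = m"
  proof -
    fix m' assume "transpose_mat g * Jmat 2 * g = m' \<cdot>\<^sub>m Jmat 2"
    hence "(m' \<cdot>\<^sub>m Jmat 2) $$ (0,3) = ((m \<cdot>\<^sub>m Jmat 2) :: 'a mat) $$ (0,3)" using r by simp
    thus "m' = m" by (simp add: J2_entry)
  qed
  show "sim 2 g = m" unfolding sim_def using r u by (rule the_equality)
qed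

lemma sim3_eq: assumes r: "transpose_mat (g::'a::field mat) * Jmat 3 * g = m \<cdot>\<^sub>m Jmat 3"
  shows "sim 3 g = m"
proof -
  have u: "\<And>m'. transpose_mat g * Jmat 3 * g = m' \<cdot>\<^sub>m Jmat 3 \<Longrightarrow> m' = m"
  proof -
    fix m' assume "transpose_mat g * Jmat 3 * g = m' \<cdot>\<^sub>m Jmat 3"
    hence "(m' \<cdot>\<^sub>m Jmat 3) $$ (0,5) = ((m \<cdot>\<^sub>m Jmat 3) :: 'a mat) $$ (0,5)" using r by simp
    thus "m' = m" by (simp add: J3_entry)
  qed
  show "sim 3 g = m" unfolding sim_def using r u by (rule the_equality)
qed

lemma GSp2_iff: "g \<in> GSp 2 \<longleftrightarrow> g \<in> carrier_mat 4 4 \<and> (\<exists>m. m \<noteq> 0 \<and> transpose_mat g * Jmat 2 * g = m \<cdot>\<^sub>m Jmat 2)"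
  by (simp add: GSp_def)

lemma GSp2_rel: "g \<in> GSp 2 \<Longrightarrow> g \<in> carrier_mat 4 4 \<and> sim 2 g \<noteq> 0 \<and> transpose_mat g * Jmat 2 * g = sim 2 g \<cdot>\<^sub>m Jmat 2"
  using sim2_eq by (auto simp: GSp2_iff)

lemma GL2_iff: "g \<in> GL2 \<longleftrightarrow> g \<in> carrier_mat 2 2 \<and> g$$(0,0)*g$$(1,1) - g$$(0,1)*g$$(1,0) \<noteq> 0"
  by (auto simp: GL2_def det2)

definition out :: "nat \<Rightarrow> bool" where "out i \<longleftrightarrow> i = 0 \<or> i = 5"

definition blk :: "'a::zero mat \<Rightarrow> bool" where
  "blk h \<longleftrightarrow> (\<forall>i<6. \<forall>j<6. out i \<noteq> out j \<longrightarrow> h $$ (i,j) = 0)"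

definition ob :: "'a mat \<Rightarrow> 'a mat" where "ob h = mat 2 2 (\<lambda>(a,b). h $$ (5*a, 5*b))"
definition mb :: "'a mat \<Rightarrow> 'a mat" where "mb h = mat 4 4 (\<lambda>(a,b). h $$ (a+1, b+1))"

lemma ob_carrier[simp]: "ob h \<in> carrier_mat 2 2" by (simp add: ob_def)
lemma mb_carrier[simp]: "mb h \<in> carrier_mat 4 4" by (simp add: mb_def)

lemma iota_carrier[simp]: "iota h1 h2 \<in> carrier_mat 6 6" by (simp add: iota_def)

lemma iota_entry: "i < 6 \<Longrightarrow> j < 6 \<Longrightarrow> iota h1 h2 $$ (i,j) =
     (if (i = 0 \<or> i = 5) \<and> (j = 0 \<or> j = 5) then h1 $$ (i div 5, j div 5)
     else if 1 \<le> i \<and> i \<le> 4 \<and> 1 \<le> j \<and> j \<le> 4 then h2 $$ (i - 1, j - 1)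
     else 0)"
  by (simp add: iota_def)

lemma iota_blk: "blk (iota h1 h2)"
  unfolding blk_def out_def
proof (intro allI impI)
  fix i j :: nat assume ij: "i < 6" "j < 6" and o: "(i = 0 \<or> i = 5) \<noteq> (j = 0 \<or> j = 5)"
  show "iota h1 h2 $$ (i, j) = 0" using less6[OF ij(1)] less6[OF ij(2)] o
    by (elim disjE; simp add: iota_entry)
qed

lemma ob_iota: "h1 \<in> carrier_mat 2 2 \<Longrightarrow> ob (iota h1 h2) = h1"
proof (rule eq_matI)
  fix i j assume "h1 \<in> carrier_mat 2 2" "i < dim_row h1" "j < dim_col h1"
  hence ij: "i < 2" "j < 2" by auto
  show "ob (iota h1 h2) $$ (i, j) = h1 $$ (i, j)"
    using less2[OF ij(1)] less2[OF ij(2)] by (elim disjE; simp add: ob_def iota_entry)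
qed (auto simp: ob_def)

lemma mb_iota: "h2 \<in> carrier_mat 4 4 \<Longrightarrow> mb (iota h1 h2) = h2"
proof (rule eq_matI)
  fix i j assume "h2 \<in> carrier_mat 4 4" "i < dim_row h2" "j < dim_col h2"
  hence ij: "i < 4" "j < 4" by auto
  show "mb (iota h1 h2) $$ (i, j) = h2 $$ (i, j)"
    using less4[OF ij(1)] less4[OF ij(2)] by (elim disjE; simp add: mb_def iota_entry)
qed (auto simp: mb_def)

lemma blkz: assumes b: "blk h" shows
 "h$$(0,1) = 0" "h$$(0,2) = 0" "h$$(0,3) = 0" "h$$(0,4) = 0"
 "h$$(5,1) = 0" "h$$(5,2) = 0" "h$$(5,3) = 0" "h$$(5,4) = 0"
 "h$$(1,0) = 0" "h$$(2,0) = 0" "h$$(3,0) = 0" "h$$(4,0) = 0"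
 "h$$(1,5) = 0" "h$$(2,5) = 0" "h$$(3,5) = 0" "h$$(4,5) = 0"
  using b unfolding blk_def out_def by auto

lemma iota_ob_mb: assumes h: "h \<in> carrier_mat 6 6" and b: "blk h" shows "iota (ob h) (mb h) = h"
proof (rule eq_matI)
  fix i j assume "i < dim_row h" "j < dim_col h"
  hence ij: "i < 6" "j < 6" using h by auto
  show "iota (ob h) (mb h) $$ (i, j) = h $$ (i, j)"
    using less6[OF ij(1)] less6[OF ij(2)]
    by (elim disjE; simp add: iota_entry mb_def ob_def blkz[OF b])
qed (use h in \<open>auto simp: iota_def\<close>)

lemma iota_om: "i < 6 \<Longrightarrow> j < 6 \<Longrightarrow> om6 (cl (iota h1 h2) i) (cl (iota h1 h2) j) =
   (if out i \<and> out j then om2 (cl h1 (i div 5)) (cl h1 (j div 5))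
    else if \<not> out i \<and> \<not> out j then om4 (cl h2 (i - 1)) (cl h2 (j - 1)) else 0)"
  apply (drule less6, drule less6)
  apply (elim disjE)
  by (simp_all add: out_def om6_def om2_def om4_def cl_def iota_entry)

lemma om2_det: "h1 \<in> carrier_mat 2 2 \<Longrightarrow> a < 2 \<Longrightarrow> b < 2 \<Longrightarrow>
  om2 (cl h1 a) (cl h1 b) = det h1 * (if a = 0 \<and> b = 1 then 1 else if a = 1 \<and> b = 0 then -1 else 0)"
  apply (drule less2, drule less2)
  apply (elim disjE)
  by (simp_all add: det2 om2_def cl_def algebra_simps)

lemma iota_GSp:
  assumes h1: "h1 \<in> GL2" and h2: "h2 \<in> GSp 2" and d: "det h1 = sim 2 h2"
  shows "iota h1 h2 \<in> GSp 3" "sim 3 (iota h1 h2) = det h1"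
proof -
  have c1: "h1 \<in> carrier_mat 2 2" and nz: "det h1 \<noteq> 0" using h1 by (auto simp: GL2_def)
  have c2: "h2 \<in> carrier_mat 4 4" and r2: "transpose_mat h2 * Jmat 2 * h2 = det h1 \<cdot>\<^sub>m Jmat 2"
    using GSp2_rel[OF h2] d by auto
  have H4: "\<forall>i<4. \<forall>j<4. om4 (cl h2 i) (cl h2 j) = det h1 * J4 i j" using r2 colrel4_iff[OF c2] by simp
  have "\<forall>i<6. \<forall>j<6. om6 (cl (iota h1 h2) i) (cl (iota h1 h2) j) = det h1 * J6 i j"
  proof (intro allI impI)
    fix i j :: nat assume ij: "i < 6" "j < 6"
    show "om6 (cl (iota h1 h2) i) (cl (iota h1 h2) j) = det h1 * J6 i j"
      using less6[OF ij(1)] less6[OF ij(2)]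
      by (elim disjE; simp add: iota_om out_def om2_det[OF c1] H4 J6_def J4_def)
  qed
  hence r: "transpose_mat (iota h1 h2) * Jmat 3 * iota h1 h2 = det h1 \<cdot>\<^sub>m Jmat 3"
    using colrel_iff[of "iota h1 h2"] by simp
  thus "iota h1 h2 \<in> GSp 3" using nz by (auto simp: GSp3_iff)
  show "sim 3 (iota h1 h2) = det h1" using sim3_eq[OF r] .
qed

lemma mb_om: assumes b: "blk h" and ab: "a < 4" "b < 4"
  shows "om4 (cl (mb h) a) (cl (mb h) b) = om6 (cl h (a+1)) (cl h (b+1))"
proof -
  show ?thesis using less4[OF ab(1)] less4[OF ab(2)]
    by (elim disjE; simp add: om4_def om6_def cl_def mb_def blkz[OF b])
qed

lemma ob_det: assumes b: "blk h" shows "det (ob h) = om6 (cl h 0) (cl h 5)"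
proof -
  show ?thesis by (simp add: det2 ob_def om6_def cl_def blkz[OF b])
qed

lemma Hgrp_char: "Hgrp = {h \<in> GSp 3. blk h}"
proof (rule Set.set_eqI, rule iffI)
  fix h :: "'a mat" assume "h \<in> Hgrp"
  then obtain h1 h2 where h: "h = iota h1 h2" and h1: "h1 \<in> GL2" and h2: "h2 \<in> GSp 2" and d: "det h1 = sim 2 h2"
    by (auto simp: Hgrp_def fiber_prod_def)
  show "h \<in> {h \<in> GSp 3. blk h}" using iota_GSp[OF h1 h2 d] iota_blk h by auto
next
  fix h :: "'a mat" assume "h \<in> {h \<in> GSp 3. blk h}"
  hence g: "h \<in> GSp 3" and b: "blk h" by auto
  note R = GSp3_rel[OF g]
  define m where "m = sim 3 h"
  have c: "h \<in> carrier_mat 6 6" and m: "m \<noteq> 0" and r: "transpose_mat h * Jmat 3 * h = m \<cdot>\<^sub>m Jmat 3"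
    using R by (auto simp: m_def)
  have H6: "\<forall>i<6. \<forall>j<6. om6 (cl h i) (cl h j) = m * J6 i j" using r colrel_iff[OF c] by simp
  have dt: "det (ob h) = m" using ob_det[OF b] H6 by (simp add: J6_def)
  have H4: "\<forall>i<4. \<forall>j<4. om4 (cl (mb h) i) (cl (mb h) j) = m * J4 i j"
  proof (intro allI impI)
    fix i j :: nat assume ij: "i < 4" "j < 4"
    have "J6 (i+1) (j+1) = (J4 i j :: 'a)" using ij by (auto simp: J6_def J4_def)
    thus "om4 (cl (mb h) i) (cl (mb h) j) = m * J4 i j" using mb_om[OF b ij] H6 ij by simp
  qed
  hence r4: "transpose_mat (mb h) * Jmat 2 * mb h = m \<cdot>\<^sub>m Jmat 2" using colrel4_iff[of "mb h"] by simp
  have "mb h \<in> GSp 2" using r4 m by (auto simp: GSp2_iff)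
  moreover have "ob h \<in> GL2" using dt m by (simp add: GL2_def)
  moreover have "det (ob h) = sim 2 (mb h)" using dt sim2_eq[OF r4] by simp
  ultimately have "(ob h, mb h) \<in> fiber_prod GL2 (GSp 2)" by (simp add: fiber_prod_def)
  thus "h \<in> Hgrp" unfolding Hgrp_def using iota_ob_mb[OF c b] by force
qed


lemma parabolic_char: assumes mn: "m \<le> 2*n"
  shows "parabolic n m = {g \<in> GSp n. \<forall>i j. m \<le> i \<and> i < 2*n \<and> j < m \<longrightarrow> g$$(i,j) = 0}"
proof (rule Set.set_eqI, rule iffI)
  fix g :: "'a mat" assume g: "g \<in> parabolic n m"
  hence gG: "g \<in> GSp n" and gc: "g \<in> carrier_mat (2*n) (2*n)" by (auto simp: parabolic_def GSp_def)
  have "\<forall>i j. m \<le> i \<and> i < 2*n \<and> j < m \<longrightarrow> g$$(i,j) = 0"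
  proof (intro allI impI)
    fix i j assume ij: "m \<le> i \<and> i < 2*n \<and> j < m"
    have j2: "j < 2*n" using ij mn by auto
    have "\<forall>i. m \<le> i \<and> i < 2*n \<longrightarrow> (unit_vec (2*n) j :: 'a vec) $ i = 0" using ij j2 by auto
    hence "(g *\<^sub>v unit_vec (2*n) j) $ i = 0" using g ij unit_vec_carrier[of "2*n" j]
      unfolding parabolic_def by blast
    thus "g$$(i,j) = 0" using gc ij j2 by (simp add: row_def)
  qed
  thus "g \<in> {g \<in> GSp n. \<forall>i j. m \<le> i \<and> i < 2*n \<and> j < m \<longrightarrow> g$$(i,j) = 0}" using gG by auto
next
  fix g :: "'a mat" assume "g \<in> {g \<in> GSp n. \<forall>i j. m \<le> i \<and> i < 2*n \<and> j < m \<longrightarrow> g$$(i,j) = 0}"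
  hence gG: "g \<in> GSp n" and z: "\<And>i j. m \<le> i \<Longrightarrow> i < 2*n \<Longrightarrow> j < m \<Longrightarrow> g$$(i,j) = 0" by auto
  have gc: "g \<in> carrier_mat (2*n) (2*n)" using gG by (auto simp: GSp_def)
  show "g \<in> parabolic n m" unfolding parabolic_def
  proof (intro CollectI conjI gG ballI impI allI)
    fix v :: "'a vec" and i assume v: "v \<in> carrier_vec (2*n)" and vz: "\<forall>i. m \<le> i \<and> i < 2*n \<longrightarrow> v $ i = 0"
      and i: "m \<le> i \<and> i < 2*n"
    have "(g *\<^sub>v v) $ i = (\<Sum>k\<in>{0..<2*n}. g$$(i,k) * v$k)"
      using gc v i by (simp add: scalar_prod_def row_def)
    also have "\<dots> = 0"
    proof (rule sum.neutral, rule ballI)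
      fix k assume k: "k \<in> {0..<2*n}"
      show "g$$(i,k) * v$k = 0"
      proof (cases "k < m")
        case True thus ?thesis using z[of i k] i by simp
      next
        case False thus ?thesis using vz k by simp
      qed
    qed
    finally show "(g *\<^sub>v v) $ i = 0" .
  qed
qed

lemma P22_char: "P22 = {p \<in> GSp 3. \<forall>i j. 2 \<le> i \<and> i < 6 \<and> j < 2 \<longrightarrow> p$$(i,j) = 0}"
  unfolding P22_def using parabolic_char[of 2 3] by simp

lemma dd_lemma: fixes a :: "'a::field"
  assumes "x1*a + y1*b = m" "x1*c + y1*d = 0" "x2*a + y2*b = 0" "x2*c + y2*d = m" "m \<noteq> 0"
  shows "a*d - b*c \<noteq> 0"
proof
  assume "a*d - b*c = 0"
  have "(x1*y2 - y1*x2)*(a*d - b*c) = (x1*a + y1*b)*(x2*c+y2*d) - (x1*c + y1*d)*(x2*a + y2*b)"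
    by (simp add: algebra_simps)
  hence "m * m = 0" using assms \<open>a*d - b*c = 0\<close> by simp
  thus False using assms by simp
qed

lemma dd2: fixes a :: "'a::field"
  assumes "x1*a + y1*b = m" "x1*c + y1*d = 0" "x2*a + y2*b = 0" "x2*c + y2*d = m" "m \<noteq> 0"
  shows "x1*y2 - y1*x2 \<noteq> 0"
proof
  assume "x1*y2 - y1*x2 = 0"
  have "(x1*y2 - y1*x2)*(a*d - b*c) = (x1*a + y1*b)*(x2*c+y2*d) - (x1*c + y1*d)*(x2*a + y2*b)"
    by (simp add: algebra_simps)
  hence "m * m = 0" using assms \<open>x1*y2 - y1*x2 = 0\<close> by simp
  thus False using assms by simp
qed

lemma lin2: fixes a :: "'a::field"
  assumes "a*x + b*y = 0" "c*x + d*y = 0" "a*d - b*c \<noteq> 0"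
  shows "x = 0 \<and> y = 0"
proof -
  have "(a*d - b*c)*x = d*(a*x + b*y) - b*(c*x + d*y)" by (simp add: algebra_simps)
  hence x: "x = 0" using assms by simp
  have "(a*d - b*c)*y = a*(c*x + d*y) - c*(a*x + b*y)" by (simp add: algebra_simps)
  hence "y = 0" using assms by simp
  with x show ?thesis by simp
qed

lemma GSp3_C: assumes "g \<in> GSp 3" "i < 6" "j < 6"
  shows "om6 (cl g i) (cl g j) = sim 3 g * J6 i j"
  using GSp3_rel[OF assms(1)] colrel_iff[of g "sim 3 g"] assms(2,3) by auto

lemma GSp3_R: assumes "g \<in> GSp 3" "i < 6" "j < 6"
  shows "om6 (rw g i) (rw g j) = sim 3 g * J6 i j"
proof -
  note R = GSp3_rel[OF assms(1)]
  have "g * Jmat 3 * transpose_mat g = sim 3 g \<cdot>\<^sub>m Jmat 3" using TR R by blast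
  thus ?thesis using rowrel_iff[of g "sim 3 g"] R assms(2,3) by auto
qed

definition colz :: "'a::zero mat \<Rightarrow> bool" where
  "colz p \<longleftrightarrow> (\<forall>i j. 2 \<le> i \<and> i < 6 \<and> j < 2 \<longrightarrow> p$$(i,j) = 0)"
definition rowz :: "'a::zero mat \<Rightarrow> bool" where
  "rowz p \<longleftrightarrow> (\<forall>k<4. p$$(4,k) = 0 \<and> p$$(5,k) = 0)"

lemma colz_rowz: assumes p: "p \<in> GSp 3" and cz: "colz p" shows "rowz p"
proof -
  define m where "m = sim 3 p"
  have m: "m \<noteq> 0" using GSp3_rel[OF p] by (simp add: m_def)
  have C: "\<And>i j. i<6 \<Longrightarrow> j<6 \<Longrightarrow> om6 (cl p i) (cl p j) = m * J6 i j" using GSp3_C[OF p] by (simp add: m_def)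
  have z: "\<And>i j. 2 \<le> i \<Longrightarrow> i < 6 \<Longrightarrow> j < 2 \<Longrightarrow> p$$(i,j) = 0" using cz by (auto simp: colz_def)
  have z': "p$$(2,0) = 0" "p$$(3,0) = 0" "p$$(4,0) = 0" "p$$(5,0) = 0"
     "p$$(2,1) = 0" "p$$(3,1) = 0" "p$$(4,1) = 0" "p$$(5,1) = 0" by (auto intro: z)
  have a1: "p$$(0,0)*p$$(5,5) + p$$(1,0)*p$$(4,5) = m" using C[of 0 5] by (simp add: om6_def cl_def z' J6_def)
  have a2: "p$$(0,0)*p$$(5,4) + p$$(1,0)*p$$(4,4) = 0" using C[of 0 4] by (simp add: om6_def cl_def z' J6_def)
  have a3: "p$$(0,1)*p$$(5,5) + p$$(1,1)*p$$(4,5) = 0" using C[of 1 5] by (simp add: om6_def cl_def z' J6_def)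
  have a4: "p$$(0,1)*p$$(5,4) + p$$(1,1)*p$$(4,4) = m" using C[of 1 4] by (simp add: om6_def cl_def z' J6_def)
  have D: "p$$(0,0)*p$$(1,1) - p$$(1,0)*p$$(0,1) \<noteq> 0"
    using dd2[of "p$$(0,0)" "p$$(5,5)" "p$$(1,0)" "p$$(4,5)" m "p$$(5,4)" "p$$(4,4)" "p$$(0,1)" "p$$(1,1)"]
      a1 a2 a3 a4 m by simp
  show ?thesis unfolding rowz_def
  proof (intro allI impI)
    fix k :: nat assume k: "k < 4"
    have e1: "p$$(0,0)*p$$(5,k) + p$$(1,0)*p$$(4,k) = 0" using C[of 0 k] k by (simp add: om6_def cl_def z' J6_def)
    have e2: "p$$(0,1)*p$$(5,k) + p$$(1,1)*p$$(4,k) = 0" using C[of 1 k] k by (simp add: om6_def cl_def z' J6_def)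
    show "p$$(4,k) = 0 \<and> p$$(5,k) = 0" using lin2[OF e1 e2 D] by simp
  qed
qed

lemma rowz_colz: assumes p: "p \<in> GSp 3" and rz: "rowz p" shows "colz p"
proof -
  define m where "m = sim 3 p"
  have m: "m \<noteq> 0" using GSp3_rel[OF p] by (simp add: m_def)
  have R: "\<And>i j. i<6 \<Longrightarrow> j<6 \<Longrightarrow> om6 (rw p i) (rw p j) = m * J6 i j" using GSp3_R[OF p] by (simp add: m_def)
  have z': "p$$(4,0) = 0" "p$$(4,1) = 0" "p$$(4,2) = 0" "p$$(4,3) = 0"
     "p$$(5,0) = 0" "p$$(5,1) = 0" "p$$(5,2) = 0" "p$$(5,3) = 0" using rz by (auto simp: rowz_def)
  have a1: "p$$(0,0)*p$$(5,5) + p$$(0,1)*p$$(5,4) = m" using R[of 0 5] by (simp add: om6_def rw_def z' J6_def)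
  have a2: "p$$(0,0)*p$$(4,5) + p$$(0,1)*p$$(4,4) = 0" using R[of 0 4] by (simp add: om6_def rw_def z' J6_def)
  have a3: "p$$(1,0)*p$$(5,5) + p$$(1,1)*p$$(5,4) = 0" using R[of 1 5] by (simp add: om6_def rw_def z' J6_def)
  have a4: "p$$(1,0)*p$$(4,5) + p$$(1,1)*p$$(4,4) = m" using R[of 1 4] by (simp add: om6_def rw_def z' J6_def)
  have D: "p$$(5,5)*p$$(4,4) - p$$(5,4)*p$$(4,5) \<noteq> 0"
    using dd_lemma[of "p$$(0,0)" "p$$(5,5)" "p$$(0,1)" "p$$(5,4)" m "p$$(4,5)" "p$$(4,4)" "p$$(1,0)" "p$$(1,1)"]
      a1 a2 a3 a4 m by simp
  show ?thesis unfolding colz_def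
  proof (intro allI impI)
    fix i j :: nat assume ij: "2 \<le> i \<and> i < 6 \<and> j < 2"
    have jz: "J6 i 5 = (0::'a)" "J6 i 4 = (0::'a)" using ij by (auto simp: J6_def)
    have e1: "p$$(5,5)*p$$(i,0) + p$$(5,4)*p$$(i,1) = 0" using R[of i 5] ij
      by (simp add: om6_def rw_def z' jz algebra_simps)
    have e2: "p$$(4,5)*p$$(i,0) + p$$(4,4)*p$$(i,1) = 0" using R[of i 4] ij
      by (simp add: om6_def rw_def z' jz algebra_simps)
    have "p$$(i,0) = 0 \<and> p$$(i,1) = 0" using lin2[OF e1 e2 D] .
    thus "p$$(i,j) = 0" using ij less2[of j] by auto
  qed
qed

lemma P22_char2: "P22 = {p \<in> GSp 3. rowz p}"
  using colz_rowz rowz_colz unfolding P22_char colz_def[symmetric] by blast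

lemma GSp3_mult: assumes g: "g \<in> GSp 3" and h: "h \<in> GSp 3" shows "g * h \<in> GSp 3"
proof -
  note G = GSp3_rel[OF g] and H = GSp3_rel[OF h]
  have "transpose_mat (g * h) * Jmat 3 * (g * h) = (sim 3 g * sim 3 h) \<cdot>\<^sub>m Jmat 3"
    using rel_mult G H by blast
  thus ?thesis using G H unfolding GSp3_iff by (intro conjI exI[of _ "sim 3 g * sim 3 h"]) auto
qed

lemma GSp3_inv: assumes g: "g \<in> GSp 3"
  shows "ginv g (sim 3 g) \<in> GSp 3" "ginv g (sim 3 g) * g = 1\<^sub>m 6" "g * ginv g (sim 3 g) = 1\<^sub>m 6"
proof -
  note G = GSp3_rel[OF g]
  have "transpose_mat (ginv g (sim 3 g)) * Jmat 3 * ginv g (sim 3 g) = (1 / sim 3 g) \<cdot>\<^sub>m Jmat 3"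
    using ginv_rel G by blast
  thus "ginv g (sim 3 g) \<in> GSp 3" using G unfolding GSp3_iff by (intro conjI exI[of _ "1 / sim 3 g"]) auto
  show "ginv g (sim 3 g) * g = 1\<^sub>m 6" using ginv_left G by blast
  show "g * ginv g (sim 3 g) = 1\<^sub>m 6" using ginv_right G by blast
qed

lemma one_GSp3: "(1\<^sub>m 6 :: 'a::field mat) \<in> GSp 3"
proof -
  have "transpose_mat (1\<^sub>m 6) * Jmat 3 * 1\<^sub>m 6 = (1::'a) \<cdot>\<^sub>m Jmat 3" by simp
  thus ?thesis unfolding GSp3_iff by (intro conjI exI[of _ 1]) auto
qed

lemma one_P22: "(1\<^sub>m 6 :: 'a::field mat) \<in> P22"
  unfolding P22_char using one_GSp3 by auto

lemma P22_mult: assumes p: "p \<in> P22" and q: "q \<in> P22" shows "p * q \<in> P22"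
proof -
  have pG: "p \<in> GSp 3" and qG: "q \<in> GSp 3" using p q by (auto simp: P22_char)
  have pc: "p \<in> carrier_mat 6 6" and qc: "q \<in> carrier_mat 6 6" using pG qG by (auto simp: GSp3_iff)
  have zp: "\<And>i j. 2 \<le> i \<Longrightarrow> i < 6 \<Longrightarrow> j < 2 \<Longrightarrow> p$$(i,j) = 0" using p by (auto simp: P22_char)
  have zq: "\<And>i j. 2 \<le> i \<Longrightarrow> i < 6 \<Longrightarrow> j < 2 \<Longrightarrow> q$$(i,j) = 0" using q by (auto simp: P22_char)
  have "\<forall>i j. 2 \<le> i \<and> i < 6 \<and> j < 2 \<longrightarrow> (p*q)$$(i,j) = 0"
  proof (intro allI impI)
    fix i j :: nat assume "2 \<le> i \<and> i < 6 \<and> j < 2"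
    hence i1: "2 \<le> i" and i2: "i < 6" and j: "j < 2" by auto
    show "(p*q)$$(i,j) = 0" using i1 i2 j
      by (simp add: mult6[OF pc qc i2] zp zq)
  qed
  thus ?thesis using GSp3_mult[OF pG qG] by (simp add: P22_char)
qed

lemma P22_inv: assumes p: "p \<in> P22"
  shows "ginv p (sim 3 p) \<in> P22" "ginv p (sim 3 p) * p = 1\<^sub>m 6" "p * ginv p (sim 3 p) = 1\<^sub>m 6"
proof -
  have pG: "p \<in> GSp 3" using p by (auto simp: P22_char)
  have pc: "p \<in> carrier_mat 6 6" using pG by (auto simp: GSp3_iff)
  have zp: "p$$(2,0) = 0" "p$$(3,0) = 0" "p$$(4,0) = 0" "p$$(5,0) = 0"
     "p$$(2,1) = 0" "p$$(3,1) = 0" "p$$(4,1) = 0" "p$$(5,1) = 0" using p by (auto simp: P22_char)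
  note I = GSp3_inv[OF pG]
  show "ginv p (sim 3 p) * p = 1\<^sub>m 6" "p * ginv p (sim 3 p) = 1\<^sub>m 6" using I by auto
  have "rowz (ginv p (sim 3 p))" unfolding rowz_def
  proof (intro allI impI)
    fix k :: nat assume k: "k < 4"
    show "ginv p (sim 3 p) $$ (4,k) = 0 \<and> ginv p (sim 3 p) $$ (5,k) = 0"
      using less4[OF k] pc
      by (elim disjE; simp add: ginv_def mult6 J3_entry zp)
  qed
  thus "ginv p (sim 3 p) \<in> P22" using I(1) by (simp add: P22_char2)
qed

lemma right_coset_eq_iff:
  assumes g: "g \<in> carrier_mat 6 6" and h: "h \<in> carrier_mat 6 6" and X: "X \<in> carrier_mat 6 6"
    and gX: "g * X = 1\<^sub>m 6" and Xg: "X * g = 1\<^sub>m 6"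
  shows "right_coset (g * h) = right_coset g \<longleftrightarrow> g * h * X \<in> P22"
proof
  assume eq: "right_coset (g * h) = right_coset g"
  have "g * h \<in> right_coset (g * h)" unfolding right_coset_def
    using one_P22 g h by (intro CollectI exI[of _ "1\<^sub>m 6"]) auto
  then obtain p where p: "p \<in> P22" and gh: "g * h = p * g" using eq by (auto simp: right_coset_def)
  have pc: "p \<in> carrier_mat 6 6" using p by (auto simp: P22_char GSp3_iff)
  have "g * h * X = p * (g * X)" using gh pc g X h by simp
  thus "g * h * X \<in> P22" using p gX pc by simp
next
  assume P: "g * h * X \<in> P22"
  define p where "p = g * h * X"
  have p: "p \<in> P22" using P by (simp add: p_def)
  have pc: "p \<in> carrier_mat 6 6" using p by (auto simp: P22_char GSp3_iff)
  have pg: "p * g = g * h" unfolding p_def using g h X Xg by simp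
  note I = P22_inv[OF p]
  define q where "q = ginv p (sim 3 p)"
  have q: "q \<in> P22" and qc: "q \<in> carrier_mat 6 6" using I pc by (auto simp: q_def)
  have qp: "q * p = 1\<^sub>m 6" using I by (simp add: q_def)
  show "right_coset (g * h) = right_coset g"
  proof (rule Set.set_eqI, rule iffI)
    fix x assume "x \<in> right_coset (g * h)"
    then obtain r where r: "r \<in> P22" and x: "x = r * (g * h)" by (auto simp: right_coset_def)
    have rc: "r \<in> carrier_mat 6 6" using r by (auto simp: P22_char GSp3_iff)
    have "x = (r * p) * g" using x pg rc pc g by simp
    thus "x \<in> right_coset g" using P22_mult[OF r p] by (auto simp: right_coset_def)
  next
    fix x assume "x \<in> right_coset g"
    then obtain r where r: "r \<in> P22" and x: "x = r * g" by (auto simp: right_coset_def)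
    have rc: "r \<in> carrier_mat 6 6" using r by (auto simp: P22_char GSp3_iff)
    have "r * g = r * ((q * p) * g)" using g by (simp add: qp)
    also have "\<dots> = (r * q) * (g * h)" using rc qc pc g h pg by simp
    finally show "x \<in> right_coset (g * h)" using P22_mult[OF r q] x by (auto simp: right_coset_def)
  qed
qed

lemma stab_char:
  assumes g: "g \<in> carrier_mat 6 6" and X: "X \<in> carrier_mat 6 6"
    and gX: "g * X = 1\<^sub>m 6" and Xg: "X * g = 1\<^sub>m 6"
  shows "stab g = {h \<in> Hgrp. g * h * X \<in> P22}"
proof -
  have "\<And>h. h \<in> Hgrp \<Longrightarrow> h \<in> carrier_mat 6 6" by (auto simp: Hgrp_char GSp3_iff)
  thus ?thesis unfolding stab_def using right_coset_eq_iff[OF g _ X gX Xg] by blast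
qed


lemma blk_intro: assumes
 "h$$(0,1) = 0" "h$$(0,2) = 0" "h$$(0,3) = 0" "h$$(0,4) = 0"
 "h$$(5,1) = 0" "h$$(5,2) = 0" "h$$(5,3) = 0" "h$$(5,4) = 0"
 "h$$(1,0) = 0" "h$$(2,0) = 0" "h$$(3,0) = 0" "h$$(4,0) = 0"
 "h$$(1,5) = 0" "h$$(2,5) = 0" "h$$(3,5) = 0" "h$$(4,5) = 0"
 shows "blk h"
  unfolding blk_def
proof (intro allI impI)
  fix i j :: nat assume ij: "i < 6" "j < 6" and o: "out i \<noteq> out j"
  show "h $$ (i,j) = 0" using less6[OF ij(1)] less6[OF ij(2)] o
    by (elim disjE; simp add: out_def assms)
qed

lemma Hgrp_carrier: "h \<in> Hgrp \<Longrightarrow> h \<in> carrier_mat 6 6"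
  by (auto simp: Hgrp_char GSp3_iff)

lemma Hgrp_mult: assumes h: "h \<in> Hgrp" and k: "k \<in> Hgrp" shows "h * k \<in> Hgrp"
proof -
  have hG: "h \<in> GSp 3" and hb: "blk h" and kG: "k \<in> GSp 3" and kb: "blk k" using h k by (auto simp: Hgrp_char)
  have hc: "h \<in> carrier_mat 6 6" and kc: "k \<in> carrier_mat 6 6" using hG kG by (auto simp: GSp3_iff)
  have "blk (h * k)" unfolding blk_def
  proof (intro allI impI)
    fix i j :: nat assume ij: "i < 6" "j < 6" and o: "out i \<noteq> out j"
    have "(h * k) $$ (i,j) = (\<Sum>l<6. h$$(i,l) * k$$(l,j))" using mult_entry[OF hc kc ij] .
    also have "\<dots> = 0"
    proof (rule sum.neutral, rule ballI)
      fix l assume l: "l \<in> {..<6::nat}"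
      show "h$$(i,l) * k$$(l,j) = 0"
      proof (cases "out l = out i")
        case True hence "out l \<noteq> out j" using o by simp
        thus ?thesis using kb l ij by (auto simp: blk_def)
      next
        case False thus ?thesis using hb l ij by (auto simp: blk_def)
      qed
    qed
    finally show "(h * k) $$ (i,j) = 0" .
  qed
  thus ?thesis using GSp3_mult[OF hG kG] by (simp add: Hgrp_char)
qed

lemma Hgrp_inv: assumes h: "h \<in> Hgrp"
  shows "ginv h (sim 3 h) \<in> Hgrp" "ginv h (sim 3 h) * h = 1\<^sub>m 6" "h * ginv h (sim 3 h) = 1\<^sub>m 6"
proof -
  have hG: "h \<in> GSp 3" and hb: "blk h" using h by (auto simp: Hgrp_char)
  have hc: "h \<in> carrier_mat 6 6" using hG by (auto simp: GSp3_iff)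
  note I = GSp3_inv[OF hG]
  show "ginv h (sim 3 h) * h = 1\<^sub>m 6" "h * ginv h (sim 3 h) = 1\<^sub>m 6" using I by auto
  note z = blkz[OF hb]
  have "blk (ginv h (sim 3 h))"
    using carrier_matD[OF hc] by (intro blk_intro; simp add: ginv_def mult6 J3_entry z hc)
  thus "ginv h (sim 3 h) \<in> Hgrp" using I(1) by (simp add: Hgrp_char)
qed

lemma one_Hgrp: "(1\<^sub>m 6 :: 'a::field mat) \<in> Hgrp"
proof -
  have "blk (1\<^sub>m 6 :: 'a mat)" by (rule blk_intro; simp)
  thus ?thesis using one_GSp3 by (simp add: Hgrp_char)
qed

lemma P22_carrier: "p \<in> P22 \<Longrightarrow> p \<in> carrier_mat 6 6"
  by (auto simp: P22_char GSp3_iff)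

lemma double_coset_self: "t \<in> carrier_mat 6 6 \<Longrightarrow> t \<in> double_coset t"
  unfolding double_coset_def using one_P22 one_Hgrp
  by (intro CollectI exI[of _ "1\<^sub>m 6"] exI[of _ t]) auto

lemma double_coset_eq: assumes t: "t \<in> carrier_mat 6 6" and g: "g \<in> double_coset t"
  shows "double_coset g = double_coset t"
proof -
  obtain p h where p: "p \<in> P22" and h: "h \<in> Hgrp" and gd: "g = p * t * h"
    using g by (auto simp: double_coset_def)
  have pc: "p \<in> carrier_mat 6 6" and hc: "h \<in> carrier_mat 6 6" using p h P22_carrier Hgrp_carrier by auto
  note PI = P22_inv[OF p] and HI = Hgrp_inv[OF h]
  define p' where "p' = ginv p (sim 3 p)"
  define h' where "h' = ginv h (sim 3 h)"
  have p': "p' \<in> P22" "p' * p = 1\<^sub>m 6" and h': "h' \<in> Hgrp" "h * h' = 1\<^sub>m 6"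
    using PI HI by (auto simp: p'_def h'_def)
  have p'c: "p' \<in> carrier_mat 6 6" and h'c: "h' \<in> carrier_mat 6 6" using p'(1) h'(1) P22_carrier Hgrp_carrier by auto
  show ?thesis
  proof (rule Set.set_eqI, rule iffI)
    fix x assume "x \<in> double_coset g"
    then obtain q k where q: "q \<in> P22" and k: "k \<in> Hgrp" and x: "x = q * g * k" by (auto simp: double_coset_def)
    have qc: "q \<in> carrier_mat 6 6" and kc: "k \<in> carrier_mat 6 6" using q k P22_carrier Hgrp_carrier by auto
    have "x = (q * p) * t * (h * k)" using x gd qc kc pc hc t by simp
    thus "x \<in> double_coset t" using P22_mult[OF q p] Hgrp_mult[OF h k] by (auto simp: double_coset_def)
  next
    fix x assume "x \<in> double_coset t"
    then obtain q k where q: "q \<in> P22" and k: "k \<in> Hgrp" and x: "x = q * t * k" by (auto simp: double_coset_def)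
    have qc: "q \<in> carrier_mat 6 6" and kc: "k \<in> carrier_mat 6 6" using q k P22_carrier Hgrp_carrier by auto
    have "q * t * k = q * ((p' * p) * t * (h * h')) * k" using t qc kc by (simp add: p'(2) h'(2))
    also have "\<dots> = (q * p') * g * (h' * k)" using gd qc kc pc hc t p'c h'c by simp
    finally show "x \<in> double_coset g" using P22_mult[OF q p'(1)] Hgrp_mult[OF h'(1) k] x
      by (auto simp: double_coset_def)
  qed
qed


definition tau2i :: "'a::field mat" where
  "tau2i = mat_of_rows_list 6
     [[1,0,0,0,0,0],[0,1,0,0,0,0],[1,0,1,0,0,0],
      [0,0,0,1,0,0],[0,0,0,0,1,0],[0,0,0,-1,0,1]]"

definition tau_opi :: "'a::field mat" where
  "tau_opi = mat_of_rows_list 6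
     [[1,0,0,0,0,0],[0,1,0,0,0,0],[0,0,1,0,0,0],
      [0,0,0,1,0,0],[-1,0,0,0,1,0],[0,-1,0,0,0,1]]"

lemma tau_carriers[simp]: "(tau1 :: 'a::field mat) \<in> carrier_mat 6 6" "(tau2 :: 'a::field mat) \<in> carrier_mat 6 6"
  "(tau_op :: 'a::field mat) \<in> carrier_mat 6 6" "(tau2i :: 'a::field mat) \<in> carrier_mat 6 6"
  "(tau_opi :: 'a::field mat) \<in> carrier_mat 6 6"
  by (simp_all add: tau1_def tau2_def tau_op_def tau2i_def tau_opi_def mat_of_rows_list_def)

lemma mat_eq6: assumes "A \<in> carrier_mat 6 6" "B \<in> carrier_mat 6 6"
  "\<And>i j. i < 6 \<Longrightarrow> j < 6 \<Longrightarrow> A $$ (i,j) = B $$ (i,j)" shows "A = B"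
  using assms by (intro eq_matI) auto

lemma tau1_inv: "(tau1 :: 'a::field mat) * tau1 = 1\<^sub>m 6"
  by (rule mat_eq6, simp, simp, drule less6, drule less6, elim disjE; simp add: mult6 tau1_def mat_of_rows_list_def)
lemma tau2_inv: "(tau2 :: 'a::field mat) * tau2i = 1\<^sub>m 6" "(tau2i :: 'a::field mat) * tau2 = 1\<^sub>m 6"
  by (rule mat_eq6, simp, simp, drule less6, drule less6, elim disjE; simp add: mult6 tau2_def tau2i_def mat_of_rows_list_def)+
lemma tau_op_inv: "(tau_op :: 'a::field mat) * tau_opi = 1\<^sub>m 6" "(tau_opi :: 'a::field mat) * tau_op = 1\<^sub>m 6"
  by (rule mat_eq6, simp, simp, drule less6, drule less6, elim disjE; simp add: mult6 tau_op_def tau_opi_def mat_of_rows_list_def)+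

lemma GSp3_by_col1: assumes "g \<in> carrier_mat 6 6" "\<And>i j. i < 6 \<Longrightarrow> j < 6 \<Longrightarrow> om6 (cl g i) (cl g j) = J6 i j"
  shows "g \<in> GSp 3"
proof -
  have "transpose_mat g * Jmat 3 * g = (1::'a) \<cdot>\<^sub>m Jmat 3"
    by (rule colrel_iff[OF assms(1), THEN iffD2]) (simp add: assms(2))
  thus ?thesis using assms(1) unfolding GSp3_iff by (intro conjI exI[of _ 1]) auto
qed

lemma tau1_GSp: "(tau1 :: 'a::field mat) \<in> GSp 3"
  by (rule GSp3_by_col1, simp, drule less6, drule less6, elim disjE; simp add: tau1_def mat_of_rows_list_def om6_def cl_def J6_def)
lemma tau2_GSp: "(tau2 :: 'a::field mat) \<in> GSp 3"
  by (rule GSp3_by_col1, simp, drule less6, drule less6, elim disjE; simp add: tau2_def mat_of_rows_list_def om6_def cl_def J6_def)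
lemma tau_op_GSp: "(tau_op :: 'a::field mat) \<in> GSp 3"
  by (rule GSp3_by_col1, simp, drule less6, drule less6, elim disjE; simp add: tau_op_def mat_of_rows_list_def om6_def cl_def J6_def)

lemma row_act_comb: assumes g: "g \<in> carrier_mat 6 6"
  shows "row_act (c \<cdot>\<^sub>v f 1 + d \<cdot>\<^sub>v f 2) g = c \<cdot>\<^sub>v row g 5 + d \<cdot>\<^sub>v row g 4"
proof (rule eq_vecI)
  show "dim_vec (row_act (c \<cdot>\<^sub>v f 1 + d \<cdot>\<^sub>v f 2) g) = dim_vec (c \<cdot>\<^sub>v row g 5 + d \<cdot>\<^sub>v row g 4)"
    using g by (simp add: row_act_def)
  fix i assume "i < dim_vec (c \<cdot>\<^sub>v row g 5 + d \<cdot>\<^sub>v row g 4)"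
  hence i: "i < 6" using g by simp
  show "row_act (c \<cdot>\<^sub>v f 1 + d \<cdot>\<^sub>v f 2) g $ i = (c \<cdot>\<^sub>v row g 5 + d \<cdot>\<^sub>v row g 4) $ i"
    using g i carrier_matD[OF g] by (simp add: row_act_def f_def scalar_prod_def sum6 lessThan_atLeast0[symmetric])
qed

lemma plane_gen: assumes g: "g \<in> carrier_mat 6 6"
  shows "plane_of g = {c \<cdot>\<^sub>v row g 5 + d \<cdot>\<^sub>v row g 4 | c d. True}"
  unfolding plane_of_def span2_def
proof (rule Set.set_eqI, rule iffI)
  fix x assume "x \<in> (\<lambda>w. row_act w g) ` {c \<cdot>\<^sub>v f 1 + d \<cdot>\<^sub>v f 2 |c d. True}"
  thus "x \<in> {c \<cdot>\<^sub>v row g 5 + d \<cdot>\<^sub>v row g 4 |c d. True}" using row_act_comb[OF g] by auto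
next
  fix x assume "x \<in> {c \<cdot>\<^sub>v row g 5 + d \<cdot>\<^sub>v row g 4 |c d. True}"
  then obtain c d where x: "x = c \<cdot>\<^sub>v row g 5 + d \<cdot>\<^sub>v row g 4" by auto
  show "x \<in> (\<lambda>w. row_act w g) ` {c \<cdot>\<^sub>v f 1 + d \<cdot>\<^sub>v f 2 |c d. True}"
    by (rule image_eqI[of _ _ "c \<cdot>\<^sub>v f 1 + d \<cdot>\<^sub>v f 2"]) (auto simp: x row_act_comb[OF g])
qed

lemma vec_eq6: assumes "u \<in> carrier_vec 6" "v \<in> carrier_vec 6" "\<And>i. i < 6 \<Longrightarrow> u $ i = v $ i" shows "u = v"
  using assms by (intro eq_vecI) auto

lemma rows_tau:
  "row (1\<^sub>m 6 :: 'a::field mat) 5 = f 1" "row (1\<^sub>m 6 :: 'a::field mat) 4 = f 2"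
  "row (tau1 :: 'a::field mat) 5 = f 3" "row (tau1 :: 'a::field mat) 4 = f 2"
  "row (tau2 :: 'a::field mat) 5 = f 1 + f 3" "row (tau2 :: 'a::field mat) 4 = f 2"
  "row (tau_op :: 'a::field mat) 5 = e 2 + f 1" "row (tau_op :: 'a::field mat) 4 = e 1 + f 2"
  by (rule vec_eq6, simp add: tau1_def tau2_def tau_op_def mat_of_rows_list_def f_def e_def,
      simp add: f_def e_def, drule less6, elim disjE;
      simp add: tau1_def tau2_def tau_op_def mat_of_rows_list_def f_def e_def)+

lemma plane_I: "plane_of (1\<^sub>m 6 :: 'a::field mat) = span2 (f 1) (f 2)"
proof -
  have "row (1\<^sub>m 6 :: 'a mat) 5 = f 1" "row (1\<^sub>m 6 :: 'a mat) 4 = f 2" by (rule rows_tau)+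
  thus ?thesis unfolding plane_gen[OF one_carrier_mat] span2_def by simp
qed
lemma plane_tau2: "plane_of (tau2 :: 'a::field mat) = span2 (f 1 + f 3) (f 2)"
proof -
  have "row (tau2 :: 'a mat) 5 = f 1 + f 3" "row (tau2 :: 'a mat) 4 = f 2" by (rule rows_tau)+
  thus ?thesis unfolding plane_gen[OF tau_carriers(2)] span2_def by simp
qed
lemma plane_tau_op: "plane_of (tau_op :: 'a::field mat) = span2 (e 2 + f 1) (e 1 + f 2)"
proof -
  have "row (tau_op :: 'a mat) 5 = e 2 + f 1" "row (tau_op :: 'a mat) 4 = e 1 + f 2" by (rule rows_tau)+
  thus ?thesis unfolding plane_gen[OF tau_carriers(3)] span2_def by simp
qed
lemma plane_tau1: "plane_of (tau1 :: 'a::field mat) = span2 (f 2) (f 3)"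
proof -
  have "plane_of (tau1 :: 'a mat) = {c \<cdot>\<^sub>v f 3 + d \<cdot>\<^sub>v f 2 | c d. True}"
  proof -
    have "row (tau1 :: 'a mat) 5 = f 3" "row (tau1 :: 'a mat) 4 = f 2" by (rule rows_tau)+
    thus ?thesis unfolding plane_gen[OF tau_carriers(1)] by simp
  qed
  also have "\<dots> = {c \<cdot>\<^sub>v f 2 + d \<cdot>\<^sub>v f 3 | c d. True}"
  proof -
    have "\<And>c d. c \<cdot>\<^sub>v f 3 + d \<cdot>\<^sub>v (f 2 :: 'a vec) = d \<cdot>\<^sub>v f 2 + c \<cdot>\<^sub>v f 3"
      by (rule comm_add_vec[of _ 6]) (auto simp: f_def)
    note C = this
    show ?thesis
    proof (rule Set.set_eqI, rule iffI)
      fix x assume "x \<in> {c \<cdot>\<^sub>v f 3 + d \<cdot>\<^sub>v (f 2 :: 'a vec) | c d. True}"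
      then obtain c d where "x = c \<cdot>\<^sub>v f 3 + d \<cdot>\<^sub>v (f 2 :: 'a vec)" by blast
      hence "x = d \<cdot>\<^sub>v f 2 + c \<cdot>\<^sub>v f 3" using C by simp
      thus "x \<in> {c \<cdot>\<^sub>v f 2 + d \<cdot>\<^sub>v (f 3 :: 'a vec) | c d. True}" by blast
    next
      fix x assume "x \<in> {c \<cdot>\<^sub>v f 2 + d \<cdot>\<^sub>v (f 3 :: 'a vec) | c d. True}"
      then obtain c d where "x = c \<cdot>\<^sub>v f 2 + d \<cdot>\<^sub>v (f 3 :: 'a vec)" by blast
      hence "x = d \<cdot>\<^sub>v f 3 + c \<cdot>\<^sub>v f 2" using C by simp
      thus "x \<in> {c \<cdot>\<^sub>v f 3 + d \<cdot>\<^sub>v (f 2 :: 'a vec) | c d. True}" by blast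
    qed
  qed
  finally show ?thesis by (simp add: span2_def)
qed


lemma tau2i_GSp: "(tau2i :: 'a::field mat) \<in> GSp 3"
  by (rule GSp3_by_col1, simp, drule less6, drule less6, elim disjE; simp add: tau2i_def mat_of_rows_list_def om6_def cl_def J6_def)
lemma tau_opi_GSp: "(tau_opi :: 'a::field mat) \<in> GSp 3"
  by (rule GSp3_by_col1, simp, drule less6, drule less6, elim disjE; simp add: tau_opi_def mat_of_rows_list_def om6_def cl_def J6_def)

lemma colz8: "colz p \<longleftrightarrow> p$$(2,0) = 0 \<and> p$$(3,0) = 0 \<and> p$$(4,0) = 0 \<and> p$$(5,0) = 0 \<and>
   p$$(2,1) = 0 \<and> p$$(3,1) = 0 \<and> p$$(4,1) = 0 \<and> p$$(5,1) = 0"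
proof
  assume "colz p" thus "p$$(2,0) = 0 \<and> p$$(3,0) = 0 \<and> p$$(4,0) = 0 \<and> p$$(5,0) = 0 \<and>
   p$$(2,1) = 0 \<and> p$$(3,1) = 0 \<and> p$$(4,1) = 0 \<and> p$$(5,1) = 0" by (simp add: colz_def)
next
  assume H: "p$$(2,0) = 0 \<and> p$$(3,0) = 0 \<and> p$$(4,0) = 0 \<and> p$$(5,0) = 0 \<and>
   p$$(2,1) = 0 \<and> p$$(3,1) = 0 \<and> p$$(4,1) = 0 \<and> p$$(5,1) = 0"
  show "colz p" unfolding colz_def
  proof (intro allI impI)
    fix i j :: nat assume ij: "2 \<le> i \<and> i < 6 \<and> j < 2"
    hence "i = 2 \<or> i = 3 \<or> i = 4 \<or> i = 5" "j = 0 \<or> j = 1" by auto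
    thus "p$$(i,j) = 0" using H by (elim disjE) auto
  qed
qed

lemma condI: fixes X :: "'a::field mat" assumes X: "X \<in> carrier_mat 6 6" and b: "blk X"
  shows "colz (1\<^sub>m 6 * X * 1\<^sub>m 6) \<longleftrightarrow> X$$(5,0) = 0 \<and> X$$(2,1) = 0 \<and> X$$(3,1) = 0 \<and> X$$(4,1) = 0"
  using X by (auto simp: colz8 blkz[OF b] mult6)

lemma cond1: fixes X :: "'a::field mat" assumes X: "X \<in> carrier_mat 6 6" and b: "blk X"
  shows "colz (tau1 * X * tau1) \<longleftrightarrow> X$$(3,1) = 0 \<and> X$$(4,1) = 0 \<and> X$$(3,2) = 0 \<and> X$$(4,2) = 0"
  using X by (auto simp: colz8 blkz[OF b] mult6 tau1_def mat_of_rows_list_def)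

lemma cond2: fixes X :: "'a::field mat" assumes X: "X \<in> carrier_mat 6 6" and b: "blk X"
  shows "colz (tau2 * X * tau2i) \<longleftrightarrow> X$$(2,2) = X$$(0,0) \<and> X$$(3,2) = 0 \<and> X$$(4,2) = 0 \<and> X$$(5,0) = 0 \<and>
     X$$(2,1) = 0 \<and> X$$(3,1) = 0 \<and> X$$(4,1) = 0"
  using X by (auto simp: colz8 blkz[OF b] mult6 tau2_def tau2i_def mat_of_rows_list_def)

lemma condop: fixes X :: "'a::field mat" assumes X: "X \<in> carrier_mat 6 6" and b: "blk X"
  shows "colz (tau_op * X * tau_opi) \<longleftrightarrow> X$$(2,4) = 0 \<and> X$$(3,4) = 0 \<and> X$$(4,4) = X$$(0,0) \<and> X$$(1,4) = X$$(5,0) \<and>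
     X$$(2,1) = 0 \<and> X$$(3,1) = 0 \<and> X$$(4,1) = X$$(0,5) \<and> X$$(1,1) = X$$(5,5)"
  using X by (auto simp: colz8 blkz[OF b] mult6 tau_op_def tau_opi_def mat_of_rows_list_def)


lemma sum2: "(\<Sum>k<(2::nat). g k) = g 0 + (g 1 :: 'a::comm_monoid_add)"
  apply (simp add: numeral_2_eq_2 del: s01)
  apply simp
  done

lemma mult2: "A \<in> carrier_mat 2 2 \<Longrightarrow> B \<in> carrier_mat 2 2 \<Longrightarrow> i < 2 \<Longrightarrow> j < 2 \<Longrightarrow>
   (A * B) $$ (i,j) = A$$(i,0)*B$$(0,j) + A$$(i,1)*B$$(1,j)"
  by (subst mult_entry[of A 2 2 B 2], simp_all add: sum2)

lemma mult2c[simp]: "A \<in> carrier_mat 2 2 \<Longrightarrow> B \<in> carrier_mat 2 2 \<Longrightarrow> A * B \<in> carrier_mat 2 2"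
  by (rule mult_carrier_mat)

lemma J1_carrier[simp]: "(Jmat 1 :: 'a::comm_ring_1 mat) \<in> carrier_mat 2 2"
  using Jmat_carrier[of 1] by simp

lemma J1_entry: "i < 2 \<Longrightarrow> j < 2 \<Longrightarrow> (Jmat 1 :: 'a::comm_ring_1 mat) $$ (i,j) =
   (if i = 0 \<and> j = 1 then 1 else if i = 1 \<and> j = 0 then -1 else 0)"
  by (auto simp: Jmat_def dest!: less2)

lemma GSp1_iff: "(g::'a::field mat) \<in> GSp 1 \<longleftrightarrow> g \<in> GL2"
proof
  assume "g \<in> GSp 1"
  then obtain m where g: "g \<in> carrier_mat 2 2" and m: "m \<noteq> 0" and r: "transpose_mat g * Jmat 1 * g = m \<cdot>\<^sub>m Jmat 1"
    by (auto simp: GSp_def)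
  have "(transpose_mat g * Jmat 1 * g) $$ (0,1) = (m \<cdot>\<^sub>m Jmat 1) $$ (0,1)" using r by simp
  hence "det g = m" using g carrier_matD[OF g]
    by (simp add: mult2 J1_entry det2 algebra_simps del: assoc_mult_mat)
  thus "g \<in> GL2" using g m by (simp add: GL2_def)
next
  assume G: "g \<in> GL2"
  hence g: "g \<in> carrier_mat 2 2" and d: "det g \<noteq> 0" by (auto simp: GL2_def)
  have "transpose_mat g * Jmat 1 * g = det g \<cdot>\<^sub>m Jmat 1"
  proof (rule eq_matI)
    fix i j assume "i < dim_row (det g \<cdot>\<^sub>m (Jmat 1 :: 'a mat))" "j < dim_col (det g \<cdot>\<^sub>m (Jmat 1 :: 'a mat))"
    hence ij: "i < 2" "j < 2" by auto
    show "(transpose_mat g * Jmat 1 * g) $$ (i, j) = (det g \<cdot>\<^sub>m Jmat 1) $$ (i, j)"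
      using less2[OF ij(1)] less2[OF ij(2)] g carrier_matD[OF g]
      by (elim disjE; simp add: mult2 J1_entry det2 algebra_simps del: assoc_mult_mat)
  qed (use g in auto)
  thus "g \<in> GSp 1" using g d unfolding GSp_def by auto
qed

lemma par11_iff: "(g::'a::field mat) \<in> GL2 \<Longrightarrow> g \<in> parabolic 1 1 \<longleftrightarrow> g$$(1,0) = 0"
  using parabolic_char[of 1 1] GSp1_iff[of g] by (auto dest!: less2)

lemma par21_iff: "(g::'a::field mat) \<in> GSp 2 \<Longrightarrow> g \<in> parabolic 2 1 \<longleftrightarrow> g$$(1,0) = 0 \<and> g$$(2,0) = 0 \<and> g$$(3,0) = 0"
proof -
  assume g: "g \<in> GSp 2"
  have "g \<in> parabolic 2 1 \<longleftrightarrow> (\<forall>i j. 1 \<le> i \<and> i < 4 \<and> j < 1 \<longrightarrow> g$$(i,j) = 0)"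
    using parabolic_char[of 1 2] g by auto
  also have "\<dots> \<longleftrightarrow> g$$(1,0) = 0 \<and> g$$(2,0) = 0 \<and> g$$(3,0) = 0"
  proof
    assume "\<forall>i j. 1 \<le> i \<and> i < 4 \<and> j < 1 \<longrightarrow> g$$(i,j) = 0" thus "g$$(1,0) = 0 \<and> g$$(2,0) = 0 \<and> g$$(3,0) = 0" by auto
  next
    assume H: "g$$(1,0) = 0 \<and> g$$(2,0) = 0 \<and> g$$(3,0) = 0"
    show "\<forall>i j. 1 \<le> i \<and> i < 4 \<and> j < 1 \<longrightarrow> g$$(i,j) = 0"
    proof (intro allI impI)
      fix i j :: nat assume "1 \<le> i \<and> i < 4 \<and> j < 1"
      hence "i = 1 \<or> i = 2 \<or> i = 3" "j = 0" by auto
      thus "g$$(i,j) = 0" using H by auto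
    qed
  qed
  finally show ?thesis .
qed

lemma par22_iff: "(g::'a::field mat) \<in> GSp 2 \<Longrightarrow> g \<in> parabolic 2 2 \<longleftrightarrow> g$$(2,0) = 0 \<and> g$$(3,0) = 0 \<and> g$$(2,1) = 0 \<and> g$$(3,1) = 0"
proof -
  assume g: "g \<in> GSp 2"
  have "g \<in> parabolic 2 2 \<longleftrightarrow> (\<forall>i j. 2 \<le> i \<and> i < 4 \<and> j < 2 \<longrightarrow> g$$(i,j) = 0)"
    using parabolic_char[of 2 2] g by auto
  also have "\<dots> \<longleftrightarrow> g$$(2,0) = 0 \<and> g$$(3,0) = 0 \<and> g$$(2,1) = 0 \<and> g$$(3,1) = 0"
  proof
    assume "\<forall>i j. 2 \<le> i \<and> i < 4 \<and> j < 2 \<longrightarrow> g$$(i,j) = 0" thus "g$$(2,0) = 0 \<and> g$$(3,0) = 0 \<and> g$$(2,1) = 0 \<and> g$$(3,1) = 0" by auto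
  next
    assume H: "g$$(2,0) = 0 \<and> g$$(3,0) = 0 \<and> g$$(2,1) = 0 \<and> g$$(3,1) = 0"
    show "\<forall>i j. 2 \<le> i \<and> i < 4 \<and> j < 2 \<longrightarrow> g$$(i,j) = 0"
    proof (intro allI impI)
      fix i j :: nat assume "2 \<le> i \<and> i < 4 \<and> j < 2"
      hence "i = 2 \<or> i = 3" "j = 0 \<or> j = 1" by auto
      thus "g$$(i,j) = 0" using H by auto
    qed
  qed
  finally show ?thesis .
qed

lemma Hgrp_dec: assumes X: "X \<in> Hgrp"
  shows "X = iota (ob X) (mb X)" "(ob X, mb X) \<in> fiber_prod GL2 (GSp 2)"
proof -
  obtain h1 h2 where h: "X = iota h1 h2" and hp: "(h1, h2) \<in> fiber_prod GL2 (GSp 2)"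
    using X by (auto simp: Hgrp_def)
  have c1: "h1 \<in> carrier_mat 2 2" and c2: "h2 \<in> carrier_mat 4 4" using hp by (auto simp: fiber_prod_def GL2_def GSp2_iff)
  have "ob X = h1" "mb X = h2" using ob_iota[OF c1] mb_iota[OF c2] h by auto
  thus "X = iota (ob X) (mb X)" "(ob X, mb X) \<in> fiber_prod GL2 (GSp 2)" using h hp by auto
qed

lemma fiber_Hgrp: "(h1, h2) \<in> fiber_prod GL2 (GSp 2) \<Longrightarrow> iota h1 h2 \<in> Hgrp"
  unfolding Hgrp_def by force

lemma image_char:
  assumes S: "S \<subseteq> fiber_prod GL2 (GSp 2)" and Q: "\<And>X. X \<in> Hgrp \<Longrightarrow> Q X \<longleftrightarrow> (ob X, mb X) \<in> S"
  shows "{X \<in> Hgrp. Q X} = (\<lambda>(h1, h2). iota h1 h2) ` S"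
proof (rule Set.set_eqI, rule iffI)
  fix X assume "X \<in> {X \<in> Hgrp. Q X}"
  hence X: "X \<in> Hgrp" and q: "Q X" by auto
  have "(ob X, mb X) \<in> S" using Q[OF X] q by simp
  thus "X \<in> (\<lambda>(h1, h2). iota h1 h2) ` S" using Hgrp_dec(1)[OF X] by (auto intro!: image_eqI[of _ _ "(ob X, mb X)"])
next
  fix X assume "X \<in> (\<lambda>(h1, h2). iota h1 h2) ` S"
  then obtain h1 h2 where X: "X = iota h1 h2" and hs: "(h1, h2) \<in> S" by auto
  have hp: "(h1, h2) \<in> fiber_prod GL2 (GSp 2)" using hs S by auto
  have c1: "h1 \<in> carrier_mat 2 2" and c2: "h2 \<in> carrier_mat 4 4" using hp by (auto simp: fiber_prod_def GL2_def GSp2_iff)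
  have XH: "X \<in> Hgrp" using fiber_Hgrp[OF hp] X by simp
  have "(ob X, mb X) \<in> S" using ob_iota[OF c1] mb_iota[OF c2] X hs by simp
  thus "X \<in> {X \<in> Hgrp. Q X}" using Q[OF XH] XH by simp
qed

lemma stab_colz:
  assumes g: "g \<in> GSp 3" and Xi: "Xi \<in> GSp 3" and gX: "g * Xi = 1\<^sub>m 6" and Xg: "Xi * g = 1\<^sub>m 6"
  shows "stab g = {h \<in> Hgrp. colz (g * h * Xi)}"
proof -
  have gc: "g \<in> carrier_mat 6 6" and Xc: "Xi \<in> carrier_mat 6 6" using g Xi by (auto simp: GSp3_iff)
  have "\<And>h. h \<in> Hgrp \<Longrightarrow> g * h * Xi \<in> GSp 3"
    using GSp3_mult g Xi by (auto simp: Hgrp_char)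
  thus ?thesis unfolding stab_char[OF gc Xc gX Xg] P22_char colz_def[symmetric] by blast
qed

lemma Hgrp_blk: "X \<in> Hgrp \<Longrightarrow> blk X" by (simp add: Hgrp_char)

lemma ob_entry: "ob h $$ (1,0) = h $$ (5,0)" "ob h $$ (0,0) = h $$ (0,0)" "ob h $$ (0,1) = h $$ (0,5)" "ob h $$ (1,1) = h $$ (5,5)"
  by (simp_all add: ob_def)
lemma mb_entry: "i < 4 \<Longrightarrow> j < 4 \<Longrightarrow> mb h $$ (i,j) = h $$ (i+1, j+1)"
  by (simp add: mb_def)

theorem stab_I: "stab (1\<^sub>m 6 :: 'a::field mat) = (\<lambda>(h1, h2). iota h1 h2) ` fiber_prod (parabolic 1 1) (parabolic 2 1)"
proof -
  have "stab (1\<^sub>m 6 :: 'a mat) = {X \<in> Hgrp. colz (1\<^sub>m 6 * X * 1\<^sub>m 6)}"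
    using stab_colz[OF one_GSp3 one_GSp3] by simp
  also have "\<dots> = {X \<in> Hgrp. X$$(5,0) = 0 \<and> X$$(2,1) = 0 \<and> X$$(3,1) = 0 \<and> X$$(4,1) = 0}"
    using condI Hgrp_blk Hgrp_carrier by blast
  also have "\<dots> = (\<lambda>(h1, h2). iota h1 h2) ` fiber_prod (parabolic 1 1) (parabolic 2 1)"
  proof (rule image_char)
    show "fiber_prod (parabolic 1 1) (parabolic 2 1) \<subseteq> fiber_prod GL2 (GSp (2::nat) :: 'a mat set)"
      unfolding fiber_prod_def using parabolic_char[of 1 1] parabolic_char[of 1 2] by (auto simp: GSp1_iff)
  next
    fix X :: "'a mat" assume X: "X \<in> Hgrp"
    note D = Hgrp_dec(2)[OF X]
    have g1: "ob X \<in> GL2" and g2: "mb X \<in> GSp 2" using D by (auto simp: fiber_prod_def)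
    show "(X$$(5,0) = 0 \<and> X$$(2,1) = 0 \<and> X$$(3,1) = 0 \<and> X$$(4,1) = 0) \<longleftrightarrow>
      (ob X, mb X) \<in> fiber_prod (parabolic 1 1) (parabolic 2 1)"
      using D par11_iff[OF g1] par21_iff[OF g2] by (auto simp: fiber_prod_def ob_entry mb_entry)
  qed
  finally show ?thesis .
qed

theorem stab_tau1: "stab (tau1 :: 'a::field mat) = (\<lambda>(h1, h2). iota h1 h2) ` fiber_prod GL2 (parabolic 2 2)"
proof -
  have "stab (tau1 :: 'a mat) = {X \<in> Hgrp. colz (tau1 * X * tau1)}"
    using stab_colz[OF tau1_GSp tau1_GSp tau1_inv tau1_inv] by simp
  also have "\<dots> = {X \<in> Hgrp. X$$(3,1) = 0 \<and> X$$(4,1) = 0 \<and> X$$(3,2) = 0 \<and> X$$(4,2) = 0}"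
    using cond1 Hgrp_blk Hgrp_carrier by blast
  also have "\<dots> = (\<lambda>(h1, h2). iota h1 h2) ` fiber_prod GL2 (parabolic 2 2)"
  proof (rule image_char)
    show "fiber_prod GL2 (parabolic 2 2) \<subseteq> fiber_prod GL2 (GSp (2::nat) :: 'a mat set)"
      unfolding fiber_prod_def using parabolic_char[of 2 2] by auto
  next
    fix X :: "'a mat" assume X: "X \<in> Hgrp"
    note D = Hgrp_dec(2)[OF X]
    have g2: "mb X \<in> GSp 2" using D by (auto simp: fiber_prod_def)
    show "(X$$(3,1) = 0 \<and> X$$(4,1) = 0 \<and> X$$(3,2) = 0 \<and> X$$(4,2) = 0) \<longleftrightarrow>
      (ob X, mb X) \<in> fiber_prod GL2 (parabolic 2 2)"
      using D par22_iff[OF g2] by (auto simp: fiber_prod_def mb_entry)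
  qed
  finally show ?thesis .
qed


lemma GSp2_C: assumes "g \<in> GSp 2" "i < 4" "j < 4"
  shows "om4 (cl g i) (cl g j) = sim 2 g * J4 i j"
  using GSp2_rel[OF assms(1)] colrel4_iff[of g "sim 2 g"] assms(2,3) by auto

lemma GSp2_by_col: assumes g: "g \<in> carrier_mat 4 4" and m: "m \<noteq> 0"
  and C: "\<And>i j. i < 4 \<Longrightarrow> j < 4 \<Longrightarrow> om4 (cl g i) (cl g j) = m * J4 i j"
  shows "g \<in> GSp 2" "sim 2 g = m"
proof -
  have r: "transpose_mat g * Jmat 2 * g = m \<cdot>\<^sub>m Jmat 2"
    by (rule colrel4_iff[OF g, THEN iffD2]) (simp add: C)
  thus "g \<in> GSp 2" using g m unfolding GSp2_iff by (intro conjI exI[of _ m]) auto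
  show "sim 2 g = m" using sim2_eq[OF r] .
qed

lemma diag4_carrier[simp]: "diag4 a b c d \<in> carrier_mat 4 4" by (simp add: diag4_def mat_of_rows_list_def)
lemma mat2_carrier[simp]: "mat2 a b c d \<in> carrier_mat 2 2" by (simp add: mat2_def mat_of_rows_list_def)

lemma mat2_entries: "mat2 a b c d $$ (0,0) = a" "mat2 a b c d $$ (0,1) = b" "mat2 a b c d $$ (1,0) = c" "mat2 a b c d $$ (1,1) = d"
  by (simp_all add: mat2_def mat_of_rows_list_def)

lemma mat2_one: "mat2 a b c d * 1\<^sub>m 2 = mat2 a b c d"
  by (rule right_mult_one_mat[OF mat2_carrier])

lemma diag4_mult: assumes u: "u \<in> carrier_mat 4 4" and ij: "i < 4" "j < 4"
  shows "(diag4 a b c d * u) $$ (i,j) = (if i = 0 then a else if i = 1 then b else if i = 2 then c else d) * u $$ (i,j)"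
  using less4[OF ij(1)] u ij by (elim disjE; simp add: mult4 diag4_def mat_of_rows_list_def)

lemma T2_fwd:
  fixes h1 h2 :: "'a::field mat"
  assumes h1: "h1 \<in> GL2" and h2: "h2 \<in> GSp 2" and dt: "det h1 = sim 2 h2"
    and q: "h2$$(1,1) = h1$$(0,0)" "h2$$(2,1) = 0" "h2$$(3,1) = 0" "h1$$(1,0) = 0"
           "h2$$(1,0) = 0" "h2$$(2,0) = 0" "h2$$(3,0) = 0"
  shows "(h1, h2) \<in> stab3_set"
proof -
  have c1: "h1 \<in> carrier_mat 2 2" using h1 by (simp add: GL2_def)
  have c2: "h2 \<in> carrier_mat 4 4" using h2 by (simp add: GSp2_iff)
  define m where "m = sim 2 h2"
  have m: "m \<noteq> 0" using GSp2_rel[OF h2] by (simp add: m_def)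
  have C: "\<And>i j. i < 4 \<Longrightarrow> j < 4 \<Longrightarrow> om4 (cl h2 i) (cl h2 j) = m * J4 i j" using GSp2_C[OF h2] by (simp add: m_def)
  define a where "a = h1$$(0,0)"
  define b where "b = h1$$(0,1)"
  define d where "d = h1$$(1,1)"
  define \<alpha> where "\<alpha> = h2$$(0,0)"
  define \<delta> where "\<delta> = h2$$(3,3)"
  have dm: "a * d = m" using dt det2[OF c1] q(4) by (simp add: a_def d_def m_def)
  have e03: "\<alpha> * \<delta> = m" using C[of 0 3] q by (simp add: om4_def cl_def J4_def \<alpha>_def \<delta>_def)
  have nz: "a \<noteq> 0" "d \<noteq> 0" "\<alpha> \<noteq> 0" "\<delta> \<noteq> 0" using dm e03 m by auto
  have z32: "h2$$(3,2) = 0" using C[of 0 2] q nz by (simp add: om4_def cl_def J4_def \<alpha>_def)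
  have "a * h2$$(2,2) = m" using C[of 1 2] q z32 by (simp add: om4_def cl_def J4_def a_def)
  hence d22: "h2$$(2,2) = d" using dm nz by (metis mult_left_cancel)
  define dg where "dg = (\<lambda>i::nat. if i = 0 then \<alpha> else if i = 1 then a else if i = 2 then d else \<delta>)"
  have dgnz: "\<And>i. dg i \<noteq> 0" using nz by (simp add: dg_def)
  define u where "u = mat 4 4 (\<lambda>(i,j). h2$$(i,j) / dg i)"
  have uc: "u \<in> carrier_mat 4 4" by (simp add: u_def)
  have hu: "h2 = diag4 \<alpha> a d \<delta> * u"
  proof (rule eq_matI)
    fix i j assume ij: "i < dim_row (diag4 \<alpha> a d \<delta> * u)" "j < dim_col (diag4 \<alpha> a d \<delta> * u)"
    hence ij: "i < 4" "j < 4" using uc by (auto simp: diag4_def mat_of_rows_list_def)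
    show "h2 $$ (i,j) = (diag4 \<alpha> a d \<delta> * u) $$ (i,j)"
      using diag4_mult[OF uc ij, of \<alpha> a d \<delta>] dgnz[of i] ij by (simp add: u_def dg_def)
  qed (use c2 uc in \<open>auto simp: diag4_def mat_of_rows_list_def\<close>)
  have uC: "\<And>i j. i < 4 \<Longrightarrow> j < 4 \<Longrightarrow> om4 (cl u i) (cl u j) = 1 * J4 i j"
  proof -
    fix i j :: nat assume ij: "i < 4" "j < 4"
    have "om4 (cl u i) (cl u j) = om4 (cl h2 i) (cl h2 j) / m"
      using ij nz dm e03 m by (simp add: om4_def cl_def u_def dg_def field_simps)
    thus "om4 (cl u i) (cl u j) = 1 * J4 i j" using C[OF ij] m by simp
  qed
  have uG: "u \<in> GSp 2" using GSp2_by_col[OF uc _ uC] by simp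
  have uU: "u \<in> U_GSp4" unfolding U_GSp4_def
  proof (intro CollectI conjI uG allI impI)
    fix i j :: nat assume ij: "i < 4" "j < 4"
    show "j < i \<Longrightarrow> u $$ (i,j) = 0" using less4[OF ij(1)] less4[OF ij(2)] q z32
      by (elim disjE; simp add: u_def)
    show "i = j \<Longrightarrow> u $$ (i,j) = 1" using less4[OF ij(1)] ij q d22 nz
      by (elim disjE; simp add: u_def dg_def \<alpha>_def \<delta>_def a_def)
  qed
  have h1e: "h1 = mat2 a b 0 d * 1\<^sub>m 2"
  proof (rule eq_matI)
    fix i j assume "i < dim_row (mat2 a b 0 d * 1\<^sub>m 2)" "j < dim_col (mat2 a b 0 d * 1\<^sub>m 2)"
    hence ij: "i < 2" "j < 2" by (simp_all add: mat2_def mat_of_rows_list_def)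
    show "h1 $$ (i,j) = (mat2 a b 0 d * 1\<^sub>m 2) $$ (i,j)"
      using less2[OF ij(1)] less2[OF ij(2)] q(4) by (elim disjE; simp add: mat2_one mat2_entries a_def b_def d_def)
  qed (use c1 in \<open>auto simp: mat2_def mat_of_rows_list_def\<close>)
  have ade: "a * d = \<alpha> * \<delta>" using dm e03 by simp
  show ?thesis unfolding stab3_set_def
    by (rule CollectI, rule exI[of _ a], rule exI[of _ b], rule exI[of _ d], rule exI[of _ \<alpha>], rule exI[of _ \<delta>],
        rule exI[of _ u]) (use h1e hu nz ade uU in simp)
qed

lemma T2_bwd:
  fixes h1 h2 :: "'a::field mat"
  assumes S: "(h1, h2) \<in> stab3_set"
  shows "(h1, h2) \<in> fiber_prod GL2 (GSp 2)"
    "h2$$(1,1) = h1$$(0,0)" "h2$$(2,1) = 0" "h2$$(3,1) = 0" "h1$$(1,0) = 0"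
    "h2$$(1,0) = 0" "h2$$(2,0) = 0" "h2$$(3,0) = 0"
proof -
  obtain a b d \<alpha> \<delta> u where h1e: "h1 = mat2 a b 0 d * 1\<^sub>m 2" and h2e: "h2 = diag4 \<alpha> a d \<delta> * u"
    and nz: "a \<noteq> 0" "d \<noteq> 0" "\<alpha> \<noteq> 0" "\<delta> \<noteq> 0" and ad: "a * d = \<alpha> * \<delta>" and uU: "u \<in> U_GSp4"
    using S unfolding stab3_set_def by blast
  have uG: "u \<in> GSp 2" and uz: "\<And>i j. i < 4 \<Longrightarrow> j < 4 \<Longrightarrow> (j < i \<longrightarrow> u $$ (i,j) = 0) \<and> (i = j \<longrightarrow> u $$ (i,j) = 1)"
    using uU by (auto simp: U_GSp4_def)
  have uc: "u \<in> carrier_mat 4 4" using uG by (simp add: GSp2_iff)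
  have h1e': "h1 = mat2 a b 0 d" using h1e mat2_one by simp
  have u1: "sim 2 u = 1"
  proof -
    have "om4 (cl u 0) (cl u 3) = sim 2 u * J4 0 3" using GSp2_C[OF uG] by simp
    thus ?thesis using uz[of 0 0] uz[of 1 0] uz[of 2 0] uz[of 3 0] uz[of 3 3] by (simp add: om4_def cl_def J4_def)
  qed
  have uC: "\<And>i j. i < 4 \<Longrightarrow> j < 4 \<Longrightarrow> om4 (cl u i) (cl u j) = J4 i j" using GSp2_C[OF uG] u1 by simp
  have h2e': "\<And>i j. i < 4 \<Longrightarrow> j < 4 \<Longrightarrow> h2 $$ (i,j) = (if i = 0 then \<alpha> else if i = 1 then a else if i = 2 then d else \<delta>) * u $$ (i,j)"
    using diag4_mult[OF uc] h2e by simp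
  have c2: "h2 \<in> carrier_mat 4 4" using h2e uc by simp
  have h2C: "\<And>i j. i < 4 \<Longrightarrow> j < 4 \<Longrightarrow> om4 (cl h2 i) (cl h2 j) = (\<alpha> * \<delta>) * J4 i j"
  proof -
    fix i j :: nat assume ij: "i < 4" "j < 4"
    have "om4 (cl h2 i) (cl h2 j) = (\<alpha>*\<delta>) * (u$$(0,i)*u$$(3,j) - u$$(3,i)*u$$(0,j)) + (a*d) * (u$$(1,i)*u$$(2,j) - u$$(2,i)*u$$(1,j))"
      using ij by (simp add: om4_def cl_def h2e' algebra_simps)
    also have "\<dots> = (\<alpha> * \<delta>) * om4 (cl u i) (cl u j)" by (simp add: ad om4_def cl_def algebra_simps)
    finally have "om4 (cl h2 i) (cl h2 j) = (\<alpha> * \<delta>) * om4 (cl u i) (cl u j)" .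
    thus "om4 (cl h2 i) (cl h2 j) = (\<alpha> * \<delta>) * J4 i j" using uC[OF ij] by simp
  qed
  note G2 = GSp2_by_col[OF c2 _ h2C]
  have "det h1 = a * d" using det2[of h1] h1e' by (simp add: mat2_entries)
  hence "h1 \<in> GL2" "det h1 = sim 2 h2" using h1e' nz G2 ad by (auto simp: GL2_def)
  thus "(h1, h2) \<in> fiber_prod GL2 (GSp 2)" using G2 nz by (simp add: fiber_prod_def)
  show "h2$$(1,1) = h1$$(0,0)" "h2$$(2,1) = 0" "h2$$(3,1) = 0" "h1$$(1,0) = 0"
    "h2$$(1,0) = 0" "h2$$(2,0) = 0" "h2$$(3,0) = 0"
    using h2e' uz[of 1 1] uz[of 2 1] uz[of 3 1] uz[of 1 0] uz[of 2 0] uz[of 3 0] h1e' by (simp_all add: mat2_entries)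
qed

theorem stab_tau2: "stab (tau2 :: 'a::field mat) = (\<lambda>(h1, h2). iota h1 h2) ` stab3_set"
proof -
  have "stab (tau2 :: 'a mat) = {X \<in> Hgrp. colz (tau2 * X * tau2i)}"
    using stab_colz[OF tau2_GSp tau2i_GSp tau2_inv] by simp
  also have "\<dots> = {X \<in> Hgrp. X$$(2,2) = X$$(0,0) \<and> X$$(3,2) = 0 \<and> X$$(4,2) = 0 \<and> X$$(5,0) = 0 \<and>
     X$$(2,1) = 0 \<and> X$$(3,1) = 0 \<and> X$$(4,1) = 0}"
    using cond2 Hgrp_blk Hgrp_carrier by blast
  also have "\<dots> = (\<lambda>(h1, h2). iota h1 h2) ` stab3_set"
  proof (rule image_char)
    show "stab3_set \<subseteq> fiber_prod GL2 (GSp (2::nat) :: 'a mat set)"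
      using T2_bwd(1) by auto
  next
    fix X :: "'a mat" assume X: "X \<in> Hgrp"
    note D = Hgrp_dec(2)[OF X]
    have g1: "ob X \<in> GL2" and g2: "mb X \<in> GSp 2" and dt: "det (ob X) = sim 2 (mb X)" using D by (auto simp: fiber_prod_def)
    show "(X$$(2,2) = X$$(0,0) \<and> X$$(3,2) = 0 \<and> X$$(4,2) = 0 \<and> X$$(5,0) = 0 \<and>
     X$$(2,1) = 0 \<and> X$$(3,1) = 0 \<and> X$$(4,1) = 0) \<longleftrightarrow> (ob X, mb X) \<in> stab3_set"
    proof
      assume H: "X$$(2,2) = X$$(0,0) \<and> X$$(3,2) = 0 \<and> X$$(4,2) = 0 \<and> X$$(5,0) = 0 \<and>
        X$$(2,1) = 0 \<and> X$$(3,1) = 0 \<and> X$$(4,1) = 0"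
      show "(ob X, mb X) \<in> stab3_set"
        by (rule T2_fwd[OF g1 g2 dt]) (use H in \<open>simp_all add: ob_entry mb_entry\<close>)
    next
      assume "(ob X, mb X) \<in> stab3_set"
      note B = T2_bwd[OF this]
      show "X$$(2,2) = X$$(0,0) \<and> X$$(3,2) = 0 \<and> X$$(4,2) = 0 \<and> X$$(5,0) = 0 \<and>
        X$$(2,1) = 0 \<and> X$$(3,1) = 0 \<and> X$$(4,1) = 0"
        using B(2-8) by (simp add: ob_entry mb_entry)
    qed
  qed
  finally show ?thesis .
qed


lemma jmap_carrier[simp]: "jmap h1 h2 \<in> carrier_mat 4 4" by (simp add: jmap_def)

lemma jmap_entries: "jmap h1 k $$ (0,0) = h1$$(1,1)" "jmap h1 k $$ (0,3) = h1$$(1,0)"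
  "jmap h1 k $$ (3,0) = h1$$(0,1)" "jmap h1 k $$ (3,3) = h1$$(0,0)"
  "jmap h1 k $$ (1,1) = k$$(0,0)" "jmap h1 k $$ (1,2) = k$$(0,1)"
  "jmap h1 k $$ (2,1) = k$$(1,0)" "jmap h1 k $$ (2,2) = k$$(1,1)"
  "jmap h1 k $$ (0,1) = 0" "jmap h1 k $$ (0,2) = 0" "jmap h1 k $$ (3,1) = 0" "jmap h1 k $$ (3,2) = 0"
  "jmap h1 k $$ (1,0) = 0" "jmap h1 k $$ (2,0) = 0" "jmap h1 k $$ (1,3) = 0" "jmap h1 k $$ (2,3) = 0"
  by (simp_all add: jmap_def)

definition Qop :: "'a::field mat \<Rightarrow> 'a mat \<Rightarrow> bool" where
  "Qop h1 h2 \<longleftrightarrow> h2$$(1,3) = 0 \<and> h2$$(2,3) = 0 \<and> h2$$(3,3) = h1$$(0,0) \<and> h2$$(0,3) = h1$$(1,0) \<and>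
     h2$$(1,0) = 0 \<and> h2$$(2,0) = 0 \<and> h2$$(3,0) = h1$$(0,1) \<and> h2$$(0,0) = h1$$(1,1)"

lemma Top_fwd:
  fixes h1 h2 :: "'a::field mat"
  assumes h1: "h1 \<in> GL2" and h2: "h2 \<in> GSp 2" and dt: "det h1 = sim 2 h2" and Q: "Qop h1 h2"
  shows "\<exists>k. (h1, k) \<in> Jgrp \<and> h2 = jmap h1 k"
proof -
  have c1: "h1 \<in> carrier_mat 2 2" using h1 by (simp add: GL2_def)
  have c2: "h2 \<in> carrier_mat 4 4" using h2 by (simp add: GSp2_iff)
  define m where "m = sim 2 h2"
  have m: "m \<noteq> 0" using GSp2_rel[OF h2] by (simp add: m_def)
  have C: "\<And>i j. i < 4 \<Longrightarrow> j < 4 \<Longrightarrow> om4 (cl h2 i) (cl h2 j) = m * J4 i j" using GSp2_C[OF h2] by (simp add: m_def)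
  have q: "h2$$(1,3) = 0" "h2$$(2,3) = 0" "h2$$(3,3) = h1$$(0,0)" "h2$$(0,3) = h1$$(1,0)"
     "h2$$(1,0) = 0" "h2$$(2,0) = 0" "h2$$(3,0) = h1$$(0,1)" "h2$$(0,0) = h1$$(1,1)" using Q by (auto simp: Qop_def)
  have dm: "h1$$(0,0)*h1$$(1,1) - h1$$(0,1)*h1$$(1,0) = m" using dt det2[OF c1] by (simp add: m_def)
  have D: "h1$$(1,1) * (- h1$$(0,0)) - (- h1$$(0,1)) * h1$$(1,0) \<noteq> 0" using dm m by (simp add: algebra_simps)
  have zz: "h2$$(3,j) = 0 \<and> h2$$(0,j) = 0" if j: "j = 1 \<or> j = 2" for j
  proof -
    have e1: "h1$$(1,1) * h2$$(3,j) + (- h1$$(0,1)) * h2$$(0,j) = 0"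
      using C[of 0 j] j q by (auto simp: om4_def cl_def J4_def)
    have e2: "h1$$(1,0) * h2$$(3,j) + (- h1$$(0,0)) * h2$$(0,j) = 0"
      using C[of 3 j] j q by (auto simp: om4_def cl_def J4_def)
    show ?thesis using lin2[OF e1 e2 D] .
  qed
  note z1 = zz[of 1] and z2 = zz[of 2]
  define k where "k = mat 2 2 (\<lambda>(i,j). h2$$(i+1, j+1))"
  have kc: "k \<in> carrier_mat 2 2" by (simp add: k_def)
  have "om4 (cl h2 1) (cl h2 2) = m" using C[of 1 2] by (simp add: J4_def)
  hence o: "h2$$(1,1)*h2$$(2,2) - h2$$(2,1)*h2$$(1,2) = m" using z1 z2 by (simp add: om4_def cl_def)
  have dk0: "det k = h2$$(1,1)*h2$$(2,2) - h2$$(1,2)*h2$$(2,1)" using det2[OF kc] by (simp add: k_def)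
  have dk: "det k = m" using dk0 o by (simp add: mult.commute)
  have "(h1, k) \<in> Jgrp" using h1 kc dk dm m det2[OF c1] by (simp add: Jgrp_def GL2_def)
  moreover have "h2 = jmap h1 k"
  proof (rule eq_matI)
    fix i j assume "i < dim_row (jmap h1 k)" "j < dim_col (jmap h1 k)"
    hence ij: "i < 4" "j < 4" by (simp_all add: jmap_def)
    show "h2 $$ (i,j) = jmap h1 k $$ (i,j)"
      using less4[OF ij(1)] less4[OF ij(2)] q z1 z2
      by (elim disjE; simp add: jmap_entries k_def)
  qed (use c2 in \<open>simp_all add: jmap_def\<close>)
  ultimately show ?thesis by blast
qed

lemma Top_bwd:
  fixes h1 k :: "'a::field mat"
  assumes J: "(h1, k) \<in> Jgrp"
  shows "(h1, jmap h1 k) \<in> fiber_prod GL2 (GSp 2)" "Qop h1 (jmap h1 k)"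
proof -
  have h1: "h1 \<in> GL2" and c1: "h1 \<in> carrier_mat 2 2" and ck: "k \<in> carrier_mat 2 2" and dk: "det h1 = det k"
    and nz: "det h1 \<noteq> 0" using J by (auto simp: Jgrp_def GL2_def)
  have C: "\<And>i j. i < 4 \<Longrightarrow> j < 4 \<Longrightarrow> om4 (cl (jmap h1 k) i) (cl (jmap h1 k) j) = det h1 * J4 i j"
  proof -
    fix i j :: nat assume ij: "i < 4" "j < 4"
    show "om4 (cl (jmap h1 k) i) (cl (jmap h1 k) j) = det h1 * J4 i j"
      using less4[OF ij(1)] less4[OF ij(2)]
      by (elim disjE; simp add: om4_def cl_def jmap_entries J4_def;
          ((simp add: algebra_simps det2[OF c1]; fail) | (simp add: algebra_simps dk det2[OF ck]; fail))?)
  qed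
  note G = GSp2_by_col[OF jmap_carrier nz C]
  show "(h1, jmap h1 k) \<in> fiber_prod GL2 (GSp 2)" using G h1 by (simp add: fiber_prod_def)
  show "Qop h1 (jmap h1 k)" by (simp add: Qop_def jmap_entries)
qed

theorem stab_tau_op: "stab (tau_op :: 'a::field mat) = (\<lambda>(h1, h2). iota h1 (jmap h1 h2)) ` Jgrp"
proof -
  define S :: "('a mat \<times> 'a mat) set" where "S = (\<lambda>(h1, h2). (h1, jmap h1 h2)) ` Jgrp"
  have "stab (tau_op :: 'a mat) = {X \<in> Hgrp. colz (tau_op * X * tau_opi)}"
    using stab_colz[OF tau_op_GSp tau_opi_GSp tau_op_inv] by simp
  also have "\<dots> = {X \<in> Hgrp. X$$(2,4) = 0 \<and> X$$(3,4) = 0 \<and> X$$(4,4) = X$$(0,0) \<and> X$$(1,4) = X$$(5,0) \<and>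
     X$$(2,1) = 0 \<and> X$$(3,1) = 0 \<and> X$$(4,1) = X$$(0,5) \<and> X$$(1,1) = X$$(5,5)}"
    using condop Hgrp_blk Hgrp_carrier by blast
  also have "\<dots> = (\<lambda>(h1, h2). iota h1 h2) ` S"
  proof (rule image_char)
    show "S \<subseteq> fiber_prod GL2 (GSp (2::nat) :: 'a mat set)"
      unfolding S_def using Top_bwd(1) by auto
  next
    fix X :: "'a mat" assume X: "X \<in> Hgrp"
    note D = Hgrp_dec(2)[OF X]
    have g1: "ob X \<in> GL2" and g2: "mb X \<in> GSp 2" and dt: "det (ob X) = sim 2 (mb X)" using D by (auto simp: fiber_prod_def)
    have QQ: "(X$$(2,4) = 0 \<and> X$$(3,4) = 0 \<and> X$$(4,4) = X$$(0,0) \<and> X$$(1,4) = X$$(5,0) \<and>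
     X$$(2,1) = 0 \<and> X$$(3,1) = 0 \<and> X$$(4,1) = X$$(0,5) \<and> X$$(1,1) = X$$(5,5)) \<longleftrightarrow> Qop (ob X) (mb X)"
      by (simp add: Qop_def ob_entry mb_entry)
    show "(X$$(2,4) = 0 \<and> X$$(3,4) = 0 \<and> X$$(4,4) = X$$(0,0) \<and> X$$(1,4) = X$$(5,0) \<and>
     X$$(2,1) = 0 \<and> X$$(3,1) = 0 \<and> X$$(4,1) = X$$(0,5) \<and> X$$(1,1) = X$$(5,5)) \<longleftrightarrow> (ob X, mb X) \<in> S"
    proof
      assume "X$$(2,4) = 0 \<and> X$$(3,4) = 0 \<and> X$$(4,4) = X$$(0,0) \<and> X$$(1,4) = X$$(5,0) \<and>
        X$$(2,1) = 0 \<and> X$$(3,1) = 0 \<and> X$$(4,1) = X$$(0,5) \<and> X$$(1,1) = X$$(5,5)"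
      hence "Qop (ob X) (mb X)" using QQ by simp
      then obtain k where "(ob X, k) \<in> Jgrp" "mb X = jmap (ob X) k" using Top_fwd[OF g1 g2 dt] by blast
      thus "(ob X, mb X) \<in> S" unfolding S_def by force
    next
      assume "(ob X, mb X) \<in> S"
      then obtain h1 k where "(h1, k) \<in> Jgrp" "ob X = h1" "mb X = jmap h1 k" unfolding S_def by auto
      hence "Qop (ob X) (mb X)" using Top_bwd(2) by simp
      thus "X$$(2,4) = 0 \<and> X$$(3,4) = 0 \<and> X$$(4,4) = X$$(0,0) \<and> X$$(1,4) = X$$(5,0) \<and>
        X$$(2,1) = 0 \<and> X$$(3,1) = 0 \<and> X$$(4,1) = X$$(0,5) \<and> X$$(1,1) = X$$(5,5)" using QQ by simp
    qed
  qed
  also have "\<dots> = (\<lambda>(h1, h2). iota h1 (jmap h1 h2)) ` Jgrp"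
    unfolding S_def by (auto simp: image_iff)
  finally show ?thesis .
qed


definition isM :: "(nat \<Rightarrow> 'a::zero) \<Rightarrow> bool" where "isM x \<longleftrightarrow> x 0 = 0 \<and> x 5 = 0"
definition isO :: "(nat \<Rightarrow> 'a::zero) \<Rightarrow> bool" where "isO x \<longleftrightarrow> x 1 = 0 \<and> x 2 = 0 \<and> x 3 = 0 \<and> x 4 = 0"
definition ev :: "nat \<Rightarrow> nat \<Rightarrow> 'a::{zero,one}" where "ev j = (\<lambda>k. if k = j then 1 else 0)"
definition lc :: "'a \<Rightarrow> (nat \<Rightarrow> 'a::comm_ring_1) \<Rightarrow> 'a \<Rightarrow> (nat \<Rightarrow> 'a) \<Rightarrow> nat \<Rightarrow> 'a" where
  "lc a x b y = (\<lambda>k. a * x k + b * y k)"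

lemma om6_skew: "om6 x y = - om6 y x" by (simp add: om6_def algebra_simps)
lemma om6_self: "om6 x x = 0" by (simp add: om6_def algebra_simps)
lemma om6_lc1: "om6 (lc a x b y) z = a * om6 x z + b * om6 y z" by (simp add: om6_def lc_def algebra_simps)
lemma om6_lc2: "om6 z (lc a x b y) = a * om6 z x + b * om6 z y" by (simp add: om6_def lc_def algebra_simps)
lemma om6_OM: "isO x \<Longrightarrow> isM y \<Longrightarrow> om6 x y = 0" by (simp add: om6_def isO_def isM_def)
lemma om6_MO: "isM x \<Longrightarrow> isO y \<Longrightarrow> om6 x y = 0" by (simp add: om6_def isO_def isM_def)
lemma isM_lc: "isM x \<Longrightarrow> isM y \<Longrightarrow> isM (lc a x b y)" by (simp add: isM_def lc_def)
lemma isO_lc: "isO x \<Longrightarrow> isO y \<Longrightarrow> isO (lc a x b y)" by (simp add: isO_def lc_def)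

lemma om6_lin3: "om6 (\<lambda>k. x k - a * u k + b * w k) z = om6 x z - a * om6 u z + b * om6 w z"
  by (simp add: om6_def algebra_simps)
lemma om6_smult1: "om6 (\<lambda>k. a * x k) z = a * om6 x z" by (simp add: om6_def algebra_simps)
lemma om6_smult2: "om6 z (\<lambda>k. a * x k) = a * om6 z x" by (simp add: om6_def algebra_simps)

lemma C1:
  fixes u w :: "nat \<Rightarrow> 'a::field"
  assumes u: "isM u" and w: "isM w" and uw: "om6 u w = m" and m: "m \<noteq> 0"
  shows "\<exists>v1 v2. isM v1 \<and> isM v2 \<and> om6 v1 v2 = m \<and> om6 v1 u = 0 \<and> om6 v1 w = 0 \<and> om6 v2 u = 0 \<and> om6 v2 w = 0"
proof -
  define P where "P = (\<lambda>x::nat \<Rightarrow> 'a. \<lambda>k. x k - (om6 x w / m) * u k + (om6 x u / m) * w k)"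
  have Pu: "om6 (P x) u = 0" for x
  proof -
    have "om6 (P x) u = om6 x u - (om6 x w / m) * om6 u u + (om6 x u / m) * om6 w u"
      unfolding P_def by (rule om6_lin3)
    also have "\<dots> = 0" using uw m by (simp add: om6_self om6_skew[of w u])
    finally show ?thesis .
  qed
  have Pw: "om6 (P x) w = 0" for x
  proof -
    have "om6 (P x) w = om6 x w - (om6 x w / m) * om6 u w + (om6 x u / m) * om6 w w"
      unfolding P_def by (rule om6_lin3)
    also have "\<dots> = 0" using uw m by (simp add: om6_self)
    finally show ?thesis .
  qed
  have PM: "isM x \<Longrightarrow> isM (P x)" for x using u w by (simp add: isM_def P_def)
  have evM: "isM (ev j :: nat \<Rightarrow> 'a)" if "1 \<le> j" "j \<le> 4" for j using that by (simp add: isM_def ev_def)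
  define c1 where "c1 = om6 (P (ev 1)) (P (ev 4))"
  define c2 where "c2 = om6 (P (ev 2)) (P (ev 3))"
  have PP: "om6 (P x) (P y) = om6 x (P y)" for x y
  proof -
    have "om6 (P x) (P y) = om6 x (P y) - (om6 x w / m) * om6 u (P y) + (om6 x u / m) * om6 w (P y)"
      unfolding P_def by (rule om6_lin3)
    thus ?thesis using Pu[of y] Pw[of y] om6_skew[of u "P y"] om6_skew[of w "P y"] by simp
  qed
  have e1: "om6 (ev 1) y = y 4" for y :: "nat \<Rightarrow> 'a" by (simp add: om6_def ev_def)
  have e2: "om6 (ev 2) y = y 3" for y :: "nat \<Rightarrow> 'a" by (simp add: om6_def ev_def)
  have e3: "om6 (ev 3) y = - y 2" for y :: "nat \<Rightarrow> 'a" by (simp add: om6_def ev_def)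
  have e4: "om6 (ev 4) y = - y 1" for y :: "nat \<Rightarrow> 'a" by (simp add: om6_def ev_def)
  have p44: "P (ev 4) 4 = 1 - (om6 (ev 4) w / m) * u 4 + (om6 (ev 4) u / m) * w 4" by (simp add: P_def ev_def)
  have p33: "P (ev 3) 3 = 1 - (om6 (ev 3) w / m) * u 3 + (om6 (ev 3) u / m) * w 3" by (simp add: P_def ev_def)
  have c1e: "c1 = 1 + (w 1 / m) * u 4 - (u 1 / m) * w 4" unfolding c1_def PP e1 p44 e4 by simp
  have c2e: "c2 = 1 + (w 2 / m) * u 3 - (u 2 / m) * w 3" unfolding c2_def PP e2 p33 e3 by simp
  have num: "w 1 * u 4 - u 1 * w 4 + w 2 * u 3 - u 2 * w 3 = - m"
    using uw u w by (simp add: om6_def isM_def algebra_simps)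
  have "c1 + c2 = 2 + (w 1 * u 4 - u 1 * w 4 + w 2 * u 3 - u 2 * w 3) / m"
    unfolding c1e c2e using m by (simp add: field_simps)
  hence tr: "c1 + c2 = 1" unfolding num using m by simp
  show ?thesis
  proof (cases "c1 = 0")
    case False
    define v2 where "v2 = (\<lambda>k. (m / c1) * P (ev 4) k)"
    have "om6 (P (ev 1)) v2 = (m / c1) * c1" unfolding v2_def c1_def by (rule om6_smult2)
    hence "om6 (P (ev 1)) v2 = m" using False by simp
    moreover have "om6 v2 u = 0" "om6 v2 w = 0" using Pu[of "ev 4"] Pw[of "ev 4"]
      unfolding v2_def om6_smult1 by simp_all
    moreover have "isM v2" using PM[OF evM[of 4]] by (simp add: v2_def isM_def)
    moreover have "isM (P (ev 1))" using PM[OF evM[of 1]] by simp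
    ultimately show ?thesis using Pu[of "ev 1"] Pw[of "ev 1"] by blast
  next
    case True
    hence c2: "c2 = 1" using tr by simp
    define v2 where "v2 = (\<lambda>k. m * P (ev 3) k)"
    have "om6 (P (ev 2)) v2 = m * c2" unfolding v2_def c2_def by (rule om6_smult2)
    hence "om6 (P (ev 2)) v2 = m" using c2 by simp
    moreover have "om6 v2 u = 0" "om6 v2 w = 0" using Pu[of "ev 3"] Pw[of "ev 3"]
      unfolding v2_def om6_smult1 by simp_all
    moreover have "isM v2" using PM[OF evM[of 3]] by (simp add: v2_def isM_def)
    moreover have "isM (P (ev 2))" using PM[OF evM[of 2]] by simp
    ultimately show ?thesis using Pu[of "ev 2"] Pw[of "ev 2"] by blast
  qed
qed

definition sv :: "nat \<Rightarrow> 'a \<Rightarrow> nat \<Rightarrow> 'a::zero" where "sv j c = (\<lambda>k. if k = j then c else 0)"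
definition sg :: "nat \<Rightarrow> 'a::comm_ring_1" where "sg j = (if j < 3 then 1 else -1)"

lemma sg_sq: "sg j * sg j = (1::'a::comm_ring_1)" by (simp add: sg_def)

lemma om6_sv: "j < 6 \<Longrightarrow> om6 (sv j c) y = c * sg j * y (5 - j)"
  by (drule less6, elim disjE; simp add: om6_def sv_def sg_def)

lemma isM_sv: "1 \<le> j \<Longrightarrow> j \<le> 4 \<Longrightarrow> isM (sv j c)" by (simp add: isM_def sv_def)

lemma S1:
  fixes w :: "nat \<Rightarrow> 'a::field"
  assumes p: "1 \<le> p" "p \<le> 4" and wp: "w p \<noteq> 0"
  shows "\<exists>x. isM x \<and> om6 x w = t"
proof -
  define x where "x = sv (5 - p) (t * sg (5 - p) / w p)"
  have "om6 x w = t * sg (5 - p) / w p * sg (5 - p) * w p" unfolding x_def using p by (simp add: om6_sv)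
  also have "\<dots> = t * (sg (5 - p) * sg (5 - p))" using wp by (simp add: field_simps)
  finally have "om6 x w = t" by (simp add: sg_sq)
  moreover have "isM x" unfolding x_def using p by (intro isM_sv) auto
  ultimately show ?thesis by blast
qed

lemma ex_minor:
  fixes u w :: "nat \<Rightarrow> 'a::field"
  assumes ind: "\<And>c d. (\<forall>k. 1 \<le> k \<and> k \<le> 4 \<longrightarrow> c * u k + d * w k = 0) \<Longrightarrow> c = 0 \<and> d = 0"
  shows "\<exists>p q. 1 \<le> p \<and> p \<le> 4 \<and> 1 \<le> q \<and> q \<le> 4 \<and> u p * w q - u q * w p \<noteq> 0"
proof (rule ccontr)
  assume "\<not> ?thesis"
  hence Z: "\<And>p q. 1 \<le> p \<Longrightarrow> p \<le> 4 \<Longrightarrow> 1 \<le> q \<Longrightarrow> q \<le> 4 \<Longrightarrow> u p * w q = u q * w p" by auto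
  show False
  proof (cases "\<forall>k. 1 \<le> k \<and> k \<le> 4 \<longrightarrow> u k = 0")
    case True
    hence "\<forall>k. 1 \<le> k \<and> k \<le> 4 \<longrightarrow> 1 * u k + 0 * w k = 0" by simp
    hence "(1::'a) = 0 \<and> (0::'a) = 0" by (rule ind)
    thus False by simp
  next
    case False
    then obtain p where p: "1 \<le> p" "p \<le> 4" "u p \<noteq> 0" by auto
    have "\<forall>k. 1 \<le> k \<and> k \<le> 4 \<longrightarrow> w p * u k + (- u p) * w k = 0"
    proof (intro allI impI)
      fix k :: nat assume k: "1 \<le> k \<and> k \<le> 4"
      have "u k * w p = u p * w k" using Z[of k p] k p by simp
      thus "w p * u k + (- u p) * w k = 0" by (simp add: algebra_simps)
    qed
    hence "w p = 0 \<and> - u p = 0" by (rule ind)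
    thus False using p by simp
  qed
qed

lemma S2:
  fixes u w :: "nat \<Rightarrow> 'a::field"
  assumes ind: "\<And>c d. (\<forall>k. 1 \<le> k \<and> k \<le> 4 \<longrightarrow> c * u k + d * w k = 0) \<Longrightarrow> c = 0 \<and> d = 0"
  shows "\<exists>x. isM x \<and> om6 x u = s \<and> om6 x w = t"
proof -
  obtain p q where pq: "1 \<le> p" "p \<le> 4" "1 \<le> q" "q \<le> 4" and D: "u p * w q - u q * w p \<noteq> 0"
    using ex_minor[OF ind] by blast
  define D where "D = u p * w q - u q * w p"
  have Dnz: "D \<noteq> 0" using D by (simp add: D_def)
  define a where "a = (s * w q - t * u q) / D"
  define b where "b = (t * u p - s * w p) / D"
  define x where "x = lc 1 (sv (5 - p) (a * sg (5 - p))) 1 (sv (5 - q) (b * sg (5 - q)))"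
  have sg2: "\<And>c j y. c * sg j * sg j * y = c * (y::'a)" by (simp add: sg_def)
  have p5: "5 - (5 - p) = p" "5 - p < 6" using pq by auto
  have q5: "5 - (5 - q) = q" "5 - q < 6" using pq by auto
  have xu: "om6 x u = a * u p + b * u q"
    unfolding x_def om6_lc1 om6_sv[OF p5(2)] om6_sv[OF q5(2)] p5(1) q5(1) sg2 by simp
  have xw: "om6 x w = a * w p + b * w q"
    unfolding x_def om6_lc1 om6_sv[OF p5(2)] om6_sv[OF q5(2)] p5(1) q5(1) sg2 by simp
  have n1: "(s * w q - t * u q) * u p + (t * u p - s * w p) * u q = s * D" by (simp add: D_def algebra_simps)
  have n2: "(s * w q - t * u q) * w p + (t * u p - s * w p) * w q = t * D" by (simp add: D_def algebra_simps)
  have "a * u p + b * u q = ((s * w q - t * u q) * u p + (t * u p - s * w p) * u q) / D"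
    unfolding a_def b_def using Dnz by (simp add: field_simps)
  hence "a * u p + b * u q = s" using n1 Dnz by simp
  moreover have "a * w p + b * w q = ((s * w q - t * u q) * w p + (t * u p - s * w p) * w q) / D"
    unfolding a_def b_def using Dnz by (simp add: field_simps)
  hence "a * w p + b * w q = t" using n2 Dnz by simp
  moreover have "isM x" unfolding x_def using pq by (intro isM_lc isM_sv) auto
  ultimately show ?thesis using xu xw by blast
qed


definition mk6 :: "(nat \<Rightarrow> nat \<Rightarrow> 'a) \<Rightarrow> 'a mat" where "mk6 r = mat 6 6 (\<lambda>(i,j). r i j)"

lemma mk6_carrier[simp]: "mk6 r \<in> carrier_mat 6 6" by (simp add: mk6_def)

lemma om6_cong: "(\<And>k. k < 6 \<Longrightarrow> x k = x' k) \<Longrightarrow> (\<And>k. k < 6 \<Longrightarrow> y k = y' k) \<Longrightarrow> om6 x y = om6 x' y'"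
  by (simp add: om6_def)

lemma J6_skew: "J6 j i = - (J6 i j :: 'a::comm_ring_1)" if "i < 6" "j < 6"
  using that by (auto simp: J6_def)

lemma Hrows:
  fixes r :: "nat \<Rightarrow> nat \<Rightarrow> 'a::field"
  assumes m: "m \<noteq> 0"
    and O0: "isO (r 0)" and O5: "isO (r 5)"
    and M1: "isM (r 1)" and M2: "isM (r 2)" and M3: "isM (r 3)" and M4: "isM (r 4)"
    and a05: "om6 (r 0) (r 5) = m" and a14: "om6 (r 1) (r 4) = m" and a23: "om6 (r 2) (r 3) = m"
    and a12: "om6 (r 1) (r 2) = 0" and a13: "om6 (r 1) (r 3) = 0" and a24: "om6 (r 2) (r 4) = 0"
    and a34: "om6 (r 3) (r 4) = 0"
  shows "mk6 r \<in> Hgrp"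
proof -
  have up: "om6 (r i) (r j) = m * J6 i j" if ij: "i < 6" "j < 6" "i \<le> j" for i j
  proof -
    have "i = 0 \<or> i = 1 \<or> i = 2 \<or> i = 3 \<or> i = 4 \<or> i = 5" "j = 0 \<or> j = 1 \<or> j = 2 \<or> j = 3 \<or> j = 4 \<or> j = 5"
      using ij by auto
    thus ?thesis using ij(3)
      by (elim disjE; simp add: J6_def a05 a14 a23 a12 a13 a24 a34 om6_self om6_OM om6_MO O0 O5 M1 M2 M3 M4)
  qed
  have all: "om6 (r i) (r j) = m * J6 i j" if ij: "i < 6" "j < 6" for i j
  proof (cases "i \<le> j")
    case True thus ?thesis using up ij by blast
  next
    case False
    hence "om6 (r j) (r i) = m * J6 j i" using up ij by simp
    hence "om6 (r i) (r j) = - (m * J6 j i)" using om6_skew[of "r i" "r j"] by simp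
    also have "J6 j i = - J6 i j" by (rule J6_skew[OF ij])
    finally show ?thesis by simp
  qed
  have rw_eq: "om6 (rw (mk6 r) i) (rw (mk6 r) j) = om6 (r i) (r j)" if "i < 6" "j < 6" for i j
    using that by (intro om6_cong) (simp_all add: rw_def mk6_def)
  have "mk6 r * Jmat 3 * transpose_mat (mk6 r) = m \<cdot>\<^sub>m Jmat 3"
    by (rule rowrel_iff[OF mk6_carrier, THEN iffD2]) (simp add: rw_eq all)
  hence "transpose_mat (mk6 r) * Jmat 3 * mk6 r = m \<cdot>\<^sub>m Jmat 3" using TR_conv[OF mk6_carrier _ m] by blast
  hence G: "mk6 r \<in> GSp 3" using m unfolding GSp3_iff by (intro conjI exI[of _ m]) auto
  have "blk (mk6 r)"
    by (rule blk_intro) (use O0 O5 M1 M2 M3 M4 in \<open>simp_all add: mk6_def isO_def isM_def\<close>)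
  thus ?thesis using G by (simp add: Hgrp_char)
qed

lemma rowcomb_P22:
  fixes g Y :: "'a::field mat"
  assumes g: "g \<in> GSp 3" and Y: "Y \<in> GSp 3"
    and r4: "\<And>k. k < 6 \<Longrightarrow> g$$(4,k) = a * Y$$(4,k) + b * Y$$(5,k)"
    and r5: "\<And>k. k < 6 \<Longrightarrow> g$$(5,k) = c * Y$$(4,k) + d * Y$$(5,k)"
  shows "\<exists>p \<in> P22. g = p * Y"
proof -
  note YI = GSp3_inv[OF Y]
  define Yi where "Yi = ginv Y (sim 3 Y)"
  have gc: "g \<in> carrier_mat 6 6" and Yc: "Y \<in> carrier_mat 6 6" using g Y by (auto simp: GSp3_iff)
  have Yic: "Yi \<in> carrier_mat 6 6" using Yc by (simp add: Yi_def)
  have YYi: "Y * Yi = 1\<^sub>m 6" and YiY: "Yi * Y = 1\<^sub>m 6" using YI by (auto simp: Yi_def)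
  define p where "p = g * Yi"
  have pG: "p \<in> GSp 3" using GSp3_mult[OF g YI(1)] by (simp add: p_def Yi_def)
  have ent: "\<And>i k. i < 6 \<Longrightarrow> k < 6 \<Longrightarrow> (Y * Yi) $$ (i,k) = (\<Sum>l<6. Y$$(i,l) * Yi$$(l,k))"
    using mult_entry[OF Yc Yic] by blast
  have p4: "p $$ (4,k) = a * (Y * Yi)$$(4,k) + b * (Y * Yi)$$(5,k)" if k: "k < 6" for k
  proof -
    have "p $$ (4,k) = (\<Sum>l<6. g$$(4,l) * Yi$$(l,k))" using mult_entry[OF gc Yic _ k] by (simp add: p_def)
    also have "\<dots> = (\<Sum>l<6. a * (Y$$(4,l) * Yi$$(l,k)) + b * (Y$$(5,l) * Yi$$(l,k)))"
      by (rule sum.cong) (auto simp: r4 algebra_simps)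
    also have "\<dots> = a * (Y * Yi)$$(4,k) + b * (Y * Yi)$$(5,k)"
      using k by (simp add: ent sum.distrib sum_distrib_left)
    finally show ?thesis .
  qed
  have p5: "p $$ (5,k) = c * (Y * Yi)$$(4,k) + d * (Y * Yi)$$(5,k)" if k: "k < 6" for k
  proof -
    have "p $$ (5,k) = (\<Sum>l<6. g$$(5,l) * Yi$$(l,k))" using mult_entry[OF gc Yic _ k] by (simp add: p_def)
    also have "\<dots> = (\<Sum>l<6. c * (Y$$(4,l) * Yi$$(l,k)) + d * (Y$$(5,l) * Yi$$(l,k)))"
      by (rule sum.cong) (auto simp: r5 algebra_simps)
    also have "\<dots> = c * (Y * Yi)$$(4,k) + d * (Y * Yi)$$(5,k)"
      using k by (simp add: ent sum.distrib sum_distrib_left)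
    finally show ?thesis .
  qed
  have "rowz p" unfolding rowz_def using p4 p5 by (simp add: YYi)
  hence pP: "p \<in> P22" using pG by (simp add: P22_char2)
  have "p * Y = g" unfolding p_def using gc Yic Yc by (simp add: YiY)
  thus ?thesis using pP by blast
qed

lemma rows_tauH:
  fixes H :: "'a::field mat"
  assumes H: "H \<in> carrier_mat 6 6" and k: "k < 6"
  shows "(1\<^sub>m 6 * H)$$(4,k) = H$$(4,k)" "(1\<^sub>m 6 * H)$$(5,k) = H$$(5,k)"
    "(tau1 * H)$$(4,k) = H$$(4,k)" "(tau1 * H)$$(5,k) = H$$(3,k)"
    "(tau2 * H)$$(4,k) = H$$(4,k)" "(tau2 * H)$$(5,k) = H$$(3,k) + H$$(5,k)"
    "(tau_op * H)$$(4,k) = H$$(0,k) + H$$(4,k)" "(tau_op * H)$$(5,k) = H$$(1,k) + H$$(5,k)"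
  using H k by (simp_all add: mult6 tau1_def tau2_def tau_op_def mat_of_rows_list_def)

lemma dc_via:
  fixes g t H :: "'a::field mat"
  assumes g: "g \<in> GSp 3" and t: "t \<in> GSp 3" and H: "H \<in> Hgrp"
    and r4: "\<And>k. k < 6 \<Longrightarrow> g$$(4,k) = a * (t*H)$$(4,k) + b * (t*H)$$(5,k)"
    and r5: "\<And>k. k < 6 \<Longrightarrow> g$$(5,k) = c * (t*H)$$(4,k) + d * (t*H)$$(5,k)"
  shows "g \<in> double_coset t"
proof -
  have HG: "H \<in> GSp 3" using H by (simp add: Hgrp_char)
  obtain p where p: "p \<in> P22" and gp: "g = p * (t * H)"
    using rowcomb_P22[OF g GSp3_mult[OF t HG] r4 r5] by blast
  have "g = p * t * H" using gp P22_carrier[OF p] t HG by (simp add: GSp3_iff)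
  thus ?thesis using p H unfolding double_coset_def by blast
qed


definition Op :: "(nat \<Rightarrow> 'a::zero) \<Rightarrow> nat \<Rightarrow> 'a" where "Op x = (\<lambda>k. if k = 0 \<or> k = 5 then x k else 0)"
definition Mp :: "(nat \<Rightarrow> 'a::zero) \<Rightarrow> nat \<Rightarrow> 'a" where "Mp x = (\<lambda>k. if k = 0 \<or> k = 5 then 0 else x k)"

lemma isO_Op[simp]: "isO (Op x)" by (simp add: isO_def Op_def)
lemma isM_Mp[simp]: "isM (Mp x)" by (simp add: isM_def Mp_def)
lemma om6_split: "om6 x y = (x 0 * y 5 - x 5 * y 0) + om6 (Mp x) (Mp y)"
  by (simp add: om6_def Mp_def algebra_simps)
lemma om6_OpOp: "om6 (Op x) (Op y) = x 0 * y 5 - x 5 * y 0" by (simp add: om6_def Op_def)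
lemma om6_Mp_l: "isM y \<Longrightarrow> om6 (Mp x) y = om6 x y" by (simp add: om6_def Mp_def isM_def)
lemma om6_Mp_r: "isM x \<Longrightarrow> om6 x (Mp y) = om6 x y" by (simp add: om6_def Mp_def isM_def)
lemma OpMp: "Op x k + Mp x k = (x k :: 'a::comm_monoid_add)" "Mp x k + Op x k = (x k :: 'a::comm_monoid_add)"
  by (simp_all add: Op_def Mp_def)

lemma mk6_entry: "i < 6 \<Longrightarrow> k < 6 \<Longrightarrow> mk6 r $$ (i,k) = r i k" by (simp add: mk6_def)

lemma caseA:
  fixes g :: "'a::field mat"
  assumes g: "g \<in> GSp 3" and D: "g$$(4,0) * g$$(5,5) - g$$(4,5) * g$$(5,0) \<noteq> 0"
  shows "g \<in> double_coset tau_op"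
proof -
  define \<mu> where "\<mu> = sim 3 g"
  have R: "\<And>i j. i < 6 \<Longrightarrow> j < 6 \<Longrightarrow> om6 (rw g i) (rw g j) = \<mu> * J6 i j" using GSp3_R[OF g] by (simp add: \<mu>_def)
  define G4 where "G4 = rw g 4"
  define G5 where "G5 = rw g 5"
  define \<Delta> where "\<Delta> = g$$(4,0) * g$$(5,5) - g$$(4,5) * g$$(5,0)"
  have Dnz: "\<Delta> \<noteq> 0" using D by (simp add: \<Delta>_def)
  have "om6 G4 G5 = 0" using R[of 4 5] by (simp add: G4_def G5_def J6_def)
  hence "\<Delta> + om6 (Mp G4) (Mp G5) = 0" using om6_split[of G4 G5] by (simp add: \<Delta>_def G4_def G5_def rw_def)
  hence "om6 (Mp G4) (Mp G5) = - \<Delta>" by (simp add: add_eq_0_iff)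
  hence uw: "om6 (Mp G5) (Mp G4) = \<Delta>" using om6_skew[of "Mp G5" "Mp G4"] by simp
  obtain v1 v2 where v: "isM v1" "isM v2" "om6 v1 v2 = \<Delta>" "om6 v1 (Mp G5) = 0" "om6 v1 (Mp G4) = 0"
    "om6 v2 (Mp G5) = 0" "om6 v2 (Mp G4) = 0"
    using C1[OF isM_Mp isM_Mp uw Dnz] by blast
  define r where "r = (\<lambda>i::nat. if i = 0 then Op G4 else if i = 1 then Mp G5 else if i = 2 then v1
      else if i = 3 then v2 else if i = 4 then Mp G4 else Op G5)"
  have H: "mk6 r \<in> Hgrp"
  proof (rule Hrows[OF Dnz])
    show "om6 (r 0) (r 5) = \<Delta>" by (simp add: r_def om6_OpOp \<Delta>_def G4_def G5_def rw_def)
    show "om6 (r 1) (r 4) = \<Delta>" using uw by (simp add: r_def)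
    show "om6 (r 2) (r 3) = \<Delta>" using v by (simp add: r_def)
    show "om6 (r 1) (r 2) = 0" using v om6_skew[of "Mp G5" v1] by (simp add: r_def)
    show "om6 (r 1) (r 3) = 0" using v om6_skew[of "Mp G5" v2] by (simp add: r_def)
    show "om6 (r 2) (r 4) = 0" using v by (simp add: r_def)
    show "om6 (r 3) (r 4) = 0" using v by (simp add: r_def)
  qed (use v in \<open>simp_all add: r_def\<close>)
  have Hc: "mk6 r \<in> carrier_mat 6 6" by simp
  show ?thesis
  proof (rule dc_via[OF g tau_op_GSp H, of 1 0 0 1])
    fix k :: nat assume k: "k < 6"
    show "g$$(4,k) = 1 * (tau_op * mk6 r)$$(4,k) + 0 * (tau_op * mk6 r)$$(5,k)"
      using rows_tauH(7)[OF Hc k] k by (simp add: mk6_entry r_def OpMp G4_def rw_def)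
    show "g$$(5,k) = 0 * (tau_op * mk6 r)$$(4,k) + 1 * (tau_op * mk6 r)$$(5,k)"
      using rows_tauH(8)[OF Hc k] k by (simp add: mk6_entry r_def OpMp G5_def rw_def)
  qed
qed

lemma caseB:
  fixes g :: "'a::field mat"
  assumes g: "g \<in> GSp 3" and z: "g$$(4,0) = 0" "g$$(4,5) = 0" "g$$(5,0) = 0" "g$$(5,5) = 0"
  shows "g \<in> double_coset tau1"
proof -
  define \<mu> where "\<mu> = sim 3 g"
  have mu: "\<mu> \<noteq> 0" using GSp3_rel[OF g] by (simp add: \<mu>_def)
  have R: "\<And>i j. i < 6 \<Longrightarrow> j < 6 \<Longrightarrow> om6 (rw g i) (rw g j) = \<mu> * J6 i j" using GSp3_R[OF g] by (simp add: \<mu>_def)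
  define G0 where "G0 = rw g 0"
  define G1 where "G1 = rw g 1"
  define G4 where "G4 = rw g 4"
  define G5 where "G5 = rw g 5"
  have M4: "isM G4" and M5: "isM G5" using z by (simp_all add: isM_def G4_def G5_def rw_def)
  have r14: "om6 G1 G4 = \<mu>" and r05: "om6 G0 G5 = \<mu>" and r45: "om6 G4 G5 = 0" and r15: "om6 G1 G5 = 0"
    and r04: "om6 G0 G4 = 0" and r44: "om6 G4 G4 = 0" and r54: "om6 G5 G4 = 0"
    using R[of 1 4] R[of 0 5] R[of 4 5] R[of 1 5] R[of 0 4] R[of 4 4] R[of 5 4]
    by (simp_all add: G0_def G1_def G4_def G5_def J6_def)
  define t where "t = - om6 (Mp G1) (Mp G0) / \<mu>"
  define r where "r = (\<lambda>i::nat. if i = 0 then sv 0 1 else if i = 1 then Mp G1 else if i = 2 then lc 1 (Mp G0) t G4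
      else if i = 3 then G5 else if i = 4 then G4 else sv 5 \<mu>)"
  have H: "mk6 r \<in> Hgrp"
  proof (rule Hrows[OF mu])
    show "om6 (r 0) (r 5) = \<mu>" by (simp add: r_def om6_def sv_def)
    show "om6 (r 1) (r 4) = \<mu>" using r14 om6_Mp_l[OF M4] by (simp add: r_def)
    show "om6 (r 2) (r 3) = \<mu>" using r05 r45 om6_Mp_l[OF M5] by (simp add: r_def om6_lc1)
    show "om6 (r 1) (r 2) = 0" using om6_Mp_l[OF M4, of G1] r14 mu by (simp add: r_def om6_lc2 t_def)
    show "om6 (r 1) (r 3) = 0" using r15 om6_Mp_l[OF M5] by (simp add: r_def)
    show "om6 (r 2) (r 4) = 0" using r04 r44 om6_Mp_l[OF M4] by (simp add: r_def om6_lc1)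
    show "om6 (r 3) (r 4) = 0" using r54 by (simp add: r_def)
    show "isM (r 2)" using M4 by (simp add: r_def isM_lc)
  qed (use M4 M5 in \<open>simp_all add: r_def isO_def sv_def\<close>)
  have Hc: "mk6 r \<in> carrier_mat 6 6" by simp
  show ?thesis
  proof (rule dc_via[OF g tau1_GSp H, of 1 0 0 1])
    fix k :: nat assume k: "k < 6"
    show "g$$(4,k) = 1 * (tau1 * mk6 r)$$(4,k) + 0 * (tau1 * mk6 r)$$(5,k)"
      using rows_tauH(3)[OF Hc k] k by (simp add: mk6_entry r_def G4_def rw_def)
    show "g$$(5,k) = 0 * (tau1 * mk6 r)$$(4,k) + 1 * (tau1 * mk6 r)$$(5,k)"
      using rows_tauH(4)[OF Hc k] k by (simp add: mk6_entry r_def G5_def rw_def)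
  qed
qed

lemma outer_partner:
  fixes z :: "nat \<Rightarrow> 'a::field"
  assumes "z 0 \<noteq> 0 \<or> z 5 \<noteq> 0"
  shows "\<exists>x. isO x \<and> om6 x (Op z) = 1"
proof (cases "z 5 = 0")
  case False
  have "om6 (sv 0 (1 / z 5)) (Op z) = 1" using False by (simp add: om6_sv sg_def Op_def)
  moreover have "isO (sv 0 (1 / z 5))" by (simp add: isO_def sv_def)
  ultimately show ?thesis by blast
next
  case True
  hence z0: "z 0 \<noteq> 0" using assms by simp
  have "om6 (sv 5 (- 1 / z 0)) (Op z) = 1" using z0 by (simp add: om6_sv sg_def Op_def)
  moreover have "isO (sv 5 (- 1 / z 0))" by (simp add: isO_def sv_def)
  ultimately show ?thesis by blast
qed

lemma ynz_of: assumes "isM y" "om6 x y \<noteq> 0" shows "\<exists>p. 1 \<le> p \<and> p \<le> 4 \<and> y p \<noteq> 0"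
proof (rule ccontr)
  assume "\<not> ?thesis"
  hence "y 1 = 0" "y 2 = 0" "y 3 = 0" "y 4 = 0" by auto
  thus False using assms by (simp add: om6_def isM_def)
qed

lemma caseC_core:
  fixes g :: "'a::field mat" and y z :: "nat \<Rightarrow> 'a"
  assumes g: "g \<in> GSp 3" and My: "isM y" and ynz: "\<exists>p. 1 \<le> p \<and> p \<le> 4 \<and> y p \<noteq> 0"
    and zo: "z 0 \<noteq> 0 \<or> z 5 \<noteq> 0" and yz: "om6 y z = 0"
    and r4: "\<And>k. k < 6 \<Longrightarrow> g$$(4,k) = \<alpha>1 * y k + \<beta>1 * z k"
    and r5: "\<And>k. k < 6 \<Longrightarrow> g$$(5,k) = \<alpha>2 * y k + \<beta>2 * z k"
  shows "g \<in> double_coset (1\<^sub>m 6) \<or> g \<in> double_coset tau2"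
proof (cases "\<forall>c d. (\<forall>k. 1 \<le> k \<and> k \<le> 4 \<longrightarrow> c * y k + d * z k = 0) \<longrightarrow> c = 0 \<and> d = 0")
  case True
  have ind: "c = 0 \<and> d = 0" if "\<forall>k. 1 \<le> k \<and> k \<le> 4 \<longrightarrow> c * y k + d * Mp z k = 0" for c d
  proof -
    have "\<forall>k. 1 \<le> k \<and> k \<le> 4 \<longrightarrow> c * y k + d * z k = 0"
    proof (intro allI impI)
      fix k :: nat assume k: "1 \<le> k \<and> k \<le> 4"
      hence "c * y k + d * Mp z k = 0" using that by blast
      thus "c * y k + d * z k = 0" using k by (simp add: Mp_def)
    qed
    thus ?thesis using True by blast
  qed
  obtain x1 where x1: "isM x1" "om6 x1 y = 1" "om6 x1 (Mp z) = 0" using S2[OF ind, where s=1 and t=0] by blast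
  obtain x2 where x2: "isM x2" "om6 x2 y = 0" "om6 x2 (Mp z) = 1" using S2[OF ind, where s=0 and t=1] by blast
  obtain xo where xo: "isO xo" "om6 xo (Op z) = 1" using outer_partner[OF zo] by blast
  have yMz: "om6 y (Mp z) = 0" using om6_Mp_r[OF My] yz by simp
  define t where "t = - om6 x1 x2"
  define r where "r = (\<lambda>i::nat. if i = 0 then xo else if i = 1 then x1 else if i = 2 then lc 1 x2 t y
      else if i = 3 then Mp z else if i = 4 then y else Op z)"
  have H: "mk6 r \<in> Hgrp"
  proof (rule Hrows[where m=1])
    show "om6 (r 0) (r 5) = 1" using xo by (simp add: r_def)
    show "om6 (r 1) (r 4) = 1" using x1 by (simp add: r_def)
    show "om6 (r 2) (r 3) = 1" using x2 yMz by (simp add: r_def om6_lc1)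
    show "om6 (r 1) (r 2) = 0" using x1 by (simp add: r_def om6_lc2 t_def)
    show "om6 (r 1) (r 3) = 0" using x1 by (simp add: r_def)
    show "om6 (r 2) (r 4) = 0" using x2 by (simp add: r_def om6_lc1 om6_self)
    show "om6 (r 3) (r 4) = 0" using yMz om6_skew[of "Mp z" y] by (simp add: r_def)
    show "isM (r 2)" using x2 My by (simp add: r_def isM_lc)
  qed (use xo x1 My in \<open>simp_all add: r_def\<close>)
  have Hc: "mk6 r \<in> carrier_mat 6 6" by simp
  have "g \<in> double_coset tau2"
  proof (rule dc_via[OF g tau2_GSp H, of \<alpha>1 \<beta>1 \<alpha>2 \<beta>2])
    fix k :: nat assume k: "k < 6"
    show "g$$(4,k) = \<alpha>1 * (tau2 * mk6 r)$$(4,k) + \<beta>1 * (tau2 * mk6 r)$$(5,k)"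
      using rows_tauH(5,6)[OF Hc k] k r4[OF k] by (simp add: mk6_entry r_def OpMp)
    show "g$$(5,k) = \<alpha>2 * (tau2 * mk6 r)$$(4,k) + \<beta>2 * (tau2 * mk6 r)$$(5,k)"
      using rows_tauH(5,6)[OF Hc k] k r5[OF k] by (simp add: mk6_entry r_def OpMp)
  qed
  thus ?thesis by simp
next
  case False
  then obtain c d where cd: "\<not> (c = 0 \<and> d = 0)" and dep: "\<forall>k. 1 \<le> k \<and> k \<le> 4 \<longrightarrow> c * y k + d * z k = 0" by blast
  obtain p where p: "1 \<le> p" "p \<le> 4" "y p \<noteq> 0" using ynz by blast
  have dnz: "d \<noteq> 0"
  proof
    assume d0: "d = 0"
    hence "c \<noteq> 0" using cd by simp
    moreover have "c * y p = 0" using dep p d0 by auto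
    ultimately show False using p by simp
  qed
  define lam where "lam = - c / d"
  have zl: "z k = lam * y k" if "1 \<le> k" "k \<le> 4" for k
  proof -
    have "c * y k + d * z k = 0" using dep that by auto
    thus ?thesis using dnz by (simp add: lam_def field_simps add_eq_0_iff)
  qed
  define z' where "z' = lc 1 z (- lam) y"
  have z'0: "z' 0 = z 0" "z' 5 = z 5" using My by (simp_all add: z'_def lc_def isM_def)
  have Oz': "Op z' k = z' k" if "k < 6" for k
  proof (cases "k = 0 \<or> k = 5")
    case True thus ?thesis by (auto simp: Op_def)
  next
    case False
    hence "1 \<le> k" "k \<le> 4" using that by auto
    thus ?thesis using False zl by (simp add: Op_def z'_def lc_def)
  qed
  have zo': "z' 0 \<noteq> 0 \<or> z' 5 \<noteq> 0" using zo z'0 by simp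
  obtain xo where xo: "isO xo" "om6 xo (Op z') = 1" using outer_partner[OF zo'] by blast
  obtain x1 where x1: "isM x1" "om6 x1 y = 1" using S1[of p y, OF p, where t=1] by blast
  obtain v1 v2 where v: "isM v1" "isM v2" "om6 v1 v2 = 1" "om6 v1 x1 = 0" "om6 v1 y = 0"
    "om6 v2 x1 = 0" "om6 v2 y = 0" using C1[OF x1(1) My x1(2)] by auto
  define r where "r = (\<lambda>i::nat. if i = 0 then xo else if i = 1 then x1 else if i = 2 then v1
      else if i = 3 then v2 else if i = 4 then y else Op z')"
  have H: "mk6 r \<in> Hgrp"
  proof (rule Hrows[where m=1])
    show "om6 (r 0) (r 5) = 1" using xo by (simp add: r_def)
    show "om6 (r 1) (r 4) = 1" using x1 by (simp add: r_def)
    show "om6 (r 2) (r 3) = 1" using v by (simp add: r_def)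
    show "om6 (r 1) (r 2) = 0" using v om6_skew[of x1 v1] by (simp add: r_def)
    show "om6 (r 1) (r 3) = 0" using v om6_skew[of x1 v2] by (simp add: r_def)
    show "om6 (r 2) (r 4) = 0" using v by (simp add: r_def)
    show "om6 (r 3) (r 4) = 0" using v by (simp add: r_def)
  qed (use xo x1 My v in \<open>simp_all add: r_def\<close>)
  have Hc: "mk6 r \<in> carrier_mat 6 6" by simp
  have "g \<in> double_coset (1\<^sub>m 6)"
  proof (rule dc_via[OF g one_GSp3 H, of "\<alpha>1 + \<beta>1 * lam" \<beta>1 "\<alpha>2 + \<beta>2 * lam" \<beta>2])
    fix k :: nat assume k: "k < 6"
    have e4: "(1\<^sub>m 6 * mk6 r)$$(4,k) = y k" using rows_tauH(1)[OF Hc k] k by (simp add: mk6_entry r_def)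
    have "(1\<^sub>m 6 * mk6 r)$$(5,k) = z' k" using rows_tauH(2)[OF Hc k] k Oz'[OF k] by (simp add: mk6_entry r_def)
    hence e5: "(1\<^sub>m 6 * mk6 r)$$(5,k) = z k - lam * y k" by (simp add: z'_def lc_def)
    show "g$$(4,k) = (\<alpha>1 + \<beta>1 * lam) * (1\<^sub>m 6 * mk6 r)$$(4,k) + \<beta>1 * (1\<^sub>m 6 * mk6 r)$$(5,k)"
      unfolding e4 e5 r4[OF k] by (simp add: algebra_simps)
    show "g$$(5,k) = (\<alpha>2 + \<beta>2 * lam) * (1\<^sub>m 6 * mk6 r)$$(4,k) + \<beta>2 * (1\<^sub>m 6 * mk6 r)$$(5,k)"
      unfolding e4 e5 r5[OF k] by (simp add: algebra_simps)
  qed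
  thus ?thesis by simp
qed

lemma caseC:
  fixes g :: "'a::field mat"
  assumes g: "g \<in> GSp 3" and D: "g$$(4,0) * g$$(5,5) - g$$(4,5) * g$$(5,0) = 0"
    and nz: "\<not> (g$$(4,0) = 0 \<and> g$$(4,5) = 0 \<and> g$$(5,0) = 0 \<and> g$$(5,5) = 0)"
  shows "g \<in> double_coset (1\<^sub>m 6) \<or> g \<in> double_coset tau2"
proof -
  define \<mu> where "\<mu> = sim 3 g"
  have mu: "\<mu> \<noteq> 0" using GSp3_rel[OF g] by (simp add: \<mu>_def)
  have R: "\<And>i j. i < 6 \<Longrightarrow> j < 6 \<Longrightarrow> om6 (rw g i) (rw g j) = \<mu> * J6 i j" using GSp3_R[OF g] by (simp add: \<mu>_def)
  define G0 where "G0 = rw g 0"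
  define G1 where "G1 = rw g 1"
  define G4 where "G4 = rw g 4"
  define G5 where "G5 = rw g 5"
  have r14: "om6 G1 G4 = \<mu>" and r05: "om6 G0 G5 = \<mu>" and r45: "om6 G4 G5 = 0"
    and r04: "om6 G0 G4 = 0" and r44: "om6 G4 G4 = 0" and r54: "om6 G5 G4 = 0"
    using R[of 1 4] R[of 0 5] R[of 4 5] R[of 0 4] R[of 4 4] R[of 5 4]
    by (simp_all add: G0_def G1_def G4_def G5_def J6_def)
  show ?thesis
  proof (cases "g$$(4,0) = 0 \<and> g$$(4,5) = 0")
    case True
    have My: "isM G4" using True by (simp add: isM_def G4_def rw_def)
    show ?thesis
    proof (rule caseC_core[OF g My _ _ r45, of 1 0 0 1])
      show "\<exists>p. 1 \<le> p \<and> p \<le> 4 \<and> G4 p \<noteq> 0" using ynz_of[OF My, of G1] r14 mu by simp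
      show "G5 0 \<noteq> 0 \<or> G5 5 \<noteq> 0" using True nz by (simp add: G5_def rw_def)
      show "\<And>k. k < 6 \<Longrightarrow> g$$(4,k) = 1 * G4 k + 0 * G5 k" by (simp add: G4_def rw_def)
      show "\<And>k. k < 6 \<Longrightarrow> g$$(5,k) = 0 * G4 k + 1 * G5 k" by (simp add: G5_def rw_def)
    qed
  next
    case False
    define s where "s = (if g$$(4,0) \<noteq> 0 then g$$(4,0) else g$$(4,5))"
    define rr where "rr = (if g$$(4,0) \<noteq> 0 then g$$(5,0) else g$$(5,5))"
    have snz: "s \<noteq> 0" using False by (auto simp: s_def)
    define y where "y = lc s G5 (- rr) G4"
    have My: "isM y"
    proof (cases "g$$(4,0) = 0")
      case True
      hence "g$$(4,5) * g$$(5,0) = 0" using D by simp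
      thus ?thesis using True by (simp add: isM_def y_def lc_def s_def rr_def G4_def G5_def rw_def algebra_simps)
    next
      case False
      thus ?thesis using D by (simp add: isM_def y_def lc_def s_def rr_def G4_def G5_def rw_def algebra_simps)
    qed
    have "om6 G0 y = s * \<mu>" using r05 r04 by (simp add: y_def om6_lc2)
    hence ynz: "\<exists>p. 1 \<le> p \<and> p \<le> 4 \<and> y p \<noteq> 0" using ynz_of[OF My, of G0] snz mu by simp
    have yz: "om6 y G4 = 0" using r54 r44 by (simp add: y_def om6_lc1)
    show ?thesis
    proof (rule caseC_core[OF g My ynz _ yz, of 0 1 "1/s" "rr/s"])
      show "G4 0 \<noteq> 0 \<or> G4 5 \<noteq> 0" using False by (auto simp: G4_def rw_def)
      show "\<And>k. k < 6 \<Longrightarrow> g$$(4,k) = 0 * y k + 1 * G4 k" by (simp add: G4_def rw_def)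
      show "\<And>k. k < 6 \<Longrightarrow> g$$(5,k) = 1/s * y k + rr/s * G4 k"
        using snz by (simp add: y_def lc_def G4_def G5_def rw_def field_simps)
    qed
  qed
qed

theorem classify:
  fixes g :: "'a::field mat"
  assumes g: "g \<in> GSp 3"
  shows "g \<in> double_coset (1\<^sub>m 6) \<or> g \<in> double_coset tau1 \<or> g \<in> double_coset tau2 \<or> g \<in> double_coset tau_op"
proof (cases "g$$(4,0) * g$$(5,5) - g$$(4,5) * g$$(5,0) = 0")
  case False thus ?thesis using caseA[OF g] by blast
next
  case True
  show ?thesis
  proof (cases "g$$(4,0) = 0 \<and> g$$(4,5) = 0 \<and> g$$(5,0) = 0 \<and> g$$(5,5) = 0")
    case True thus ?thesis using caseB[OF g] by blast
  next
    case False thus ?thesis using caseC[OF g \<open>g$$(4,0) * g$$(5,5) - g$$(4,5) * g$$(5,0) = 0\<close>] by blast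
  qed
qed


definition Zg :: "'a::field mat \<Rightarrow> bool" where
  "Zg X \<longleftrightarrow> X$$(4,0) = 0 \<and> X$$(4,5) = 0 \<and> X$$(5,0) = 0 \<and> X$$(5,5) = 0"
definition Dg :: "'a::field mat \<Rightarrow> bool" where
  "Dg X \<longleftrightarrow> (\<exists>a b. (a \<noteq> 0 \<or> b \<noteq> 0) \<and> a * X$$(4,0) + b * X$$(5,0) = 0 \<and> a * X$$(4,5) + b * X$$(5,5) = 0)"
definition Kg :: "'a::field mat \<Rightarrow> bool" where
  "Kg X \<longleftrightarrow> (\<exists>a b. (a \<noteq> 0 \<or> b \<noteq> 0) \<and> (\<forall>k. 1 \<le> k \<and> k \<le> 4 \<longrightarrow> a * X$$(4,k) + b * X$$(5,k) = 0))"

lemma P22_detA: assumes p: "p \<in> P22" shows "p$$(4,4) * p$$(5,5) - p$$(4,5) * p$$(5,4) \<noteq> 0"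
proof -
  have pG: "p \<in> GSp 3" and rz: "rowz p" using p by (auto simp: P22_char2)
  define m where "m = sim 3 p"
  have m: "m \<noteq> 0" using GSp3_rel[OF pG] by (simp add: m_def)
  have R: "\<And>i j. i<6 \<Longrightarrow> j<6 \<Longrightarrow> om6 (rw p i) (rw p j) = m * J6 i j" using GSp3_R[OF pG] by (simp add: m_def)
  have z': "p$$(4,0) = 0" "p$$(4,1) = 0" "p$$(4,2) = 0" "p$$(4,3) = 0"
     "p$$(5,0) = 0" "p$$(5,1) = 0" "p$$(5,2) = 0" "p$$(5,3) = 0" using rz by (auto simp: rowz_def)
  have a1: "p$$(0,0)*p$$(5,5) + p$$(0,1)*p$$(5,4) = m" using R[of 0 5] by (simp add: om6_def rw_def z' J6_def)
  have a2: "p$$(0,0)*p$$(4,5) + p$$(0,1)*p$$(4,4) = 0" using R[of 0 4] by (simp add: om6_def rw_def z' J6_def)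
  have a3: "p$$(1,0)*p$$(5,5) + p$$(1,1)*p$$(5,4) = 0" using R[of 1 5] by (simp add: om6_def rw_def z' J6_def)
  have a4: "p$$(1,0)*p$$(4,5) + p$$(1,1)*p$$(4,4) = m" using R[of 1 4] by (simp add: om6_def rw_def z' J6_def)
  have "p$$(5,5)*p$$(4,4) - p$$(5,4)*p$$(4,5) \<noteq> 0"
    using dd_lemma[of "p$$(0,0)" "p$$(5,5)" "p$$(0,1)" "p$$(5,4)" m "p$$(4,5)" "p$$(4,4)" "p$$(1,0)" "p$$(1,1)"]
      a1 a2 a3 a4 m by simp
  thus ?thesis by (simp add: algebra_simps)
qed

lemma comb_pXh:
  fixes p X h :: "'a::field mat"
  assumes p: "p \<in> P22" and X: "X \<in> carrier_mat 6 6" and h: "h \<in> Hgrp" and ab: "a \<noteq> 0 \<or> b \<noteq> 0"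
  shows "\<exists>a' b'. (a' \<noteq> 0 \<or> b' \<noteq> 0) \<and> (\<forall>k<6. a' * (p * X * h)$$(4,k) + b' * (p * X * h)$$(5,k) =
     (\<Sum>l<6. (a * X$$(4,l) + b * X$$(5,l)) * h$$(l,k)))"
proof -
  have pc: "p \<in> carrier_mat 6 6" using P22_carrier[OF p] .
  have hc: "h \<in> carrier_mat 6 6" using Hgrp_carrier[OF h] .
  have rz: "rowz p" using p by (simp add: P22_char2)
  have z': "p$$(4,0) = 0" "p$$(4,1) = 0" "p$$(4,2) = 0" "p$$(4,3) = 0"
     "p$$(5,0) = 0" "p$$(5,1) = 0" "p$$(5,2) = 0" "p$$(5,3) = 0" using rz by (auto simp: rowz_def)
  define dA where "dA = p$$(4,4) * p$$(5,5) - p$$(4,5) * p$$(5,4)"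
  have dA: "dA \<noteq> 0" using P22_detA[OF p] by (simp add: dA_def)
  define a' where "a' = (a * p$$(5,5) - b * p$$(5,4)) / dA"
  define b' where "b' = (b * p$$(4,4) - a * p$$(4,5)) / dA"
  have n1: "(a * p$$(5,5) - b * p$$(5,4)) * p$$(4,4) + (b * p$$(4,4) - a * p$$(4,5)) * p$$(5,4) = a * dA"
    by (simp add: dA_def algebra_simps)
  have n2: "(a * p$$(5,5) - b * p$$(5,4)) * p$$(4,5) + (b * p$$(4,4) - a * p$$(4,5)) * p$$(5,5) = b * dA"
    by (simp add: dA_def algebra_simps)
  have "a' * p$$(4,4) + b' * p$$(5,4) = ((a * p$$(5,5) - b * p$$(5,4)) * p$$(4,4) + (b * p$$(4,4) - a * p$$(4,5)) * p$$(5,4)) / dA"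
    unfolding a'_def b'_def using dA by (simp add: field_simps)
  hence c1: "a' * p$$(4,4) + b' * p$$(5,4) = a" using n1 dA by simp
  have "a' * p$$(4,5) + b' * p$$(5,5) = ((a * p$$(5,5) - b * p$$(5,4)) * p$$(4,5) + (b * p$$(4,4) - a * p$$(4,5)) * p$$(5,5)) / dA"
    unfolding a'_def b'_def using dA by (simp add: field_simps)
  hence c2: "a' * p$$(4,5) + b' * p$$(5,5) = b" using n2 dA by simp
  have nz: "a' \<noteq> 0 \<or> b' \<noteq> 0"
  proof (rule ccontr)
    assume "\<not> (a' \<noteq> 0 \<or> b' \<noteq> 0)"
    hence "a' = 0" "b' = 0" by auto
    thus False using c1 c2 ab by simp
  qed
  have "a' * (p * X * h)$$(4,k) + b' * (p * X * h)$$(5,k) = (\<Sum>l<6. (a * X$$(4,l) + b * X$$(5,l)) * h$$(l,k))"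
    if k: "k < 6" for k
  proof -
    have XH: "X * h \<in> carrier_mat 6 6" using X hc by simp
    have e: "(p * X * h)$$(i,k) = p$$(i,4) * (X*h)$$(4,k) + p$$(i,5) * (X*h)$$(5,k)" if "i = 4 \<or> i = 5" for i
      using that pc X hc k by (auto simp: mult6[OF pc XH] z')
    have s: "(X*h)$$(j,k) = (\<Sum>l<6. X$$(j,l) * h$$(l,k))" if "j < 6" for j using mult_entry[OF X hc that k] .
    have "a' * (p * X * h)$$(4,k) + b' * (p * X * h)$$(5,k)
        = (a' * p$$(4,4) + b' * p$$(5,4)) * (X*h)$$(4,k) + (a' * p$$(4,5) + b' * p$$(5,5)) * (X*h)$$(5,k)"
      using e[of 4] e[of 5] by (simp add: algebra_simps)
    also have "\<dots> = a * (X*h)$$(4,k) + b * (X*h)$$(5,k)" using c1 c2 by simp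
    also have "\<dots> = (\<Sum>l<6. (a * X$$(4,l) + b * X$$(5,l)) * h$$(l,k))"
      using s[of 4] s[of 5] by (simp add: sum_distrib_left sum.distrib algebra_simps)
    finally show ?thesis .
  qed
  thus ?thesis using nz by blast
qed

lemma sum_blk_out: fixes w :: "nat \<Rightarrow> 'a::field" assumes b: "blk h" and k: "k = 0 \<or> k = 5"
  shows "(\<Sum>l<6. w l * h$$(l,k)) = w 0 * h$$(0,k) + w 5 * h$$(5,k)"
  using k by (auto simp: sum6 blkz[OF b])

lemma sum_blk_mid: fixes w :: "nat \<Rightarrow> 'a::field" assumes b: "blk h" and k: "1 \<le> k" "k \<le> 4"
  shows "(\<Sum>l<6. w l * h$$(l,k)) = w 1 * h$$(1,k) + w 2 * h$$(2,k) + w 3 * h$$(3,k) + w 4 * h$$(4,k)"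
proof -
  have "k = 1 \<or> k = 2 \<or> k = 3 \<or> k = 4" using k by auto
  thus ?thesis by (elim disjE; simp add: sum6 blkz[OF b])
qed

lemma inv_pres:
  fixes p X h :: "'a::field mat"
  assumes p: "p \<in> P22" and X: "X \<in> carrier_mat 6 6" and h: "h \<in> Hgrp"
  shows "Zg X \<Longrightarrow> Zg (p * X * h)" "Dg X \<Longrightarrow> Dg (p * X * h)" "Kg X \<Longrightarrow> Kg (p * X * h)"
proof -
  have b: "blk h" using h by (simp add: Hgrp_char)
  have pc: "p \<in> carrier_mat 6 6" using P22_carrier[OF p] .
  have hc: "h \<in> carrier_mat 6 6" using Hgrp_carrier[OF h] .
  have rz: "rowz p" using p by (simp add: P22_char2)
  have z': "p$$(4,0) = 0" "p$$(4,1) = 0" "p$$(4,2) = 0" "p$$(4,3) = 0"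
     "p$$(5,0) = 0" "p$$(5,1) = 0" "p$$(5,2) = 0" "p$$(5,3) = 0" using rz by (auto simp: rowz_def)
  {
    assume Z: "Zg X"
    have XH: "X * h \<in> carrier_mat 6 6" using X hc by simp
    have xh: "(X*h)$$(j,k) = 0" if "j = 4 \<or> j = 5" "k = 0 \<or> k = 5" for j k
    proof -
      have "(X*h)$$(j,k) = (\<Sum>l<6. X$$(j,l) * h$$(l,k))" using mult_entry[OF X hc] that by auto
      also have "\<dots> = X$$(j,0) * h$$(0,k) + X$$(j,5) * h$$(5,k)" by (rule sum_blk_out[OF b that(2)])
      finally show ?thesis using Z that by (auto simp: Zg_def)
    qed
    show "Zg (p * X * h)" unfolding Zg_def using pc X hc
      by (simp add: mult6[OF pc XH] z' xh)
  }
  {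
    assume "Dg X"
    then obtain a b where ab: "a \<noteq> 0 \<or> b \<noteq> 0" and o0: "a * X$$(4,0) + b * X$$(5,0) = 0" and o5: "a * X$$(4,5) + b * X$$(5,5) = 0"
      by (auto simp: Dg_def)
    obtain a' b' where nz: "a' \<noteq> 0 \<or> b' \<noteq> 0" and E: "\<And>k. k < 6 \<Longrightarrow> a' * (p * X * h)$$(4,k) + b' * (p * X * h)$$(5,k) =
     (\<Sum>l<6. (a * X$$(4,l) + b * X$$(5,l)) * h$$(l,k))" using comb_pXh[OF p X h ab] by blast
    have "a' * (p * X * h)$$(4,k) + b' * (p * X * h)$$(5,k) = 0" if "k = 0 \<or> k = 5" for k
    proof -
      have "k < 6" using that by auto
      thus ?thesis using E sum_blk_out[OF b that] o0 o5 by simp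
    qed
    thus "Dg (p * X * h)" unfolding Dg_def using nz by blast
  }
  {
    assume "Kg X"
    then obtain a b where ab: "a \<noteq> 0 \<or> b \<noteq> 0" and o: "\<And>k. 1 \<le> k \<and> k \<le> 4 \<Longrightarrow> a * X$$(4,k) + b * X$$(5,k) = 0"
      by (auto simp: Kg_def)
    obtain a' b' where nz: "a' \<noteq> 0 \<or> b' \<noteq> 0" and E: "\<And>k. k < 6 \<Longrightarrow> a' * (p * X * h)$$(4,k) + b' * (p * X * h)$$(5,k) =
     (\<Sum>l<6. (a * X$$(4,l) + b * X$$(5,l)) * h$$(l,k))" using comb_pXh[OF p X h ab] by blast
    have "a' * (p * X * h)$$(4,k) + b' * (p * X * h)$$(5,k) = 0" if "1 \<le> k \<and> k \<le> 4" for k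
    proof -
      have "k < 6" using that by auto
      thus ?thesis using E sum_blk_mid[OF b, of k] that o[of 1] o[of 2] o[of 3] o[of 4] by simp
    qed
    thus "Kg (p * X * h)" unfolding Kg_def using nz by blast
  }
qed

lemma dc_pres:
  fixes t t' :: "'a::field mat"
  assumes t: "t \<in> carrier_mat 6 6" and m: "t' \<in> double_coset t"
  shows "Zg t \<Longrightarrow> Zg t'" "Dg t \<Longrightarrow> Dg t'" "Kg t \<Longrightarrow> Kg t'"
proof -
  obtain p h where p: "p \<in> P22" and h: "h \<in> Hgrp" and e: "t' = p * t * h" using m by (auto simp: double_coset_def)
  show "Zg t \<Longrightarrow> Zg t'" "Dg t \<Longrightarrow> Dg t'" "Kg t \<Longrightarrow> Kg t'" using inv_pres[OF p t h] e by auto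
qed

lemma inv_vals:
  "\<not> Zg (1\<^sub>m 6 :: 'a::field mat)" "Dg (1\<^sub>m 6 :: 'a::field mat)" "Kg (1\<^sub>m 6 :: 'a::field mat)"
  "Zg (tau1 :: 'a::field mat)"
  "\<not> Zg (tau2 :: 'a::field mat)" "Dg (tau2 :: 'a::field mat)" "\<not> Kg (tau2 :: 'a::field mat)"
  "\<not> Zg (tau_op :: 'a::field mat)" "\<not> Dg (tau_op :: 'a::field mat)"
proof -
  show "\<not> Zg (1\<^sub>m 6 :: 'a mat)" by (simp add: Zg_def)
  show "Dg (1\<^sub>m 6 :: 'a mat)" unfolding Dg_def by (rule exI[of _ 1], rule exI[of _ 0]) simp
  show "Kg (1\<^sub>m 6 :: 'a mat)" unfolding Kg_def by (rule exI[of _ 0], rule exI[of _ 1]) auto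
  show "Zg (tau1 :: 'a mat)" by (simp add: Zg_def tau1_def mat_of_rows_list_def)
  show "\<not> Zg (tau2 :: 'a mat)" by (simp add: Zg_def tau2_def mat_of_rows_list_def)
  show "Dg (tau2 :: 'a mat)" unfolding Dg_def by (rule exI[of _ 1], rule exI[of _ 0]) (simp add: tau2_def mat_of_rows_list_def)
  show "\<not> Kg (tau2 :: 'a mat)"
  proof
    assume "Kg (tau2 :: 'a mat)"
    then obtain a b :: 'a where ab: "a \<noteq> 0 \<or> b \<noteq> 0" and o: "\<And>k. 1 \<le> k \<and> k \<le> 4 \<Longrightarrow> a * tau2$$(4,k) + b * tau2$$(5,k) = 0"
      by (auto simp: Kg_def)
    have "a = 0" using o[of 4] by (simp add: tau2_def mat_of_rows_list_def)
    moreover have "b = 0" using o[of 3] by (simp add: tau2_def mat_of_rows_list_def)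
    ultimately show False using ab by simp
  qed
  show "\<not> Zg (tau_op :: 'a mat)" by (simp add: Zg_def tau_op_def mat_of_rows_list_def)
  show "\<not> Dg (tau_op :: 'a mat)" by (simp add: Dg_def tau_op_def mat_of_rows_list_def)
qed


lemma dq_eq: "(double_quotient :: 'a::field mat set set) =
  {double_coset (1\<^sub>m 6 :: 'a mat), double_coset tau1, double_coset tau2, double_coset tau_op}"
proof (rule Set.set_eqI, rule iffI)
  fix D :: "'a mat set" assume "D \<in> double_quotient"
  then obtain g where g: "g \<in> GSp 3" and D: "D = double_coset g" by (auto simp: double_quotient_def)
  have "g \<in> double_coset (1\<^sub>m 6) \<or> g \<in> double_coset tau1 \<or> g \<in> double_coset tau2 \<or> g \<in> double_coset tau_op"
    using classify[OF g] .
  thus "D \<in> {double_coset (1\<^sub>m 6 :: 'a mat), double_coset tau1, double_coset tau2, double_coset tau_op}"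
    using D double_coset_eq[of "1\<^sub>m 6 :: 'a mat" g] double_coset_eq[of "tau1 :: 'a mat" g]
      double_coset_eq[of "tau2 :: 'a mat" g] double_coset_eq[of "tau_op :: 'a mat" g] by auto
next
  fix D :: "'a mat set"
  assume "D \<in> {double_coset (1\<^sub>m 6 :: 'a mat), double_coset tau1, double_coset tau2, double_coset tau_op}"
  thus "D \<in> double_quotient" unfolding double_quotient_def
    using one_GSp3 tau1_GSp tau2_GSp tau_op_GSp by auto
qed

lemma dc_neq:
  fixes t t' :: "'a::field mat"
  assumes t: "t \<in> carrier_mat 6 6" and t': "t' \<in> carrier_mat 6 6"
    and P: "\<And>s s'. s \<in> carrier_mat 6 6 \<Longrightarrow> s' \<in> double_coset s \<Longrightarrow> Q s \<Longrightarrow> Q s'"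
    and Qt: "Q t" and nQt': "\<not> Q t'"
  shows "double_coset t \<noteq> double_coset t'"
proof
  assume "double_coset t = double_coset t'"
  hence "t' \<in> double_coset t" using double_coset_self[OF t'] by simp
  thus False using P[OF t _ Qt] nQt' by blast
qed

lemma card4: "card (double_quotient :: 'a::field mat set set) = 4"
proof -
  have c: "(1\<^sub>m 6 :: 'a mat) \<in> carrier_mat 6 6" "(tau1 :: 'a mat) \<in> carrier_mat 6 6"
    "(tau2 :: 'a mat) \<in> carrier_mat 6 6" "(tau_op :: 'a mat) \<in> carrier_mat 6 6" by simp_all
  note V = inv_vals[where 'a='a]
  have PZ: "\<And>s s' :: 'a mat. s \<in> carrier_mat 6 6 \<Longrightarrow> s' \<in> double_coset s \<Longrightarrow> Zg s \<Longrightarrow> Zg s'" using dc_pres(1) by blast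
  have PD: "\<And>s s' :: 'a mat. s \<in> carrier_mat 6 6 \<Longrightarrow> s' \<in> double_coset s \<Longrightarrow> Dg s \<Longrightarrow> Dg s'" using dc_pres(2) by blast
  have PK: "\<And>s s' :: 'a mat. s \<in> carrier_mat 6 6 \<Longrightarrow> s' \<in> double_coset s \<Longrightarrow> Kg s \<Longrightarrow> Kg s'" using dc_pres(3) by blast
  have X: "double_coset t \<noteq> double_coset t'" if t: "t \<in> carrier_mat 6 6" and t': "t' \<in> carrier_mat 6 6"
    and H: "t' \<in> double_coset t \<Longrightarrow> False" for t t' :: "'a mat"
  proof
    assume "double_coset t = double_coset t'"
    hence "t' \<in> double_coset t" using double_coset_self[OF t'] by simp
    thus False using H by blast
  qed
  have n1: "double_coset (1\<^sub>m 6 :: 'a mat) \<noteq> double_coset tau1"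
    using X[OF c(2) c(1)] dc_pres(1)[OF c(2), of "1\<^sub>m 6"] V(4) V(1) by metis
  have n2: "double_coset (1\<^sub>m 6 :: 'a mat) \<noteq> double_coset tau2"
    using X[OF c(1) c(3)] dc_pres(3)[OF c(1), of tau2] V(3) V(7) by metis
  have n3: "double_coset (1\<^sub>m 6 :: 'a mat) \<noteq> double_coset tau_op"
    using X[OF c(1) c(4)] dc_pres(2)[OF c(1), of tau_op] V(2) V(9) by metis
  have n4: "double_coset (tau1 :: 'a mat) \<noteq> double_coset tau2"
    using X[OF c(2) c(3)] dc_pres(1)[OF c(2), of tau2] V(4) V(5) by metis
  have n5: "double_coset (tau1 :: 'a mat) \<noteq> double_coset tau_op"
    using X[OF c(2) c(4)] dc_pres(1)[OF c(2), of tau_op] V(4) V(8) by metis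
  have n6: "double_coset (tau2 :: 'a mat) \<noteq> double_coset tau_op"
    using X[OF c(3) c(4)] dc_pres(2)[OF c(3), of tau_op] V(6) V(9) by metis
  show ?thesis unfolding dq_eq using n1 n2 n3 n4 n5 n6 by simp
qed

theorem lemma6p8:
  assumes "number_field TYPE('a::field_char_0)"
  shows "double_quotient =
           {double_coset (1\<^sub>m 6 :: 'a mat), double_coset tau1, double_coset tau2, double_coset tau_op}
    \<and> card (double_quotient :: 'a mat set set) = 4
    \<and> plane_of (1\<^sub>m 6 :: 'a mat) = span2 (f 1) (f 2)
    \<and> stab (1\<^sub>m 6 :: 'a mat) = (\<lambda>(h1, h2). iota h1 h2) ` fiber_prod (parabolic 1 1) (parabolic 2 1)
    \<and> plane_of (tau1 :: 'a mat) = span2 (f 2) (f 3)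
    \<and> stab (tau1 :: 'a mat) = (\<lambda>(h1, h2). iota h1 h2) ` fiber_prod GL2 (parabolic 2 2)
    \<and> plane_of (tau2 :: 'a mat) = span2 (f 1 + f 3) (f 2)
    \<and> stab (tau2 :: 'a mat) = (\<lambda>(h1, h2). iota h1 h2) ` stab3_set
    \<and> plane_of (tau_op :: 'a mat) = span2 (e 2 + f 1) (e 1 + f 2)
    \<and> stab (tau_op :: 'a mat) = (\<lambda>(h1, h2). iota h1 (jmap h1 h2)) ` Jgrp"
  using dq_eq card4 plane_I stab_I plane_tau1 stab_tau1 plane_tau2 stab_tau2 plane_tau_op stab_tau_op
  by blast


end
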